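(* Let $a=(a_{ij})_{1\le i\le j\le n}\in(\mathbb C^\times)^N$, $b=(b_{ij})\in\mathbb C^N$, $\lambda=(\lambda_i)\in\mathbb C^n$, $\mathbf a\in\mathbb C^\times$, and let $\widetilde{\mathrm{ev}}^\pm_{\mathbf a}=\rho(a,b,\lambda)\circ\mathrm{ev}^\pm_{\mathbf a^\lambda_\pm}:\widetilde U_\varepsilon\to\mathrm{End}(V_N)$. Then for every $i\in I$ and $m\in\{0,\dots,l-1\}^N$: $\widetilde{\mathrm{ev}}^\pm_{\mathbf a}(E_i)v(m)=\rho(E_i)v(m)$, $\widetilde{\mathrm{ev}}^\pm_{\mathbf a}(F_i)v(m)=\rho(F_i)v(m)$, $\widetilde{\mathrm{ev}}^\pm_{\mathbf a}(K_{\alpha_i})v(m)=\rho(K_{\alpha_i})v(m)$, $$\widetilde{\mathrm{ev}}^\pm_{\mathbf a}(E_0)v(m)=\mathbf a\sum_{r^s\in R^F}(-1)^{s+n}a(\epsilon_{r^s})\varepsilon^{\pm(C_E(m+b,r^s)-\lambda^{(s)}-s)+n}[-m_{s-1,s-1}+m_{s,s}-b_{s-1,s-1}+b_{s,s}-\lambda_s]_\varepsilon\,v(m+\epsilon_{r^s}),$$ $$\widetilde{\mathrm{ev}}^\pm_{\mathbf a}(F_0)v(m)=\mathbf a^{-1}\sum_{r^s\in R^E}(-1)^{s-1}a(\alpha_{r^s})\varepsilon^{\pm(D_F(m+b,r^s)-s+n+1)-n}[-m_{1,n-s+1}-b_{1,n-s+1}]_\varepsilon\,v(m+\alpha_{r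^s}).$$
   Context: $n\ge1$, $I=\{1,\dots,n\}$, $N=n(n+1)/2$; $l>2$ odd with $\gcd(l,n+1)=1$; $\varepsilon$ a primitive $l$-th root of unity. Complex powers $\varepsilon^c$ are taken with respect to a fixed logarithm of $\varepsilon$ (for $c\in\frac1{n+1}\mathbb Z$ this agrees with $\varepsilon^{c'}$, $c'\in\mathbb Z$, $c'\equiv c$ mod $l$); $[c]_\varepsilon=(\varepsilon^c-\varepsilon^{-c})/(\varepsilon-\varepsilon^{-1})$; $[u,v]_x=uv-xvu$. $\alpha_i$ simple roots, $Q$, $(\alpha_i,\alpha_j)$ the $\mathfrak{sl}_{n+1}$ Cartan matrix, $\theta=\sum\alpha_i$; $\Lambda_i$ fundamental weights, $P$, $(\Lambda_i,\alpha_j)=\delta_{ij}$, $(\Lambda_i,\Lambda_j)=\min(i,j)(n+1-\max(i,j))/(n+1)$; $\lambda_{\Lambda_i}=\sum_j\lambda_j(\Lambda_i,\Lambda_j)$; $\lambda^{(s)}=\sum_{k=1}^{s-1}\lambda_k-\sum_{k=s+1}^n\lambda_k$. Algebras: $U'_\varepsilon$ is the $\mathbb C$-algebra generated by $E_i,F_i$ ($i\in I$), $K_\mu$ ($\mu\in P$) with the relations of $U_q(\mathfrak{sl}_{n+1})$ at $q=\varepsilon$ ($K_\mu E_jK_\mu^{-1}=\varepsilon^{(\mu,\alpha_j)}E_j$, $K_\mu F_jK_\mu^{-1}=\varepsilon^{-(\mu,\alpha_j)}F_j$, $[E_i,F_j]=\delta_{ij}(K_{\alpha_i}-K_{\alpha_i}^{-1})/(\varepsilon-\varepsilon^{-1})$,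 Serre), $U_\varepsilon$ the subalgebra with $\mu\in Q$; $\widetilde U_\varepsilon$ is the analogous algebra for $U_q(\widetilde{\mathfrak{sl}}_{n+1})$ with generators $E_i,F_i$ ($i=0,\dots,n$), $K_\mu$ ($\mu\in Q$), $(\mu,\alpha_0)=-(\mu,\theta)$. For $\mathbf b\in\mathbb C^\times$, $\mathrm{ev}^\pm_{\mathbf b}:\widetilde U_\varepsilon\to U'_\varepsilon$ are the homomorphisms fixing $E_i,F_i,K_\mu$ ($i\in I$) with $\mathrm{ev}^+_{\mathbf b}(E_0)=\varepsilon^{-1}\mathbf bK_{\Lambda_1}K_{\Lambda_n}^{-1}[F_n,[F_{n-1},\dots,[F_2,F_1]_{\varepsilon^{-1}}\dots]_{\varepsilon^{-1}}$, $\mathrm{ev}^-_{\mathbf b}(E_0)=\varepsilon^{-1}\mathbf bK_{\Lambda_1}^{-1}K_{\Lambda_n}[F_1,[F_2,\dots,[F_{n-1},F_n]_{\varepsilon^{-1}}\dots]_{\varepsilon^{-1}}$, $\mathrm{ev}^+_{\mathbf b}(F_0)=(-1)^{n-1}\varepsilon^n\mathbf b^{-1}K_{\Lambda_1}^{-1}K_{\Lambda_n}[E_n,[E_{n-1},\dots,[E_2,E_1]_{\varepsilon^{-1}}\dots]_{\varepsilon^{-1}}$, $\mathrm{ev}^-_{\mathbf b}(F_0)=(-1)^{n-1}\varepsilon^n\mathbf b^{-1}K_{\Lambda_1}K_{\Lambda_n}^{-1}[E_1,[E_2,\dots,[E_{n-1},E_n]_{\varepsilon^{-1}}\dots]_{\varepsilon^{-1}}$.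 Put $\mathbf a^\lambda_+=\mathbf a\varepsilon^{-\lambda_{\Lambda_1}+\lambda_{\Lambda_n}+n}$, $\mathbf a^\lambda_-=\mathbf a(-1)^{n+1}\varepsilon^{\lambda_{\Lambda_1}-\lambda_{\Lambda_n}+2n+1}$. Schnizer module: $V_N$ has basis $v(m)$, $m=(m_{ij})_{1\le i\le j\le n}\in\{0,\dots,l-1\}^N$, with $v(m+lm')=v(m)$ for $m'\in\mathbb Z^N$. $\epsilon_{ij}$ is the unit vector at $(i,j)$; $\alpha_{i,j}=\sum_{k=j+1}^i\epsilon_{k-1,n-i+k}-\sum_{k=j}^i\epsilon_{k,n-i+k}$ ($j\le i$). For $c\in\mathbb C^N$ ($c_{ij}=0$ outside $1\le i\le j\le n$): $M_{i,j}(c)=\sum_{k=i-1}^{j-1}(c_{i,k}-c_{i-1,k})+\sum_{k=i}^j(c_{i,k}-c_{i+1,k})$, $N_{i,j}(c)=c_{j-1,n-i+j}-c_{j,n-i+j}$, $\mu_i(c)=\sum_{k=i-1}^nc_{i-1,k}-2\sum_{k=i}^nc_{i,k}+\sum_{k=i+1}^nc_{i+1,k}$; for $c\in\mathbb Z^N$, $a(c)=\prod a_{ij}^{c_{ij}}$. $\rho=\rho(a,b,\lambda):U'_\varepsilon\to\mathrm{End}(V_N)$ is the representation $E_iv(m)=\sum_{j=1}^ia(\alpha_{i,j})[N_{i,j}(m+b)]_\varepsilon v(m+\alpha_{i,j})$, $F_iv(m)=\sum_{j=i}^na_{i,j}[M_{i,j}(m+b)-\lambda_i]_\varepsilon v(m+\epsilon_{i,j})$,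 $K_{\alpha_i}v(m)=\varepsilon^{\mu_i(m+b)+\lambda_i}v(m)$, $K_{\Lambda_i}v(m)=\varepsilon^{-\sum_{k=i}^n(m_{ik}+b_{ik})+\lambda_{\Lambda_i}}v(m)$. Index sets: for $s\in I$, $R_s=\{r^s=(r^s_k)_{k\in I}\in I^n: r^s_1\ge\dots\ge r^s_{s-1}\ge r^s_s<r^s_{s+1}<\dots<r^s_n\}$, $R^F_s=\{r^s\in R_s: k\le r^s_k\le n\ \forall k\}$, $R^E_s=\{r^s\in R_s:1\le r^s_k\le k\ \forall k\}$, $R^F=\bigsqcup_sR^F_s$, $R^E=\bigsqcup_sR^E_s$ (here $s$ is part of the data of $r^s$). $\epsilon_{r^s}=\sum_k\epsilon_{k,r^s_k}$, $\alpha_{r^s}=\sum_k\alpha_{k,r^s_k}$. With $r^s_0:=n$: $C_E(c,r^s)=c_{s-1,s-1}+\sum_{k=1}^{s-1}\sum_{p=r^s_{k+1}}^{r^s_k-1}c_{k,p}-\sum_{k=1}^s\sum_{p=r^s_k+1}^{r^s_{k-1}}c_{k,p}$ for $r^s\in R^F_s$, and $D_F(c,r^s)=-c_{n,n}+\sum_{k=1}^{n-s+1}c_{1,k}-\sum_{k=s+1}^n(c_{r^s_k-1,n-k+r^s_k}-c_{r^s_k,n-k+r^s_k})$ for $r^s\in R^E_s$. *)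

theory Defs
  imports Complex_Main
begin

(* Basis indices m = (m_ij), stored as functions nat => nat => int, zero outside
   the index set 1 <= i <= j <= n. *)
type_synonym idx = "nat \<Rightarrow> nat \<Rightarrow> int"
type_synonym cvec = "nat \<Rightarrow> nat \<Rightarrow> complex"
type_synonym vect = "idx \<Rightarrow> complex"
type_synonym oper = "vect \<Rightarrow> vect"

definition valid :: "nat \<Rightarrow> nat \<Rightarrow> nat \<Rightarrow> bool" where
  "valid n i j \<longleftrightarrow> 1 \<le> i \<and> i \<le> j \<and> j \<le> n"

definition basis_idx :: "nat \<Rightarrow> nat \<Rightarrow> idx set" where
  "basis_idx n l = {m. \<forall>i j. (valid n i j \<longrightarrow> 0 \<le> m i j \<and> m i j < int l)
                              \<and> (\<not> valid n i j \<longrightarrow> m i j = 0)}"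

definition red :: "nat \<Rightarrow> nat \<Rightarrow> idx \<Rightarrow> idx" where
  "red n l m = (\<lambda>i j. if valid n i j then m i j mod int l else 0)"

(* the basis vector v(m), with v(m + l m') = v(m) *)
definition vbas :: "nat \<Rightarrow> nat \<Rightarrow> idx \<Rightarrow> vect" where
  "vbas n l m = (\<lambda>k. if k = red n l m then 1 else 0)"

definition lin :: "nat \<Rightarrow> nat \<Rightarrow> (idx \<Rightarrow> vect) \<Rightarrow> oper" where
  "lin n l f x = (\<lambda>k. \<Sum>m\<in>basis_idx n l. x m * f m k)"

definition uvec :: "nat \<Rightarrow> nat \<Rightarrow> idx" where
  "uvec i j = (\<lambda>p q. if p = i \<and> q = j then 1 else 0)"

definition iadd :: "idx \<Rightarrow> idx \<Rightarrow> idx" where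
  "iadd m c = (\<lambda>i j. m i j + c i j)"

definition cadd :: "idx \<Rightarrow> cvec \<Rightarrow> cvec" where
  "cadd m b = (\<lambda>i j. of_int (m i j) + b i j)"

definition alpha :: "nat \<Rightarrow> nat \<Rightarrow> nat \<Rightarrow> idx" where
  "alpha n i j = (\<lambda>p q. (\<Sum>k\<in>{j+1..i}. uvec (k-1) (n-i+k) p q) - (\<Sum>k\<in>{j..i}. uvec k (n-i+k) p q))"

(* complex powers eps^c = exp (c * L), L the fixed logarithm of eps *)
definition qpow :: "complex \<Rightarrow> complex \<Rightarrow> complex" where
  "qpow L c = exp (c * L)"

definition qint :: "complex \<Rightarrow> complex \<Rightarrow> complex" where
  "qint L c = (qpow L c - qpow L (- c)) / (exp L - exp (- L))"

definition apow :: "nat \<Rightarrow> cvec \<Rightarrow> idx \<Rightarrow> complex" where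
  "apow n a c = (\<Prod>i\<in>{1..n}. \<Prod>j\<in>{i..n}. a i j powi c i j)"

definition Mf :: "cvec \<Rightarrow> nat \<Rightarrow> nat \<Rightarrow> complex" where
  "Mf c i j = (\<Sum>k\<in>{i-1..j-1}. c i k - c (i-1) k) + (\<Sum>k\<in>{i..j}. c i k - c (i+1) k)"

definition Nf :: "nat \<Rightarrow> cvec \<Rightarrow> nat \<Rightarrow> nat \<Rightarrow> complex" where
  "Nf n c i j = c (j-1) (n-i+j) - c j (n-i+j)"

definition muf :: "nat \<Rightarrow> cvec \<Rightarrow> nat \<Rightarrow> complex" where
  "muf n c i = (\<Sum>k\<in>{i-1..n}. c (i-1) k) - 2 * (\<Sum>k\<in>{i..n}. c i k) + (\<Sum>k\<in>{i+1..n}. c (i+1) k)"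

definition pairLL :: "nat \<Rightarrow> nat \<Rightarrow> nat \<Rightarrow> complex" where
  "pairLL n i j = of_nat (min i j * (n + 1 - max i j)) / of_nat (n + 1)"

definition lamLam :: "nat \<Rightarrow> (nat \<Rightarrow> complex) \<Rightarrow> nat \<Rightarrow> complex" where
  "lamLam n lam i = (\<Sum>j\<in>{1..n}. lam j * pairLL n i j)"

definition lamS :: "nat \<Rightarrow> (nat \<Rightarrow> complex) \<Rightarrow> nat \<Rightarrow> complex" where
  "lamS n lam s = (\<Sum>k\<in>{1..s-1}. lam k) - (\<Sum>k\<in>{s+1..n}. lam k)"

definition rhoE :: "nat \<Rightarrow> nat \<Rightarrow> complex \<Rightarrow> cvec \<Rightarrow> cvec \<Rightarrow> (nat \<Rightarrow> complex) \<Rightarrow> nat \<Rightarrow> oper" where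
  "rhoE n l L a b lam i = lin n l (\<lambda>m k. \<Sum>j\<in>{1..i}.
      apow n a (alpha n i j) * qint L (Nf n (cadd m b) i j) * vbas n l (iadd m (alpha n i j)) k)"

definition rhoF :: "nat \<Rightarrow> nat \<Rightarrow> complex \<Rightarrow> cvec \<Rightarrow> cvec \<Rightarrow> (nat \<Rightarrow> complex) \<Rightarrow> nat \<Rightarrow> oper" where
  "rhoF n l L a b lam i = lin n l (\<lambda>m k. \<Sum>j\<in>{i..n}.
      a i j * qint L (Mf (cadd m b) i j - lam i) * vbas n l (iadd m (uvec i j)) k)"

definition rhoKa :: "nat \<Rightarrow> nat \<Rightarrow> complex \<Rightarrow> cvec \<Rightarrow> cvec \<Rightarrow> (nat \<Rightarrow> complex) \<Rightarrow> nat \<Rightarrow> oper" where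
  "rhoKa n l L a b lam i = lin n l (\<lambda>m k.
      qpow L (muf n (cadd m b) i + lam i) * vbas n l m k)"

definition rhoKL :: "nat \<Rightarrow> nat \<Rightarrow> complex \<Rightarrow> cvec \<Rightarrow> cvec \<Rightarrow> (nat \<Rightarrow> complex) \<Rightarrow> nat \<Rightarrow> oper" where
  "rhoKL n l L a b lam i = lin n l (\<lambda>m k.
      qpow L (- (\<Sum>k'\<in>{i..n}. cadd m b i k') + lamLam n lam i) * vbas n l m k)"

definition rhoKLinv :: "nat \<Rightarrow> nat \<Rightarrow> complex \<Rightarrow> cvec \<Rightarrow> cvec \<Rightarrow> (nat \<Rightarrow> complex) \<Rightarrow> nat \<Rightarrow> oper" where
  "rhoKLinv n l L a b lam i = lin n l (\<lambda>m k.
      qpow L ((\<Sum>k'\<in>{i..n}. cadd m b i k') - lamLam n lam i) * vbas n l m k)"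

(* rho(K_{alpha_0}) = rho(K_{-theta}) *)
definition rhoK0 :: "nat \<Rightarrow> nat \<Rightarrow> complex \<Rightarrow> cvec \<Rightarrow> cvec \<Rightarrow> (nat \<Rightarrow> complex) \<Rightarrow> oper" where
  "rhoK0 n l L a b lam = lin n l (\<lambda>m k.
      qpow L (- (\<Sum>i\<in>{1..n}. muf n (cadd m b) i + lam i)) * vbas n l m k)"

definition smul :: "complex \<Rightarrow> oper \<Rightarrow> oper" where
  "smul c A = (\<lambda>x k. c * A x k)"

definition qcomm :: "complex \<Rightarrow> oper \<Rightarrow> oper \<Rightarrow> oper" where
  "qcomm q A B = (\<lambda>x k. A (B x) k - q * B (A x) k)"

fun nest_up :: "complex \<Rightarrow> (nat \<Rightarrow> oper) \<Rightarrow> nat \<Rightarrow> oper" where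
  "nest_up q X 0 = id"
| "nest_up q X (Suc 0) = X 1"
| "nest_up q X (Suc (Suc k)) = qcomm q (X (Suc (Suc k))) (nest_up q X (Suc k))"

definition nest_down :: "complex \<Rightarrow> (nat \<Rightarrow> oper) \<Rightarrow> nat \<Rightarrow> oper" where
  "nest_down q X n = nest_up q (\<lambda>j. X (n + 1 - j)) n"

definition apar :: "bool \<Rightarrow> nat \<Rightarrow> complex \<Rightarrow> (nat \<Rightarrow> complex) \<Rightarrow> complex \<Rightarrow> complex" where
  "apar pl n L lam A = (if pl
     then A * qpow L (- lamLam n lam 1 + lamLam n lam n + of_nat n)
     else A * (-1) ^ (n + 1) * qpow L (lamLam n lam 1 - lamLam n lam n + 2 * of_nat n + 1))"

(* rho o ev^{+}_{bb} resp. rho o ev^{-}_{bb} on E_0 and F_0 (pl = True means +) *)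
definition evE0 :: "bool \<Rightarrow> nat \<Rightarrow> nat \<Rightarrow> complex \<Rightarrow> cvec \<Rightarrow> cvec \<Rightarrow> (nat \<Rightarrow> complex) \<Rightarrow> complex \<Rightarrow> oper" where
  "evE0 pl n l L a b lam bb = (if pl
     then smul (exp (- L) * bb) (rhoKL n l L a b lam 1 \<circ> rhoKLinv n l L a b lam n
             \<circ> nest_up (exp (- L)) (rhoF n l L a b lam) n)
     else smul (exp (- L) * bb) (rhoKLinv n l L a b lam 1 \<circ> rhoKL n l L a b lam n
             \<circ> nest_down (exp (- L)) (rhoF n l L a b lam) n))"

definition evF0 :: "bool \<Rightarrow> nat \<Rightarrow> nat \<Rightarrow> complex \<Rightarrow> cvec \<Rightarrow> cvec \<Rightarrow> (nat \<Rightarrow> complex) \<Rightarrow> complex \<Rightarrow> oper" where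
  "evF0 pl n l L a b lam bb = (if pl
     then smul ((-1) ^ (n - 1) * exp L ^ n * inverse bb) (rhoKLinv n l L a b lam 1 \<circ> rhoKL n l L a b lam n
             \<circ> nest_up (exp (- L)) (rhoE n l L a b lam) n)
     else smul ((-1) ^ (n - 1) * exp L ^ n * inverse bb) (rhoKL n l L a b lam 1 \<circ> rhoKLinv n l L a b lam n
             \<circ> nest_down (exp (- L)) (rhoE n l L a b lam) n))"

(* generators of U_eps(affine sl_{n+1}): E_i, F_i, K_{alpha_i}, i = 0..n *)
datatype gen = Eg nat | Fg nat | Kg nat

fun evt :: "bool \<Rightarrow> nat \<Rightarrow> nat \<Rightarrow> complex \<Rightarrow> cvec \<Rightarrow> cvec \<Rightarrow> (nat \<Rightarrow> complex) \<Rightarrow> complex \<Rightarrow> gen \<Rightarrow> oper" where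
  "evt pl n l L a b lam A (Eg i) =
     (if i = 0 then evE0 pl n l L a b lam (apar pl n L lam A) else rhoE n l L a b lam i)"
| "evt pl n l L a b lam A (Fg i) =
     (if i = 0 then evF0 pl n l L a b lam (apar pl n L lam A) else rhoF n l L a b lam i)"
| "evt pl n l L a b lam A (Kg i) =
     (if i = 0 then rhoK0 n l L a b lam else rhoKa n l L a b lam i)"

(* index sets R_s, R^F_s, R^E_s; r^s stored as r : nat => nat, zero outside {1..n} *)
definition Rshape :: "nat \<Rightarrow> nat \<Rightarrow> (nat \<Rightarrow> nat) \<Rightarrow> bool" where
  "Rshape n s r \<longleftrightarrow> (\<forall>k. 1 \<le> k \<and> k < s \<longrightarrow> r (k + 1) \<le> r k)
                     \<and> (\<forall>k. s \<le> k \<and> k < n \<longrightarrow> r k < r (k + 1))"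

definition RFs :: "nat \<Rightarrow> nat \<Rightarrow> (nat \<Rightarrow> nat) set" where
  "RFs n s = {r. (\<forall>k. k \<notin> {1..n} \<longrightarrow> r k = 0) \<and> (\<forall>k\<in>{1..n}. k \<le> r k \<and> r k \<le> n) \<and> Rshape n s r}"

definition REs :: "nat \<Rightarrow> nat \<Rightarrow> (nat \<Rightarrow> nat) set" where
  "REs n s = {r. (\<forall>k. k \<notin> {1..n} \<longrightarrow> r k = 0) \<and> (\<forall>k\<in>{1..n}. 1 \<le> r k \<and> r k \<le> k) \<and> Rshape n s r}"

definition epsr :: "nat \<Rightarrow> (nat \<Rightarrow> nat) \<Rightarrow> idx" where
  "epsr n r = (\<lambda>p q. \<Sum>k\<in>{1..n}. uvec k (r k) p q)"

definition alphar :: "nat \<Rightarrow> (nat \<Rightarrow> nat) \<Rightarrow> idx" where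
  "alphar n r = (\<lambda>p q. \<Sum>k\<in>{1..n}. alpha n k (r k) p q)"

definition CE :: "nat \<Rightarrow> cvec \<Rightarrow> (nat \<Rightarrow> nat) \<Rightarrow> nat \<Rightarrow> complex" where
  "CE n c r s = (let r0 = (\<lambda>k. if k = 0 then n else r k) in
     c (s-1) (s-1) + (\<Sum>k\<in>{1..s-1}. \<Sum>p\<in>{r (k+1)..r k - 1}. c k p)
       - (\<Sum>k\<in>{1..s}. \<Sum>p\<in>{r k + 1..r0 (k-1)}. c k p))"

definition DF :: "nat \<Rightarrow> cvec \<Rightarrow> (nat \<Rightarrow> nat) \<Rightarrow> nat \<Rightarrow> complex" where
  "DF n c r s = - c n n + (\<Sum>k\<in>{1..n-s+1}. c 1 k)
     - (\<Sum>k\<in>{s+1..n}. c (r k - 1) (n - k + r k) - c (r k) (n - k + r k))"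

end

theory Submission
  imports Defs
begin


definition supp :: "nat \<Rightarrow> idx \<Rightarrow> bool" where
  "supp n m \<longleftrightarrow> (\<forall>i j. \<not> valid n i j \<longrightarrow> m i j = 0)"

lemma finite_basis_idx: "finite (basis_idx n l)"
proof -
  let ?S = "{f::nat\<times>nat\<Rightarrow>int. \<forall>x. (x \<in> {(i,j). valid n i j} \<longrightarrow> f x \<in> {0..<int l}) \<and> (x \<notin> {(i,j). valid n i j} \<longrightarrow> f x = 0)}"
  have fA: "finite {(i,j). valid n i j}"
    by (rule finite_subset[of _ "{1..n} \<times> {1..n}"]) (auto simp: valid_def)
  have "finite ?S" by (rule finite_set_of_finite_funs) (use fA in auto)
  moreover have "basis_idx n l \<subseteq> curry ` ?S"
  proof
    fix m assume m: "m \<in> basis_idx n l"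
    have "m = curry (case_prod m)" by simp
    moreover have "case_prod m \<in> ?S" using m by (auto simp: basis_idx_def)
    ultimately show "m \<in> curry ` ?S" by blast
  qed
  ultimately show ?thesis by (meson finite_imageI finite_subset)
qed

lemma red_in_basis: "l > 0 \<Longrightarrow> red n l m \<in> basis_idx n l"
  by (auto simp: red_def basis_idx_def)

lemma red_red: "red n l (red n l m) = red n l m"
  by (auto simp: red_def fun_eq_iff)

lemma vbas_red[simp]: "vbas n l (red n l m) = vbas n l m"
  by (simp add: vbas_def red_red)

lemma red_iadd_red: "red n l (iadd (red n l m) u) = red n l (iadd m u)"
  by (auto simp: red_def iadd_def fun_eq_iff mod_add_left_eq)

lemma vbas_iadd_red[simp]: "vbas n l (iadd (red n l m) u) = vbas n l (iadd m u)"
  by (simp add: vbas_def red_iadd_red)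

lemma lin_vbas: "l > 0 \<Longrightarrow> lin n l f (vbas n l m) = f (red n l m)"
proof -
  assume l: "l > 0"
  have "lin n l f (vbas n l m) k = f (red n l m) k" for k
  proof -
    have "lin n l f (vbas n l m) k = (\<Sum>m'\<in>basis_idx n l. (if m' = red n l m then f m' k else 0))"
      unfolding lin_def vbas_def by (rule sum.cong) auto
    also have "\<dots> = f (red n l m) k"
      using sum.delta[OF finite_basis_idx, of "red n l m" "\<lambda>m'. f m' k" n l] red_in_basis[OF l] by simp
    finally show ?thesis .
  qed
  then show ?thesis by auto
qed

definition linop :: "oper \<Rightarrow> bool" where
  "linop A \<longleftrightarrow> (\<forall>(S::nat set) c v. A (\<lambda>k. \<Sum>y\<in>S. c y * v y k) = (\<lambda>k. \<Sum>y\<in>S. c y * A (v y) k))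
     \<and> (\<forall>(S::(nat \<Rightarrow> nat) set) c v. A (\<lambda>k. \<Sum>y\<in>S. c y * v y k) = (\<lambda>k. \<Sum>y\<in>S. c y * A (v y) k))
     \<and> (\<forall>(S::((nat \<Rightarrow> nat) \<times> nat) set) c v. A (\<lambda>k. \<Sum>y\<in>S. c y * v y k) = (\<lambda>k. \<Sum>y\<in>S. c y * A (v y) k))
     \<and> (\<forall>c v. A (\<lambda>k. c * v k) = (\<lambda>k. c * A v k))"

lemma lin_sum_gen: "lin n l f (\<lambda>k. \<Sum>y\<in>S. c y * v y k) = (\<lambda>k. \<Sum>y\<in>S. c y * lin n l f (v y) k)"
proof -
  have "lin n l f (\<lambda>k. \<Sum>y\<in>S. c y * v y k) k = (\<Sum>y\<in>S. c y * lin n l f (v y) k)" for k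
    unfolding lin_def
    by (simp add: sum_distrib_left sum_distrib_right mult.assoc sum.swap[of _ S])
  then show ?thesis by auto
qed

lemma lin_scal: "lin n l f (\<lambda>k. c * v k) = (\<lambda>k. c * lin n l f v k)"
  unfolding lin_def by (auto simp: sum_distrib_left mult.assoc)

lemma linop_lin: "linop (lin n l f)"
  unfolding linop_def by (simp add: lin_sum_gen lin_scal)

lemma linop_comp: "linop A \<Longrightarrow> linop B \<Longrightarrow> linop (A \<circ> B)"
  unfolding linop_def by simp

lemma linop_id: "linop id"
  unfolding linop_def by simp

lemma linop_qcomm: "linop A \<Longrightarrow> linop B \<Longrightarrow> linop (qcomm q A B)"
  unfolding linop_def qcomm_def
  by (simp add: sum_subtractf[symmetric] sum_distrib_left algebra_simps)

lemma linop_smul: "linop A \<Longrightarrow> linop (smul c A)"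
  unfolding linop_def smul_def
  by (simp add: sum_distrib_left algebra_simps)

lemma linop_nest_up: "(\<And>i. linop (X i)) \<Longrightarrow> linop (nest_up q X k)"
  by (induction q X k rule: nest_up.induct) (auto intro: linop_id linop_qcomm)

lemma linop_sum: "linop A \<Longrightarrow> A (\<lambda>k. \<Sum>y\<in>(S::nat set). c y * v y k) = (\<lambda>k. \<Sum>y\<in>S. c y * A (v y) k)"
  "linop A \<Longrightarrow> A (\<lambda>k. \<Sum>y\<in>(S'::(nat\<Rightarrow>nat) set). c' y * v' y k) = (\<lambda>k. \<Sum>y\<in>S'. c' y * A (v' y) k)"
  "linop A \<Longrightarrow> A (\<lambda>k. \<Sum>y\<in>(S''::((nat\<Rightarrow>nat)\<times>nat) set). c'' y * v'' y k) = (\<lambda>k. \<Sum>y\<in>S''. c'' y * A (v'' y) k)"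
  "linop A \<Longrightarrow> A (\<lambda>k. c0 * v0 k) = (\<lambda>k. c0 * A v0 k)"
  unfolding linop_def by blast+

lemma qint_aux:
  assumes "exp L ^ 2 \<noteq> 1"
  shows "qpow L x = exp (x * L)" "qpow L (- x) = 1 / exp (x * L)"
    "qpow L (x - 1) = exp (x * L) / exp L" "qpow L (- (x - 1)) = exp L / exp (x * L)"
    "exp (- L) = 1 / exp L" "exp L - 1 / exp L \<noteq> 0" "exp L * exp L - 1 \<noteq> 0"
proof -
  show "qpow L x = exp (x * L)" by (simp add: qpow_def)
  show "qpow L (- x) = 1 / exp (x * L)" by (simp add: qpow_def exp_minus inverse_eq_divide)
  show "qpow L (x - 1) = exp (x * L) / exp L" by (simp add: qpow_def exp_diff[symmetric] algebra_simps)
  show "qpow L (- (x - 1)) = exp L / exp (x * L)" by (simp add: qpow_def exp_diff[symmetric] algebra_simps)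
  show "exp (- L) = 1 / exp L" by (simp add: exp_minus inverse_eq_divide)
  show d: "exp L * exp L - 1 \<noteq> 0" using assms by (simp add: power2_eq_square)
  then show "exp L - 1 / exp L \<noteq> 0" by (simp add: field_simps)
qed

lemma fld1: fixes u e :: complex assumes "u \<noteq> 0" "e \<noteq> 0" "e * e - 1 \<noteq> 0"
  shows "(u - 1 / u) / (e - 1 / e) - 1 / e * ((u / e - e / u) / (e - 1 / e)) = u / e"
proof -
  have D: "e - 1 / e = (e * e - 1) / e" using assms by (simp add: field_simps)
  have N: "(u - 1 / u) - 1 / e * (u / e - e / u) = u * (e * e - 1) / (e * e)"
    using assms by (simp add: field_simps)
  have "(u - 1 / u) / (e - 1 / e) - 1 / e * ((u / e - e / u) / (e - 1 / e))
      = ((u - 1 / u) - 1 / e * (u / e - e / u)) / (e - 1 / e)" by (simp add: diff_divide_distrib)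
  also have "\<dots> = u / e" unfolding N D using assms by (simp add: field_simps)
  finally show ?thesis .
qed

lemma fld2: fixes u e :: complex assumes "u \<noteq> 0" "e \<noteq> 0" "e * e - 1 \<noteq> 0"
  shows "(u / e - e / u) / (e - 1 / e) - 1 / e * ((u - 1 / u) / (e - 1 / e)) = - (1 / u)"
proof -
  have D: "e - 1 / e = (e * e - 1) / e" using assms by (simp add: field_simps)
  have N: "(u / e - e / u) - 1 / e * (u - 1 / u) = - ((e * e - 1) / (e * u))"
    using assms by (simp add: field_simps)
  have "(u / e - e / u) / (e - 1 / e) - 1 / e * ((u - 1 / u) / (e - 1 / e))
      = ((u / e - e / u) - 1 / e * (u - 1 / u)) / (e - 1 / e)" by (simp add: diff_divide_distrib)
  also have "\<dots> = - (1 / u)" unfolding N D using assms by (simp add: field_simps)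
  finally show ?thesis .
qed

lemma qint_id1:
  assumes "exp L ^ 2 \<noteq> 1"
  shows "qint L x - exp (- L) * qint L (x - 1) = qpow L (x - 1)"
proof -
  note q = qint_aux(1-4)[OF assms, of x] qint_aux(5-7)[OF assms]
  have u0: "exp (x * L) \<noteq> 0" "exp L \<noteq> 0" by simp_all
  show ?thesis unfolding qint_def q(1-5) using fld1[OF u0 q(7)] by simp
qed

lemma qint_id2:
  assumes "exp L ^ 2 \<noteq> 1"
  shows "qint L (x - 1) - exp (- L) * qint L x = - qpow L (- x)"
proof -
  note q = qint_aux(1-4)[OF assms, of x] qint_aux(5-7)[OF assms]
  have u0: "exp (x * L) \<noteq> 0" "exp L \<noteq> 0" by simp_all
  have "- x = - (x - 1) - 1" by simp
  show ?thesis unfolding qint_def q(1-5) using fld2[OF u0 q(7)] by (simp add: minus_diff_eq)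
qed

lemma qpow_add: "qpow L (x + y) = qpow L x * qpow L y"
  unfolding qpow_def by (simp add: distrib_right exp_add)

lemma qpow_periodic:
  assumes "exp L ^ l = 1" and "z \<in> \<int>"
  shows "qpow L (x + of_nat l * z) = qpow L x"
proof -
  obtain k where k: "z = of_int k" using assms(2) Ints_cases by blast
  have "exp (of_nat l * z * L) = (exp L ^ l) powi k"
    by (simp add: k exp_power_int exp_of_nat_mult[symmetric] mult.commute mult.left_commute)
  then show ?thesis unfolding qpow_def using assms(1) by (simp add: distrib_right exp_add)
qed

lemma qint_periodic:
  assumes "exp L ^ l = 1" and "z \<in> \<int>"
  shows "qint L (x + of_nat l * z) = qint L x"
proof -
  have "- (x + of_nat l * z) = - x + of_nat l * (- z)" by simp
  moreover have "- z \<in> \<int>" using assms(2) by simp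
  ultimately show ?thesis unfolding qint_def using qpow_periodic[OF assms(1)] assms(2) by metis
qed


lemma supp_iadd: "supp n m \<Longrightarrow> supp n c \<Longrightarrow> supp n (iadd m c)"
  by (simp add: supp_def iadd_def)

lemma iadd_assoc: "iadd (iadd m a) b = iadd m (\<lambda>p q. a p q + b p q)"
  by (simp add: iadd_def fun_eq_iff add.assoc)

lemma iadd_comm_shift: "iadd (iadd m a) b = iadd (iadd m b) a"
  by (simp add: iadd_def fun_eq_iff algebra_simps)

lemma sum_gt_Suc: "s \<le> k \<Longrightarrow> (\<Sum>i\<in>{s<..Suc k}. f i) = f (Suc k) + (\<Sum>i\<in>{s<..k}. f i)"
proof -
  assume "s \<le> k"
  then have "{s<..Suc k} = insert (Suc k) {s<..k}" by auto
  then show ?thesis by simp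
qed

lemma sum_gt_Suc_cong: "s \<le> k \<Longrightarrow> (\<And>i. s < i \<Longrightarrow> i \<le> k \<Longrightarrow> g i = f i) \<Longrightarrow> (\<Sum>i\<in>{s<..Suc k}. g i) = g (Suc k) + (\<Sum>i\<in>{s<..k}. f i)"
  by (simp add: sum_gt_Suc)

lemma sum_lt_Suc: "1 \<le> k \<Longrightarrow> (\<Sum>i\<in>{1..<Suc k}. f i) = (\<Sum>i\<in>{1..<k}. f i) + f k"
  by (simp add: atLeastLessThanSuc add.commute)

definition cterm :: "complex \<Rightarrow> nat \<Rightarrow> (nat \<Rightarrow> complex) \<Rightarrow> nat \<Rightarrow> complex" where
  "cterm L k X s = (-1) ^ (k - s) * qpow L ((\<Sum>i\<in>{1..<s}. X i - 1) - (\<Sum>i\<in>{s<..k}. X i)) * qint L (X s)"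

lemma cterm_cong: "(\<And>i. 1 \<le> i \<Longrightarrow> i \<le> k \<Longrightarrow> X i = Y i) \<Longrightarrow> s \<in> {1..k} \<Longrightarrow> cterm L k X s = cterm L k Y s"
proof -
  assume a: "\<And>i. 1 \<le> i \<Longrightarrow> i \<le> k \<Longrightarrow> X i = Y i" and s: "s \<in> {1..k}"
  have "(\<Sum>i\<in>{1..<s}. X i - 1) = (\<Sum>i\<in>{1..<s}. Y i - 1)" using a s by (intro sum.cong) auto
  moreover have "(\<Sum>i\<in>{s<..k}. X i) = (\<Sum>i\<in>{s<..k}. Y i)" using a s by (intro sum.cong) auto
  moreover have "X s = Y s" using a s by auto
  ultimately show ?thesis unfolding cterm_def by simp
qed

lemma cterm_P1:
  assumes "\<And>i. 1 \<le> i \<Longrightarrow> i \<le> k \<Longrightarrow> Y i = X i" and "s \<in> {1..k}"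
  shows "cterm L (Suc k) Y s = - cterm L k X s * qpow L (- Y (Suc k))"
proof -
  have s: "1 \<le> s" "s \<le> k" using assms(2) by auto
  have e1: "(\<Sum>i\<in>{1..<s}. Y i - 1) = (\<Sum>i\<in>{1..<s}. X i - 1)" using assms(1) s by (auto intro!: sum.cong)
  have e2: "(\<Sum>i\<in>{s<..Suc k}. Y i) = Y (Suc k) + (\<Sum>i\<in>{s<..k}. X i)"
    using assms(1) s by (intro sum_gt_Suc_cong) auto
  have e3: "Y s = X s" using assms(1) s by auto
  have e4: "(-1::complex) ^ (Suc k - s) = - ((-1) ^ (k - s))" using s by (simp add: Suc_diff_le)
  have "qpow L ((\<Sum>i\<in>{1..<s}. X i - 1) - (Y (Suc k) + (\<Sum>i\<in>{s<..k}. X i)))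
      = qpow L ((\<Sum>i\<in>{1..<s}. X i - 1) - (\<Sum>i\<in>{s<..k}. X i)) * qpow L (- Y (Suc k))"
    unfolding qpow_add[symmetric] by (rule arg_cong[where f="qpow L"]) simp
  then show ?thesis unfolding cterm_def e1 e2 e3 e4 by (simp add: algebra_simps)
qed

lemma cterm_P2a:
  assumes "\<And>i. 1 \<le> i \<Longrightarrow> i \<le> k \<Longrightarrow> X' i = (if i = k then X i - 1 else X i)" and "s \<in> {1..<k}"
  shows "cterm L k X s - exp (- L) * cterm L k X' s = 0"
proof -
  have s: "1 \<le> s" "s < k" using assms(2) by auto
  obtain k0 where k0: "k = Suc k0" "s \<le> k0" using s by (cases k) auto
  have e1: "(\<Sum>i\<in>{1..<s}. X' i - 1) = (\<Sum>i\<in>{1..<s}. X i - 1)" using assms(1) s by (intro sum.cong) auto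
  have a: "(\<Sum>i\<in>{s<..k}. X' i) = X' k + (\<Sum>i\<in>{s<..k0}. X i)"
    unfolding k0 by (rule sum_gt_Suc_cong) (use k0 assms(1) in auto)
  have b: "(\<Sum>i\<in>{s<..k}. X i) = X k + (\<Sum>i\<in>{s<..k0}. X i)"
    unfolding k0 by (rule sum_gt_Suc_cong) (use k0 in auto)
  have c: "X' k = X k - 1" using assms(1) s by auto
  have e2: "(\<Sum>i\<in>{s<..k}. X' i) = (\<Sum>i\<in>{s<..k}. X i) - 1" unfolding a b c by simp
  have e3: "X' s = X s" using assms(1) s by auto
  have q: "qpow L ((\<Sum>i\<in>{1..<s}. X i - 1) - ((\<Sum>i\<in>{s<..k}. X i) - 1))
     = qpow L ((\<Sum>i\<in>{1..<s}. X i - 1) - (\<Sum>i\<in>{s<..k}. X i)) * qpow L 1"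
    unfolding qpow_add[symmetric] by (rule arg_cong[where f="qpow L"]) simp
  have "cterm L k X' s = cterm L k X s * qpow L 1"
    unfolding cterm_def e1 e2 e3 q by (simp only: mult_ac)
  moreover have "exp (- L) * qpow L 1 = 1" by (simp add: qpow_def exp_minus)
  ultimately have "exp (- L) * cterm L k X' s = cterm L k X s"
    by (metis mult.left_commute mult_1_right)
  then show ?thesis by simp
qed

lemma cterm_P2b:
  assumes "\<And>i. 1 \<le> i \<Longrightarrow> i \<le> k \<Longrightarrow> X' i = (if i = k then X i - 1 else X i)"
    and "\<And>i. 1 \<le> i \<Longrightarrow> i \<le> k \<Longrightarrow> Y i = X i" and "1 \<le> k" and "exp L ^ 2 \<noteq> 1"
  shows "(cterm L k X k - exp (- L) * cterm L k X' k) * qint L (Y (Suc k)) = cterm L (Suc k) Y (Suc k)"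
proof -
  have e1: "(\<Sum>i\<in>{1..<k}. X' i - 1) = (\<Sum>i\<in>{1..<k}. X i - 1)" using assms(1) by (auto intro!: sum.cong)
  have e3: "X' k = X k - 1" using assms(1,3) by auto
  have e4: "(\<Sum>i\<in>{1..<Suc k}. Y i - 1) = (\<Sum>i\<in>{1..<k}. X i - 1) + (X k - 1)"
  proof -
    have "(\<Sum>i\<in>{1..<k}. Y i - 1) = (\<Sum>i\<in>{1..<k}. X i - 1)" using assms(2) by (intro sum.cong) auto
    then show ?thesis using assms(2,3) by (simp add: sum_lt_Suc)
  qed
  have "cterm L k X k - exp (- L) * cterm L k X' k
     = qpow L (\<Sum>i\<in>{1..<k}. X i - 1) * (qint L (X k) - exp (- L) * qint L (X k - 1))"
    unfolding cterm_def e1 e3 by (simp add: algebra_simps)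
  also have "\<dots> = qpow L (\<Sum>i\<in>{1..<k}. X i - 1) * qpow L (X k - 1)" using qint_id1[OF assms(4)] by simp
  finally show ?thesis unfolding cterm_def e4 by (simp add: qpow_add)
qed

locale nestsys =
  fixes n l :: nat and L :: complex and T :: "nat \<Rightarrow> oper" and J :: "nat \<Rightarrow> nat set"
    and d :: "nat \<Rightarrow> nat \<Rightarrow> idx" and w :: "nat \<Rightarrow> nat \<Rightarrow> complex"
    and Z :: "nat \<Rightarrow> idx \<Rightarrow> nat \<Rightarrow> complex" and R :: "nat \<Rightarrow> nat \<Rightarrow> bool"
  assumes e2: "exp L ^ 2 \<noteq> 1"
    and lin: "\<And>k. linop (T k)"
    and act: "\<And>k m. k \<in> {1..n} \<Longrightarrow> supp n m \<Longrightarrow>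
       T k (vbas n l m) = (\<lambda>x. \<Sum>j\<in>J k. w k j * qint L (Z k m j) * vbas n l (iadd m (d k j)) x)"
    and dsupp: "\<And>k j. k \<in> {1..n} \<Longrightarrow> j \<in> J k \<Longrightarrow> supp n (d k j)"
    and relA: "\<And>k i j m. 1 \<le> k \<Longrightarrow> k < n \<Longrightarrow> i \<in> J k \<Longrightarrow> j \<in> J (Suc k) \<Longrightarrow> supp n m \<Longrightarrow>
       Z (Suc k) (iadd m (d k i)) j = Z (Suc k) m j - (if R i j then 1 else 0)"
    and relB: "\<And>k i j m. 1 \<le> k \<Longrightarrow> k < n \<Longrightarrow> i \<in> J k \<Longrightarrow> j \<in> J (Suc k) \<Longrightarrow> supp n m \<Longrightarrow>
       Z k (iadd m (d (Suc k) j)) i = Z k m i - (if R i j then 0 else 1)"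
    and far: "\<And>k p i j m. k \<in> {1..n} \<Longrightarrow> p \<in> {1..n} \<Longrightarrow> (p + 2 \<le> k \<or> k + 2 \<le> p) \<Longrightarrow>
       i \<in> J k \<Longrightarrow> j \<in> J p \<Longrightarrow> supp n m \<Longrightarrow> Z k (iadd m (d p j)) i = Z k m i"
begin

definition PF :: "nat \<Rightarrow> (nat \<Rightarrow> nat) set" where
  "PF k = {r. (\<forall>i\<in>{1..k}. r i \<in> J i) \<and> (\<forall>i. i \<notin> {1..k} \<longrightarrow> r i = 0)}"

definition Dsum :: "nat \<Rightarrow> (nat \<Rightarrow> nat) \<Rightarrow> idx" where
  "Dsum k r = (\<lambda>p q. \<Sum>i\<in>{1..k}. d i (r i) p q)"

definition shR :: "nat \<Rightarrow> nat \<Rightarrow> (nat \<Rightarrow> nat) \<Rightarrow> bool" where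
  "shR k s r \<longleftrightarrow> (\<forall>i. 1 \<le> i \<and> i < s \<longrightarrow> \<not> R (r i) (r (Suc i))) \<and> (\<forall>i. s \<le> i \<and> i < k \<longrightarrow> R (r i) (r (Suc i)))"

definition Wt :: "nat \<Rightarrow> (nat \<Rightarrow> nat) \<Rightarrow> complex" where
  "Wt k r = (\<Prod>i\<in>{1..k}. w i (r i))"

definition Ccl :: "nat \<Rightarrow> idx \<Rightarrow> (nat \<Rightarrow> nat) \<Rightarrow> complex" where
  "Ccl k m r = Wt k r * (\<Sum>s\<in>{1..k}. if shR k s r then cterm L k (\<lambda>i. Z i m (r i)) s else 0)"

lemma PF_Suc_img: "PF (Suc k) = (\<lambda>(r, j). r(Suc k := j)) ` (PF k \<times> J (Suc k))"
proof (rule set_eqI, rule iffI)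
  fix r' assume r': "r' \<in> PF (Suc k)"
  let ?r = "r'(Suc k := 0)"
  have "(?r, r' (Suc k)) \<in> PF k \<times> J (Suc k)" using r' by (auto simp: PF_def)
  moreover have "r' = (\<lambda>(r, j). r(Suc k := j)) (?r, r' (Suc k))" by simp
  ultimately show "r' \<in> (\<lambda>(r, j). r(Suc k := j)) ` (PF k \<times> J (Suc k))" by (rule image_eqI[rotated])
next
  fix r' assume "r' \<in> (\<lambda>(r, j). r(Suc k := j)) ` (PF k \<times> J (Suc k))"
  then show "r' \<in> PF (Suc k)" by (auto simp: PF_def)
qed

lemma PF_Suc_inj: "inj_on (\<lambda>(r, j). r(Suc k := j)) (PF k \<times> J (Suc k))"
proof (rule inj_onI, clarify)
  fix r j r' j' assume a: "r \<in> PF k" "r' \<in> PF k" "r(Suc k := j) = r'(Suc k := j')"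
  then have "j = j'" by (metis fun_upd_same)
  moreover have "r = r'"
  proof
    fix i show "r i = r' i"
      using a fun_upd_other[of i "Suc k" r j] fun_upd_other[of i "Suc k" r' j'] by (cases "i = Suc k") (auto simp: PF_def)
  qed
  ultimately show "r = r' \<and> j = j'" by simp
qed

lemma sum_PF_Suc: "(\<Sum>r\<in>PF (Suc k). f r) = (\<Sum>r\<in>PF k. \<Sum>j\<in>J (Suc k). f (r(Suc k := j)))"
proof -
  have "(\<Sum>r\<in>PF (Suc k). f r) = (\<Sum>x\<in>PF k \<times> J (Suc k). f ((\<lambda>(r, j). r(Suc k := j)) x))"
    unfolding PF_Suc_img by (rule sum.reindex[OF PF_Suc_inj, unfolded comp_def])
  also have "\<dots> = (\<Sum>r\<in>PF k. \<Sum>j\<in>J (Suc k). f (r(Suc k := j)))"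
    by (simp add: sum.cartesian_product) (simp add: case_prod_beta)
  finally show ?thesis .
qed

lemma PF_0: "PF 0 = {\<lambda>_. 0}"
  by (auto simp: PF_def)

lemma Dsum_Suc: "r' = r(Suc k := j) \<Longrightarrow> r \<in> PF k \<Longrightarrow> Dsum (Suc k) r' = (\<lambda>p q. Dsum k r p q + d (Suc k) j p q)"
  unfolding Dsum_def by (auto simp: fun_eq_iff)

lemma Dsum_Suc': "Dsum (Suc k) r = (\<lambda>p q. Dsum k r p q + d (Suc k) (r (Suc k)) p q)"
  unfolding Dsum_def by (auto simp: fun_eq_iff)

lemma Dsum_supp: "r \<in> PF k \<Longrightarrow> t \<le> k \<Longrightarrow> k \<le> n \<Longrightarrow> supp n (Dsum t r)"
proof (induction t)
  case 0 then show ?case by (simp add: Dsum_def supp_def)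
next
  case (Suc t)
  have "supp n (d (Suc t) (r (Suc t)))" using Suc.prems by (intro dsupp) (auto simp: PF_def)
  then show ?case using Suc by (simp add: Dsum_Suc' supp_def)
qed

lemma Z_far_Dsum:
  assumes "r \<in> PF k" "Suc k \<le> n" "t + 1 \<le> k" "j \<in> J (Suc k)" "supp n m"
  shows "Z (Suc k) (iadd m (Dsum t r)) j = Z (Suc k) m j"
  using assms(3)
proof (induction t)
  case 0 then show ?case by (simp add: Dsum_def iadd_def)
next
  case (Suc t)
  have sm: "supp n (iadd m (Dsum t r))" using assms Suc.prems by (intro supp_iadd Dsum_supp[of r k]) auto
  have "iadd m (Dsum (Suc t) r) = iadd (iadd m (Dsum t r)) (d (Suc t) (r (Suc t)))"
    by (simp add: Dsum_Suc' iadd_assoc)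
  moreover have "Z (Suc k) (iadd (iadd m (Dsum t r)) (d (Suc t) (r (Suc t)))) j = Z (Suc k) (iadd m (Dsum t r)) j"
    using assms Suc.prems sm by (intro far) (auto simp: PF_def)
  ultimately show ?case using Suc by simp
qed

lemma Z1:
  assumes "r \<in> PF k" "Suc k \<le> n" "1 \<le> k" "j \<in> J (Suc k)" "supp n m"
  shows "Z (Suc k) (iadd m (Dsum k r)) j = Z (Suc k) m j - (if R (r k) j then 1 else 0)"
proof -
  obtain t where t: "k = Suc t" using assms(3) by (cases k) auto
  have sm: "supp n (iadd m (Dsum t r))" using assms t by (intro supp_iadd Dsum_supp[of r k]) auto
  have "iadd m (Dsum k r) = iadd (iadd m (Dsum t r)) (d k (r k))"
    by (simp add: t Dsum_Suc' iadd_assoc)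
  moreover have "Z (Suc k) (iadd (iadd m (Dsum t r)) (d k (r k))) j = Z (Suc k) (iadd m (Dsum t r)) j - (if R (r k) j then 1 else 0)"
    using assms sm by (intro relA) (auto simp: PF_def)
  moreover have "Z (Suc k) (iadd m (Dsum t r)) j = Z (Suc k) m j"
    using assms t by (intro Z_far_Dsum) auto
  ultimately show ?thesis by simp
qed

lemma Z2:
  assumes "r \<in> PF k" "Suc k \<le> n" "1 \<le> i" "i \<le> k" "j \<in> J (Suc k)" "supp n m"
  shows "Z i (iadd m (d (Suc k) j)) (r i) = (if i = k then Z i m (r i) - (if R (r k) j then 0 else 1) else Z i m (r i))"
proof (cases "i = k")
  case True then show ?thesis using assms by (simp add: relB PF_def)
next
  case False then show ?thesis using assms by (auto intro!: far simp: PF_def)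
qed

lemma shR_Suc_R:
  assumes "1 \<le> k" "R (r k) j" "s \<in> {1..Suc k}"
  shows "shR (Suc k) s (r(Suc k := j)) \<longleftrightarrow> s \<le> k \<and> shR k s r"
proof
  let ?r = "r(Suc k := j)"
  have eq: "\<And>i. i \<le> k \<Longrightarrow> ?r i = r i" by simp
  assume h: "shR (Suc k) s ?r"
  have sk: "s \<le> k"
  proof (rule ccontr)
    assume "\<not> s \<le> k"
    then have "k < s" by simp
    then have "\<not> R (?r k) (?r (Suc k))" using h assms(1) unfolding shR_def by blast
    then show False using assms(2) by simp
  qed
  have "\<forall>i. 1 \<le> i \<and> i < s \<longrightarrow> \<not> R (r i) (r (Suc i))"
  proof (intro allI impI)
    fix i assume i: "1 \<le> i \<and> i < s"
    then have "\<not> R (?r i) (?r (Suc i))" using h unfolding shR_def by blast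
    then show "\<not> R (r i) (r (Suc i))" using i sk by simp
  qed
  moreover have "\<forall>i. s \<le> i \<and> i < k \<longrightarrow> R (r i) (r (Suc i))"
  proof (intro allI impI)
    fix i assume i: "s \<le> i \<and> i < k"
    then have "R (?r i) (?r (Suc i))" using h unfolding shR_def by auto
    then show "R (r i) (r (Suc i))" using i by simp
  qed
  ultimately show "s \<le> k \<and> shR k s r" using sk unfolding shR_def by blast
next
  let ?r = "r(Suc k := j)"
  assume h: "s \<le> k \<and> shR k s r"
  have "\<forall>i. 1 \<le> i \<and> i < s \<longrightarrow> \<not> R (?r i) (?r (Suc i))"
    using h unfolding shR_def by auto
  moreover have "\<forall>i. s \<le> i \<and> i < Suc k \<longrightarrow> R (?r i) (?r (Suc i))"
  proof (intro allI impI)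
    fix i assume i: "s \<le> i \<and> i < Suc k"
    show "R (?r i) (?r (Suc i))"
    proof (cases "i = k")
      case True then show ?thesis using assms(2) by simp
    next
      case False then show ?thesis using h i unfolding shR_def by auto
    qed
  qed
  ultimately show "shR (Suc k) s ?r" unfolding shR_def by blast
qed

lemma shR_Suc_notR:
  assumes "1 \<le> k" "\<not> R (r k) j" "s \<in> {1..Suc k}"
  shows "shR (Suc k) s (r(Suc k := j)) \<longleftrightarrow> s = Suc k \<and> shR k k r"
proof
  let ?r = "r(Suc k := j)"
  assume h: "shR (Suc k) s ?r"
  have sk: "s = Suc k"
  proof (rule ccontr)
    assume "s \<noteq> Suc k"
    then have "s \<le> k" using assms(3) by auto
    then have "R (?r k) (?r (Suc k))" using h unfolding shR_def by blast
    then show False using assms(2) by simp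
  qed
  have "\<forall>i. 1 \<le> i \<and> i < k \<longrightarrow> \<not> R (r i) (r (Suc i))"
  proof (intro allI impI)
    fix i assume i: "1 \<le> i \<and> i < k"
    then have "\<not> R (?r i) (?r (Suc i))" using h sk unfolding shR_def by auto
    then show "\<not> R (r i) (r (Suc i))" using i by simp
  qed
  then show "s = Suc k \<and> shR k k r" using sk unfolding shR_def by auto
next
  let ?r = "r(Suc k := j)"
  assume h: "s = Suc k \<and> shR k k r"
  have "\<forall>i. 1 \<le> i \<and> i < Suc k \<longrightarrow> \<not> R (?r i) (?r (Suc i))"
  proof (intro allI impI)
    fix i assume i: "1 \<le> i \<and> i < Suc k"
    show "\<not> R (?r i) (?r (Suc i))"
    proof (cases "i = k")
      case True then show ?thesis using assms(2) by simp
    next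
      case False then show ?thesis using h i unfolding shR_def by auto
    qed
  qed
  then show "shR (Suc k) s ?r" using h unfolding shR_def by auto
qed

lemma sum_last: "1 \<le> (k::nat) \<Longrightarrow> (\<Sum>s\<in>{1..k}. g s) = (\<Sum>s\<in>{1..<k}. g s) + g k"
proof -
  assume "1 \<le> k"
  then obtain k0 where k0: "k = Suc k0" by (cases k) auto
  have "{1..<Suc k0} = {1..k0}" by auto
  then show ?thesis unfolding k0 by simp
qed

lemma sum_last': "(\<Sum>s\<in>{1..Suc k}. g s) = (\<Sum>s\<in>{1..k}. g s) + g (Suc k)"
  by simp

lemma Wt_Suc: "Wt (Suc k) (r(Suc k := j)) = Wt k r * w (Suc k) j"
proof -
  have "Wt (Suc k) (r(Suc k := j)) = (\<Prod>i\<in>{1..k}. w i ((r(Suc k := j)) i)) * w (Suc k) j"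
    unfolding Wt_def by simp
  also have "(\<Prod>i\<in>{1..k}. w i ((r(Suc k := j)) i)) = Wt k r" unfolding Wt_def by (intro prod.cong) auto
  finally show ?thesis .
qed

lemma Ccl_step:
  assumes r: "r \<in> PF k" and k: "1 \<le> k" "Suc k \<le> n" and j: "j \<in> J (Suc k)" and m: "supp n m"
  shows "Ccl (Suc k) m (r(Suc k := j)) = Ccl k m r * w (Suc k) j * qint L (Z (Suc k) (iadd m (Dsum k r)) j)
     - exp (- L) * (w (Suc k) j * qint L (Z (Suc k) m j) * Ccl k (iadd m (d (Suc k) j)) r)"
proof -
  let ?r = "r(Suc k := j)"
  define X where "X = (\<lambda>i. Z i m (r i))"
  define Y where "Y = (\<lambda>i. Z i m (?r i))"
  define X' where "X' = (\<lambda>i. Z i (iadd m (d (Suc k) j)) (r i))"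
  have YX: "\<And>i. 1 \<le> i \<Longrightarrow> i \<le> k \<Longrightarrow> Y i = X i" unfolding X_def Y_def by simp
  have YS: "Y (Suc k) = Z (Suc k) m j" unfolding Y_def by simp
  have X'X: "\<And>i. 1 \<le> i \<Longrightarrow> i \<le> k \<Longrightarrow> X' i = (if i = k then X i - (if R (r k) j then 0 else 1) else X i)"
    unfolding X'_def X_def using Z2[OF r k(2) _ _ j m] by simp
  have z1: "Z (Suc k) (iadd m (Dsum k r)) j = Y (Suc k) - (if R (r k) j then 1 else 0)"
    using Z1[OF r k(2) k(1) j m] YS by simp
  have CY: "Ccl (Suc k) m ?r = Wt k r * w (Suc k) j * (\<Sum>s\<in>{1..Suc k}. if shR (Suc k) s ?r then cterm L (Suc k) Y s else 0)"
    unfolding Ccl_def Wt_Suc Y_def by simp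
  have CX: "Ccl k m r = Wt k r * (\<Sum>s\<in>{1..k}. if shR k s r then cterm L k X s else 0)"
    unfolding Ccl_def X_def by simp
  have CX': "Ccl k (iadd m (d (Suc k) j)) r = Wt k r * (\<Sum>s\<in>{1..k}. if shR k s r then cterm L k X' s else 0)"
    unfolding Ccl_def X'_def by simp
  show ?thesis
  proof (cases "R (r k) j")
    case True
    have X'eq: "\<And>s. s \<in> {1..k} \<Longrightarrow> cterm L k X' s = cterm L k X s"
      by (rule cterm_cong) (use X'X True in auto)
    have "(\<Sum>s\<in>{1..Suc k}. if shR (Suc k) s ?r then cterm L (Suc k) Y s else 0)
        = (\<Sum>s\<in>{1..k}. if shR (Suc k) s ?r then cterm L (Suc k) Y s else 0)"
      using shR_Suc_R[of k r j, OF k(1) True, of "Suc k"] by (simp add: sum_last')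
    also have "\<dots> = (\<Sum>s\<in>{1..k}. (if shR k s r then cterm L k X s else 0) * (- qpow L (- Y (Suc k))))"
      by (intro sum.cong refl) (use shR_Suc_R[of k r j, OF k(1) True] cterm_P1[OF YX] in auto)
    also have "\<dots> = (\<Sum>s\<in>{1..k}. if shR k s r then cterm L k X s else 0) * (- qpow L (- Y (Suc k)))"
      by (simp add: sum_distrib_right sum_negf)
    finally have L1: "(\<Sum>s\<in>{1..Suc k}. if shR (Suc k) s ?r then cterm L (Suc k) Y s else 0)
        = (\<Sum>s\<in>{1..k}. if shR k s r then cterm L k X s else 0) * (- qpow L (- Y (Suc k)))" .
    have C': "Ccl k (iadd m (d (Suc k) j)) r = Ccl k m r"
      unfolding CX CX' using X'eq by (auto intro!: sum.cong)
    have q2: "qint L (Y (Suc k) - 1) - exp (- L) * qint L (Y (Suc k)) = - qpow L (- Y (Suc k))"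
      by (rule qint_id2[OF e2])
    have "Ccl k m r * w (Suc k) j * qint L (Y (Suc k) - 1) - exp (- L) * (w (Suc k) j * qint L (Y (Suc k)) * Ccl k m r)
        = Ccl k m r * w (Suc k) j * (qint L (Y (Suc k) - 1) - exp (- L) * qint L (Y (Suc k)))"
      by (simp add: algebra_simps)
    also have "\<dots> = Ccl k m r * w (Suc k) j * (- qpow L (- Y (Suc k)))" unfolding q2 ..
    finally show ?thesis unfolding C' z1 CY L1 YS[symmetric] using True
      by (simp add: CX mult_ac)
  next
    case False
    have A1: "(\<Sum>s\<in>{1..Suc k}. if shR (Suc k) s ?r then cterm L (Suc k) Y s else 0)
        = (if shR k k r then cterm L (Suc k) Y (Suc k) else 0)"
    proof -
      have "(\<Sum>s\<in>{1..k}. if shR (Suc k) s ?r then cterm L (Suc k) Y s else 0) = 0"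
        by (intro sum.neutral) (use shR_Suc_notR[of k r j, OF k(1) False] in auto)
      then show ?thesis using shR_Suc_notR[of k r j, OF k(1) False, of "Suc k"] by (simp add: sum_last')
    qed
    have A2: "(\<Sum>s\<in>{1..k}. if shR k s r then cterm L k X s else 0)
       - exp (- L) * (\<Sum>s\<in>{1..k}. if shR k s r then cterm L k X' s else 0)
       = (if shR k k r then cterm L k X k - exp (- L) * cterm L k X' k else 0)"
    proof -
      have "(\<Sum>s\<in>{1..k}. if shR k s r then cterm L k X s else 0)
          - exp (- L) * (\<Sum>s\<in>{1..k}. if shR k s r then cterm L k X' s else 0)
          = (\<Sum>s\<in>{1..k}. if shR k s r then cterm L k X s - exp (- L) * cterm L k X' s else 0)"
        by (simp add: sum_distrib_left sum_subtractf[symmetric] if_distrib cong: if_cong)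
      also have "\<dots> = (\<Sum>s\<in>{1..<k}. if shR k s r then cterm L k X s - exp (- L) * cterm L k X' s else 0)
          + (if shR k k r then cterm L k X k - exp (- L) * cterm L k X' k else 0)"
        by (rule sum_last[OF k(1)])
      also have "(\<Sum>s\<in>{1..<k}. if shR k s r then cterm L k X s - exp (- L) * cterm L k X' s else 0) = 0"
        by (intro sum.neutral ballI) (use cterm_P2a[of k X' X] X'X False in auto)
      finally show ?thesis by simp
    qed
    have A3: "(cterm L k X k - exp (- L) * cterm L k X' k) * qint L (Y (Suc k)) = cterm L (Suc k) Y (Suc k)"
      by (rule cterm_P2b[OF _ YX k(1) e2]) (use X'X False in auto)
    have key: "Wt k r * w (Suc k) j * (\<Sum>s\<in>{1..Suc k}. if shR (Suc k) s ?r then cterm L (Suc k) Y s else 0)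
       = w (Suc k) j * qint L (Y (Suc k)) * (Ccl k m r - exp (- L) * Ccl k (iadd m (d (Suc k) j)) r)"
    proof -
      have "w (Suc k) j * qint L (Y (Suc k)) * (Ccl k m r - exp (- L) * Ccl k (iadd m (d (Suc k) j)) r)
         = w (Suc k) j * qint L (Y (Suc k)) * Wt k r * ((\<Sum>s\<in>{1..k}. if shR k s r then cterm L k X s else 0)
            - exp (- L) * (\<Sum>s\<in>{1..k}. if shR k s r then cterm L k X' s else 0))"
        unfolding CX CX' by (simp add: algebra_simps)
      also have "\<dots> = w (Suc k) j * qint L (Y (Suc k)) * Wt k r * (if shR k k r then cterm L k X k - exp (- L) * cterm L k X' k else 0)"
        unfolding A2 ..
      also have "\<dots> = Wt k r * w (Suc k) j * (if shR k k r then cterm L (Suc k) Y (Suc k) else 0)"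
        using A3 by (auto simp: mult_ac)
      finally show ?thesis unfolding A1 by (rule sym)
    qed
    show ?thesis unfolding CY key z1 YS[symmetric] using False by (simp add: algebra_simps)
  qed
qed

lemma Dsum_1: "Dsum (Suc 0) ((\<lambda>_. 0)(Suc 0 := j)) = d (Suc 0) j"
  unfolding Dsum_def by simp

lemma Ccl_1: "Ccl (Suc 0) m ((\<lambda>_. 0)(Suc 0 := j)) = w (Suc 0) j * qint L (Z (Suc 0) m j)"
proof -
  have "shR (Suc 0) (Suc 0) ((\<lambda>_. 0)(Suc 0 := j))" unfolding shR_def by auto
  then show ?thesis unfolding Ccl_def Wt_def cterm_def by (simp add: qpow_def)
qed

lemma nest_formula:
  "k \<in> {1..n} \<Longrightarrow> supp n m \<Longrightarrow>
    nest_up (exp (- L)) T k (vbas n l m) = (\<lambda>x. \<Sum>r\<in>PF k. Ccl k m r * vbas n l (iadd m (Dsum k r)) x)"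
proof (induction k arbitrary: m)
  case 0 then show ?case by simp
next
  case (Suc k)
  show ?case
  proof (cases "k = 0")
    case True
    have "(\<lambda>x. \<Sum>r\<in>PF (Suc 0). Ccl (Suc 0) m r * vbas n l (iadd m (Dsum (Suc 0) r)) x)
        = (\<lambda>x. \<Sum>j\<in>J (Suc 0). w (Suc 0) j * qint L (Z (Suc 0) m j) * vbas n l (iadd m (d (Suc 0) j)) x)"
      by (simp add: sum_PF_Suc PF_0 Dsum_1 Ccl_1)
    moreover have "nest_up (exp (- L)) T (Suc 0) (vbas n l m) = T (Suc 0) (vbas n l m)" by simp
    ultimately show ?thesis using True act[of "Suc 0" m] Suc.prems by simp
  next
    case False
    then obtain k0 where k0: "k = Suc k0" by (cases k) auto
    have k: "1 \<le> k" "Suc k \<le> n" using False Suc.prems by auto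
    let ?q = "exp (- L)"
    let ?N = "nest_up ?q T k"
    have linN: "linop ?N" by (rule linop_nest_up[OF lin])
    have IH: "\<And>m'. supp n m' \<Longrightarrow> ?N (vbas n l m') = (\<lambda>x. \<Sum>r\<in>PF k. Ccl k m' r * vbas n l (iadd m' (Dsum k r)) x)"
      using Suc.IH k by auto
    have rs: "\<And>r. r \<in> PF k \<Longrightarrow> supp n (iadd m (Dsum k r))"
      using Suc.prems k by (intro supp_iadd Dsum_supp[of _ k]) auto
    have ds: "\<And>j. j \<in> J (Suc k) \<Longrightarrow> supp n (iadd m (d (Suc k) j))"
      using Suc.prems k by (intro supp_iadd dsupp) auto
    have V1: "\<And>r j. r \<in> PF k \<Longrightarrow> iadd (iadd m (Dsum k r)) (d (Suc k) j) = iadd m (Dsum (Suc k) (r(Suc k := j)))"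
      by (simp add: Dsum_Suc iadd_assoc)
    have V2: "\<And>r j. r \<in> PF k \<Longrightarrow> iadd (iadd m (d (Suc k) j)) (Dsum k r) = iadd m (Dsum (Suc k) (r(Suc k := j)))"
      by (simp add: Dsum_Suc iadd_assoc add.commute)
    have A1: "T (Suc k) (?N (vbas n l m)) = (\<lambda>x. \<Sum>r\<in>PF k. \<Sum>j\<in>J (Suc k).
        Ccl k m r * (w (Suc k) j * qint L (Z (Suc k) (iadd m (Dsum k r)) j)) * vbas n l (iadd m (Dsum (Suc k) (r(Suc k := j)))) x)"
    proof -
      have "T (Suc k) (?N (vbas n l m)) = (\<lambda>x. \<Sum>r\<in>PF k. Ccl k m r * T (Suc k) (vbas n l (iadd m (Dsum k r))) x)"
        unfolding IH[OF Suc.prems(2)] by (rule linop_sum(2)[OF lin])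
      also have "\<dots> = (\<lambda>x. \<Sum>r\<in>PF k. Ccl k m r * (\<Sum>j\<in>J (Suc k). w (Suc k) j * qint L (Z (Suc k) (iadd m (Dsum k r)) j) * vbas n l (iadd (iadd m (Dsum k r)) (d (Suc k) j)) x))"
        using act[of "Suc k"] rs k by (auto intro!: sum.cong)
      also have "\<dots> = (\<lambda>x. \<Sum>r\<in>PF k. \<Sum>j\<in>J (Suc k).
        Ccl k m r * (w (Suc k) j * qint L (Z (Suc k) (iadd m (Dsum k r)) j)) * vbas n l (iadd m (Dsum (Suc k) (r(Suc k := j)))) x)"
        by (auto simp: V1 sum_distrib_left mult_ac intro!: sum.cong)
      finally show ?thesis .
    qed
    have A2: "?N (T (Suc k) (vbas n l m)) = (\<lambda>x. \<Sum>r\<in>PF k. \<Sum>j\<in>J (Suc k).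
        (w (Suc k) j * qint L (Z (Suc k) m j)) * Ccl k (iadd m (d (Suc k) j)) r * vbas n l (iadd m (Dsum (Suc k) (r(Suc k := j)))) x)"
    proof -
      have "?N (T (Suc k) (vbas n l m)) = (\<lambda>x. \<Sum>j\<in>J (Suc k). (w (Suc k) j * qint L (Z (Suc k) m j)) * ?N (vbas n l (iadd m (d (Suc k) j))) x)"
      proof -
        have Tact: "T (Suc k) (vbas n l m) = (\<lambda>x. \<Sum>j\<in>J (Suc k). w (Suc k) j * qint L (Z (Suc k) m j) * vbas n l (iadd m (d (Suc k) j)) x)"
          using act[of "Suc k" m] k Suc.prems by auto
        show ?thesis unfolding Tact by (rule linop_sum(1)[OF linN])
      qed
      also have "\<dots> = (\<lambda>x. \<Sum>j\<in>J (Suc k). (w (Suc k) j * qint L (Z (Suc k) m j)) * (\<Sum>r\<in>PF k. Ccl k (iadd m (d (Suc k) j)) r * vbas n l (iadd (iadd m (d (Suc k) j)) (Dsum k r)) x))"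
        using IH ds by (auto intro!: sum.cong)
      also have "\<dots> = (\<lambda>x. \<Sum>r\<in>PF k. \<Sum>j\<in>J (Suc k).
        (w (Suc k) j * qint L (Z (Suc k) m j)) * Ccl k (iadd m (d (Suc k) j)) r * vbas n l (iadd m (Dsum (Suc k) (r(Suc k := j)))) x)"
        by (auto simp: V2 sum_distrib_left mult_ac sum.swap[of _ "J (Suc k)"] intro!: sum.cong)
      finally show ?thesis .
    qed
    have "nest_up ?q T (Suc k) (vbas n l m) = qcomm ?q (T (Suc k)) ?N (vbas n l m)"
      by (simp add: k0)
    also have "\<dots> = (\<lambda>x. \<Sum>r\<in>PF k. \<Sum>j\<in>J (Suc k). Ccl (Suc k) m (r(Suc k := j)) * vbas n l (iadd m (Dsum (Suc k) (r(Suc k := j)))) x)"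
    proof -
      have "qcomm ?q (T (Suc k)) ?N (vbas n l m) x = (\<Sum>r\<in>PF k. \<Sum>j\<in>J (Suc k). Ccl (Suc k) m (r(Suc k := j)) * vbas n l (iadd m (Dsum (Suc k) (r(Suc k := j)))) x)" for x
      proof -
        have "qcomm ?q (T (Suc k)) ?N (vbas n l m) x = (\<Sum>r\<in>PF k. \<Sum>j\<in>J (Suc k).
           Ccl k m r * (w (Suc k) j * qint L (Z (Suc k) (iadd m (Dsum k r)) j)) * vbas n l (iadd m (Dsum (Suc k) (r(Suc k := j)))) x
           - ?q * ((w (Suc k) j * qint L (Z (Suc k) m j)) * Ccl k (iadd m (d (Suc k) j)) r * vbas n l (iadd m (Dsum (Suc k) (r(Suc k := j)))) x))"
          unfolding qcomm_def A1 A2 by (simp add: sum_subtractf sum_distrib_left)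
        also have "\<dots> = (\<Sum>r\<in>PF k. \<Sum>j\<in>J (Suc k). Ccl (Suc k) m (r(Suc k := j)) * vbas n l (iadd m (Dsum (Suc k) (r(Suc k := j)))) x)"
          by (intro sum.cong refl) (simp add: Ccl_step[OF _ k(1) k(2) _ Suc.prems(2)] algebra_simps)
        finally show ?thesis .
      qed
      then show ?thesis by auto
    qed
    also have "\<dots> = (\<lambda>x. \<Sum>r\<in>PF (Suc k). Ccl (Suc k) m r * vbas n l (iadd m (Dsum (Suc k) r)) x)"
      by (simp add: sum_PF_Suc)
    finally show ?thesis .
  qed
qed

end


definition tq :: "nat \<Rightarrow> nat \<Rightarrow> idx \<Rightarrow> idx" where
  "tq n l m = (\<lambda>i j. if valid n i j then m i j div int l else 0)"

lemma cadd_red: "supp n m \<Longrightarrow> cadd (red n l m) b = (\<lambda>i j. cadd m b i j - of_nat l * of_int (tq n l m i j))"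
proof -
  assume s: "supp n m"
  have "cadd (red n l m) b i j = cadd m b i j - of_nat l * of_int (tq n l m i j)" for i j
  proof (cases "valid n i j")
    case True
    have "m i j mod int l = m i j - int l * (m i j div int l)" by (metis minus_div_mult_eq_mod mult.commute)
    then have "(of_int (m i j mod int l) :: complex) = of_int (m i j) - of_nat l * of_int (m i j div int l)"
      by simp
    then show ?thesis using True by (simp add: cadd_def red_def tq_def)
  next
    case False then show ?thesis using s by (simp add: cadd_def red_def tq_def supp_def)
  qed
  then show ?thesis by auto
qed

lemma cadd_iadd: "cadd (iadd m u) b = (\<lambda>i j. cadd m b i j + of_int (u i j))"
  by (simp add: cadd_def iadd_def fun_eq_iff)

lemma sum_pair: "(\<Sum>q\<in>S. (a q + b q) - (c q + e q)) = (\<Sum>q\<in>S. a q - c q) + (\<Sum>q\<in>S. b q - e q)"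
  for a b c e :: "nat \<Rightarrow> complex"
  by (induct S rule: infinite_finite_induct) (simp_all add: algebra_simps)

lemma sum_pair2: "(\<Sum>q\<in>S. (a q - s * b q) - (c q - s * e q)) = (\<Sum>q\<in>S. a q - c q) - s * (\<Sum>q\<in>S. b q - e q)"
  for a b c e :: "nat \<Rightarrow> complex"
  by (induct S rule: infinite_finite_induct) (simp_all add: algebra_simps)

lemma Mf_add: "Mf (\<lambda>i j. x i j + y i j) k j = Mf x k j + Mf y k j"
  unfolding Mf_def sum_pair by simp

lemma Mf_diff_scale: "Mf (\<lambda>i j. x i j - c * y i j) k j = Mf x k j - c * Mf y k j"
  unfolding Mf_def sum_pair2 by (simp add: algebra_simps)

lemma Mf_Ints: "Mf (\<lambda>i j. of_int (t i j)) k j \<in> \<int>"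
  unfolding Mf_def by (intro Ints_add Ints_sum Ints_diff) auto

lemma Nf_add: "Nf n (\<lambda>i j. x i j + y i j) k j = Nf n x k j + Nf n y k j"
  unfolding Nf_def by simp

lemma Nf_diff_scale: "Nf n (\<lambda>i j. x i j - c * y i j) k j = Nf n x k j - c * Nf n y k j"
  unfolding Nf_def by (simp add: algebra_simps)

lemma Nf_Ints: "Nf n (\<lambda>i j. of_int (t i j)) k j \<in> \<int>"
  unfolding Nf_def by auto

lemma rowsum_diff_scale: "(\<Sum>k'\<in>S. x i k' - c * y i k') = (\<Sum>k'\<in>S. x i k') - c * (\<Sum>k'\<in>S. y i k')"
  for x y :: cvec
  by (induct S rule: infinite_finite_induct) (simp_all add: algebra_simps)

context
  fixes n l :: nat and L :: complex and a b :: cvec and lam :: "nat \<Rightarrow> complex"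
  assumes l0: "l > 0" and eL: "exp L ^ l = 1"
begin

lemma act_rhoF: "supp n m \<Longrightarrow> rhoF n l L a b lam i (vbas n l m) =
   (\<lambda>x. \<Sum>j\<in>{i..n}. a i j * qint L (Mf (cadd m b) i j - lam i) * vbas n l (iadd m (uvec i j)) x)"
proof -
  assume s: "supp n m"
  have "qint L (Mf (cadd (red n l m) b) i j - lam i) = qint L (Mf (cadd m b) i j - lam i)" for j
  proof -
    have e: "Mf (cadd (red n l m) b) i j - lam i = (Mf (cadd m b) i j - lam i) + of_nat l * (- Mf (\<lambda>i j. of_int (tq n l m i j)) i j)"
      unfolding cadd_red[OF s] Mf_diff_scale by simp
    have "- Mf (\<lambda>i j. of_int (tq n l m i j)) i j \<in> \<int>" using Mf_Ints by (simp add: Ints_minus)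
    then show ?thesis unfolding e by (rule qint_periodic[OF eL])
  qed
  then show ?thesis unfolding rhoF_def lin_vbas[OF l0] by simp
qed

lemma act_rhoE: "supp n m \<Longrightarrow> rhoE n l L a b lam i (vbas n l m) =
   (\<lambda>x. \<Sum>j\<in>{1..i}. apow n a (alpha n i j) * qint L (Nf n (cadd m b) i j) * vbas n l (iadd m (alpha n i j)) x)"
proof -
  assume s: "supp n m"
  have "qint L (Nf n (cadd (red n l m) b) i j) = qint L (Nf n (cadd m b) i j)" for j
  proof -
    have e: "Nf n (cadd (red n l m) b) i j = Nf n (cadd m b) i j + of_nat l * (- Nf n (\<lambda>i j. of_int (tq n l m i j)) i j)"
      unfolding cadd_red[OF s] Nf_diff_scale by simp
    have "- Nf n (\<lambda>i j. of_int (tq n l m i j)) i j \<in> \<int>" using Nf_Ints by (simp add: Ints_minus)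
    then show ?thesis unfolding e by (rule qint_periodic[OF eL])
  qed
  then show ?thesis unfolding rhoE_def lin_vbas[OF l0] by simp
qed

lemma act_rhoKL: "supp n m \<Longrightarrow> rhoKL n l L a b lam i (vbas n l m) =
   (\<lambda>x. qpow L (- (\<Sum>k'\<in>{i..n}. cadd m b i k') + lamLam n lam i) * vbas n l m x)"
proof -
  assume s: "supp n m"
  have "- (\<Sum>k'\<in>{i..n}. cadd (red n l m) b i k') + lamLam n lam i
      = (- (\<Sum>k'\<in>{i..n}. cadd m b i k') + lamLam n lam i) + of_nat l * (\<Sum>k'\<in>{i..n}. of_int (tq n l m i k'))"
    unfolding cadd_red[OF s] by (simp add: sum_subtractf sum_distrib_left algebra_simps)
  moreover have "(\<Sum>k'\<in>{i..n}. of_int (tq n l m i k')) \<in> (\<int>::complex set)" by (intro Ints_sum) auto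
  ultimately have "qpow L (- (\<Sum>k'\<in>{i..n}. cadd (red n l m) b i k') + lamLam n lam i) = qpow L (- (\<Sum>k'\<in>{i..n}. cadd m b i k') + lamLam n lam i)"
    by (metis qpow_periodic[OF eL])
  then show ?thesis unfolding rhoKL_def lin_vbas[OF l0] by simp
qed

lemma act_rhoKLinv: "supp n m \<Longrightarrow> rhoKLinv n l L a b lam i (vbas n l m) =
   (\<lambda>x. qpow L ((\<Sum>k'\<in>{i..n}. cadd m b i k') - lamLam n lam i) * vbas n l m x)"
proof -
  assume s: "supp n m"
  have "(\<Sum>k'\<in>{i..n}. cadd (red n l m) b i k') - lamLam n lam i
      = ((\<Sum>k'\<in>{i..n}. cadd m b i k') - lamLam n lam i) + of_nat l * (- (\<Sum>k'\<in>{i..n}. of_int (tq n l m i k')))"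
    unfolding cadd_red[OF s] by (simp add: sum_subtractf sum_distrib_left algebra_simps)
  moreover have "- (\<Sum>k'\<in>{i..n}. of_int (tq n l m i k')) \<in> (\<int>::complex set)" by (intro Ints_minus Ints_sum) auto
  ultimately have "qpow L ((\<Sum>k'\<in>{i..n}. cadd (red n l m) b i k') - lamLam n lam i) = qpow L ((\<Sum>k'\<in>{i..n}. cadd m b i k') - lamLam n lam i)"
    by (metis qpow_periodic[OF eL])
  then show ?thesis unfolding rhoKLinv_def lin_vbas[OF l0] by simp
qed

end

lemma of_int_ite: "(of_int (if P then 1 else 0) :: complex) = (if P then 1 else 0)"
  by simp

lemma sum_ind: "(\<Sum>q\<in>{a..b::nat}. (if q = t then (1::complex) else 0)) = (if a \<le> t \<and> t \<le> b then 1 else 0)"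
  by (simp add: sum.delta)

lemma Mf_shift: "Mf (cadd (iadd m u) b) k j = Mf (cadd m b) k j + Mf (\<lambda>i j. of_int (u i j)) k j"
  unfolding cadd_iadd Mf_add ..

lemma Nf_shift: "Nf n (cadd (iadd m u) b) k j = Nf n (cadd m b) k j + Nf n (\<lambda>i j. of_int (u i j)) k j"
  unfolding cadd_iadd Nf_add ..

lemma Mf_uvec_A:
  assumes "1 \<le> k" "k \<le> i" "Suc k \<le> j"
  shows "Mf (\<lambda>p q. of_int (uvec k i p q)) (Suc k) j = - (if i < j then 1 else 0)"
proof -
  have "Mf (\<lambda>p q. of_int (uvec k i p q)) (Suc k) j = - (\<Sum>q\<in>{k..j-1}. (if q = i then (1::complex) else 0))"
    unfolding Mf_def uvec_def by (simp add: sum_negf of_int_ite)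
  also have "\<dots> = - (if i < j then 1 else 0)" unfolding sum_ind using assms by auto
  finally show ?thesis .
qed

lemma Mf_uvec_B:
  assumes "1 \<le> k" "Suc k \<le> t" "k \<le> i"
  shows "Mf (\<lambda>p q. of_int (uvec (Suc k) t p q)) k i = - (if i < t then 0 else 1)"
proof -
  have "Mf (\<lambda>p q. of_int (uvec (Suc k) t p q)) k i = - (\<Sum>q\<in>{k..i}. (if q = t then (1::complex) else 0))"
  proof -
    have "k - 1 \<noteq> Suc k" "k \<noteq> Suc k" by auto
    then show ?thesis unfolding Mf_def uvec_def using assms by (simp add: sum_negf of_int_ite)
  qed
  also have "\<dots> = - (if i < t then 0 else 1)" unfolding sum_ind using assms by auto
  finally show ?thesis .
qed

lemma Mf_uvec_far:
  assumes "1 \<le> k" "p + 2 \<le> k \<or> k + 2 \<le> p"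
  shows "Mf (\<lambda>p' q. of_int (uvec p t p' q)) k i = 0"
proof -
  have "k - 1 \<noteq> p" "k \<noteq> p" "Suc k \<noteq> p" using assms by auto
  then show ?thesis unfolding Mf_def uvec_def by (simp add: of_int_ite)
qed

lemma alpha_closed:
  assumes "i \<le> n"
  shows "alpha n i j p q = (if q + i = n + p + 1 \<and> j \<le> p \<and> p + 1 \<le> i then 1 else 0)
                          - (if q + i = n + p \<and> j \<le> p \<and> p \<le> i then 1 else 0)"
proof -
  have A: "(\<Sum>k\<in>{j+1..i}. uvec (k-1) (n-i+k) p q) = (if q + i = n + p + 1 \<and> j \<le> p \<and> p + 1 \<le> i then 1 else 0)"
  proof -
    have "(\<Sum>k\<in>{j+1..i}. uvec (k-1) (n-i+k) p q) = (\<Sum>k\<in>{j+1..i}. if k = p + 1 then (if q + i = n + p + 1 then 1 else 0) else 0)"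
      unfolding uvec_def using assms by (intro sum.cong) auto
    also have "\<dots> = (if q + i = n + p + 1 \<and> j \<le> p \<and> p + 1 \<le> i then 1 else 0)"
      by (simp add: sum.delta)
    finally show ?thesis .
  qed
  have B: "(\<Sum>k\<in>{j..i}. uvec k (n-i+k) p q) = (if q + i = n + p \<and> j \<le> p \<and> p \<le> i then 1 else 0)"
  proof -
    have "(\<Sum>k\<in>{j..i}. uvec k (n-i+k) p q) = (\<Sum>k\<in>{j..i}. if k = p then (if q + i = n + p then 1 else 0) else 0)"
      unfolding uvec_def using assms by (intro sum.cong) auto
    also have "\<dots> = (if q + i = n + p \<and> j \<le> p \<and> p \<le> i then 1 else 0)"
      by (simp add: sum.delta)
    finally show ?thesis .
  qed
  show ?thesis unfolding alpha_def A B ..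
qed

lemma Nf_alpha_A:
  assumes "1 \<le> k" "Suc k \<le> n" "1 \<le> i" "i \<le> k" "1 \<le> j" "j \<le> Suc k"
  shows "Nf n (\<lambda>p q. of_int (alpha n k i p q)) (Suc k) j = - (if i < j then 1 else 0)"
  unfolding Nf_def using assms by (auto simp: alpha_closed)

lemma Nf_alpha_B:
  assumes "1 \<le> k" "Suc k \<le> n" "1 \<le> i" "i \<le> k" "1 \<le> j" "j \<le> Suc k"
  shows "Nf n (\<lambda>p q. of_int (alpha n (Suc k) j p q)) k i = - (if i < j then 0 else 1)"
  unfolding Nf_def using assms by (auto simp: alpha_closed)

lemma Nf_alpha_far:
  assumes "k \<le> n" "p \<le> n" "1 \<le> i" "i \<le> k" "p + 2 \<le> k \<or> k + 2 \<le> p"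
  shows "Nf n (\<lambda>p' q. of_int (alpha n p t p' q)) k i = 0"
  unfolding Nf_def using assms by (auto simp: alpha_closed)

lemma supp_uvec: "valid n i j \<Longrightarrow> supp n (uvec i j)"
  by (auto simp: supp_def uvec_def)

lemma supp_alpha: "i \<le> n \<Longrightarrow> 1 \<le> j \<Longrightarrow> supp n (alpha n i j)"
  by (auto simp: supp_def alpha_closed valid_def)

context
  fixes n l :: nat and L :: complex and a b :: cvec and lam :: "nat \<Rightarrow> complex"
  assumes l0: "l > 0" and eL: "exp L ^ l = 1" and e2: "exp L ^ 2 \<noteq> 1"
begin

lemma nestsys_FU: "nestsys n l L (rhoF n l L a b lam) (\<lambda>k. {k..n}) (\<lambda>k j. uvec k j) (\<lambda>k j. a k j)
   (\<lambda>k m j. Mf (cadd m b) k j - lam k) (<)"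
proof
  show "exp L ^ 2 \<noteq> 1" by (rule e2)
  show "linop (rhoF n l L a b lam k)" for k unfolding rhoF_def by (rule linop_lin)
  show "rhoF n l L a b lam k (vbas n l m) = (\<lambda>x. \<Sum>j\<in>{k..n}. a k j * qint L (Mf (cadd m b) k j - lam k) * vbas n l (iadd m (uvec k j)) x)"
    if "supp n m" for k m by (rule act_rhoF[OF l0 eL that])
  show "supp n (uvec k j)" if "k \<in> {1..n}" "j \<in> {k..n}" for k j
    using that by (intro supp_uvec) (auto simp: valid_def)
  show "Mf (cadd (iadd m (uvec k i)) b) (Suc k) j - lam (Suc k) = Mf (cadd m b) (Suc k) j - lam (Suc k) - (if i < j then 1 else 0)"
    if "1 \<le> k" "k < n" "i \<in> {k..n}" "j \<in> {Suc k..n}" "supp n m" for k i j m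
    using that by (simp add: Mf_shift Mf_uvec_A)
  show "Mf (cadd (iadd m (uvec (Suc k) j)) b) k i - lam k = Mf (cadd m b) k i - lam k - (if i < j then 0 else 1)"
    if "1 \<le> k" "k < n" "i \<in> {k..n}" "j \<in> {Suc k..n}" "supp n m" for k i j m
    using that by (simp add: Mf_shift Mf_uvec_B)
  show "Mf (cadd (iadd m (uvec p j)) b) k i - lam k = Mf (cadd m b) k i - lam k"
    if "k \<in> {1..n}" "p \<in> {1..n}" "p + 2 \<le> k \<or> k + 2 \<le> p" "i \<in> {k..n}" "j \<in> {p..n}" "supp n m" for k p i j m
    using that by (simp add: Mf_shift Mf_uvec_far)
qed

lemma nestsys_EU: "nestsys n l L (rhoE n l L a b lam) (\<lambda>k. {1..k}) (\<lambda>k j. alpha n k j) (\<lambda>k j. apow n a (alpha n k j))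
   (\<lambda>k m j. Nf n (cadd m b) k j) (<)"
proof
  show "exp L ^ 2 \<noteq> 1" by (rule e2)
  show "linop (rhoE n l L a b lam k)" for k unfolding rhoE_def by (rule linop_lin)
  show "rhoE n l L a b lam k (vbas n l m) = (\<lambda>x. \<Sum>j\<in>{1..k}. apow n a (alpha n k j) * qint L (Nf n (cadd m b) k j) * vbas n l (iadd m (alpha n k j)) x)"
    if "supp n m" for k m by (rule act_rhoE[OF l0 eL that])
  show "supp n (alpha n k j)" if "k \<in> {1..n}" "j \<in> {1..k}" for k j
    using that by (intro supp_alpha) auto
  show "Nf n (cadd (iadd m (alpha n k i)) b) (Suc k) j = Nf n (cadd m b) (Suc k) j - (if i < j then 1 else 0)"
    if "1 \<le> k" "k < n" "i \<in> {1..k}" "j \<in> {1..Suc k}" "supp n m" for k i j m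
    using that by (simp add: Nf_shift Nf_alpha_A)
  show "Nf n (cadd (iadd m (alpha n (Suc k) j)) b) k i = Nf n (cadd m b) k i - (if i < j then 0 else 1)"
    if "1 \<le> k" "k < n" "i \<in> {1..k}" "j \<in> {1..Suc k}" "supp n m" for k i j m
    using that by (simp add: Nf_shift Nf_alpha_B)
  show "Nf n (cadd (iadd m (alpha n p j)) b) k i = Nf n (cadd m b) k i"
    if "k \<in> {1..n}" "p \<in> {1..n}" "p + 2 \<le> k \<or> k + 2 \<le> p" "i \<in> {1..k}" "j \<in> {1..p}" "supp n m" for k p i j m
    using that by (simp add: Nf_shift Nf_alpha_far)
qed

lemma nestsys_FD: "nestsys n l L (\<lambda>k. rhoF n l L a b lam (n + 1 - k)) (\<lambda>k. {n + 1 - k..n}) (\<lambda>k j. uvec (n + 1 - k) j) (\<lambda>k j. a (n + 1 - k) j)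
   (\<lambda>k m j. Mf (cadd m b) (n + 1 - k) j - lam (n + 1 - k)) (\<le>)"
proof
  show "exp L ^ 2 \<noteq> 1" by (rule e2)
  show "linop (rhoF n l L a b lam (n + 1 - k))" for k unfolding rhoF_def by (rule linop_lin)
  show "rhoF n l L a b lam (n + 1 - k) (vbas n l m) = (\<lambda>x. \<Sum>j\<in>{n + 1 - k..n}. a (n + 1 - k) j * qint L (Mf (cadd m b) (n + 1 - k) j - lam (n + 1 - k)) * vbas n l (iadd m (uvec (n + 1 - k) j)) x)"
    if "supp n m" for k m by (rule act_rhoF[OF l0 eL that])
  show "supp n (uvec (n + 1 - k) j)" if "k \<in> {1..n}" "j \<in> {n + 1 - k..n}" for k j
    using that by (intro supp_uvec) (auto simp: valid_def)
  show "Mf (cadd (iadd m (uvec (n + 1 - k) i)) b) (n + 1 - Suc k) j - lam (n + 1 - Suc k) = Mf (cadd m b) (n + 1 - Suc k) j - lam (n + 1 - Suc k) - (if i \<le> j then 1 else 0)"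
    if "1 \<le> k" "k < n" "i \<in> {n + 1 - k..n}" "j \<in> {n + 1 - Suc k..n}" "supp n m" for k i j m
  proof -
    have e: "n + 1 - k = Suc (n - k)" "n + 1 - Suc k = n - k" using that by auto
    show ?thesis unfolding e Mf_shift using that Mf_uvec_B[of "n - k" i j] e by auto
  qed
  show "Mf (cadd (iadd m (uvec (n + 1 - Suc k) j)) b) (n + 1 - k) i - lam (n + 1 - k) = Mf (cadd m b) (n + 1 - k) i - lam (n + 1 - k) - (if i \<le> j then 0 else 1)"
    if "1 \<le> k" "k < n" "i \<in> {n + 1 - k..n}" "j \<in> {n + 1 - Suc k..n}" "supp n m" for k i j m
  proof -
    have e: "n + 1 - k = Suc (n - k)" "n + 1 - Suc k = n - k" using that by auto
    show ?thesis unfolding e Mf_shift using that Mf_uvec_A[of "n - k" j i] e by auto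
  qed
  show "Mf (cadd (iadd m (uvec (n + 1 - p) j)) b) (n + 1 - k) i - lam (n + 1 - k) = Mf (cadd m b) (n + 1 - k) i - lam (n + 1 - k)"
    if "k \<in> {1..n}" "p \<in> {1..n}" "p + 2 \<le> k \<or> k + 2 \<le> p" "i \<in> {n + 1 - k..n}" "j \<in> {n + 1 - p..n}" "supp n m" for k p i j m
  proof -
    have "Mf (\<lambda>p' q. of_int (uvec (n + 1 - p) j p' q)) (n + 1 - k) i = 0"
      by (rule Mf_uvec_far) (use that in auto)
    then show ?thesis by (simp add: Mf_shift)
  qed
qed

lemma nestsys_ED: "nestsys n l L (\<lambda>k. rhoE n l L a b lam (n + 1 - k)) (\<lambda>k. {1..n + 1 - k}) (\<lambda>k j. alpha n (n + 1 - k) j) (\<lambda>k j. apow n a (alpha n (n + 1 - k) j))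
   (\<lambda>k m j. Nf n (cadd m b) (n + 1 - k) j) (\<le>)"
proof
  show "exp L ^ 2 \<noteq> 1" by (rule e2)
  show "linop (rhoE n l L a b lam (n + 1 - k))" for k unfolding rhoE_def by (rule linop_lin)
  show "rhoE n l L a b lam (n + 1 - k) (vbas n l m) = (\<lambda>x. \<Sum>j\<in>{1..n + 1 - k}. apow n a (alpha n (n + 1 - k) j) * qint L (Nf n (cadd m b) (n + 1 - k) j) * vbas n l (iadd m (alpha n (n + 1 - k) j)) x)"
    if "supp n m" for k m by (rule act_rhoE[OF l0 eL that])
  show "supp n (alpha n (n + 1 - k) j)" if "k \<in> {1..n}" "j \<in> {1..n + 1 - k}" for k j
    using that by (intro supp_alpha) auto
  show "Nf n (cadd (iadd m (alpha n (n + 1 - k) i)) b) (n + 1 - Suc k) j = Nf n (cadd m b) (n + 1 - Suc k) j - (if i \<le> j then 1 else 0)"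
    if "1 \<le> k" "k < n" "i \<in> {1..n + 1 - k}" "j \<in> {1..n + 1 - Suc k}" "supp n m" for k i j m
  proof -
    have e: "n + 1 - k = Suc (n - k)" "n + 1 - Suc k = n - k" using that by auto
    show ?thesis unfolding e Nf_shift using that Nf_alpha_B[of "n - k" n j i] e by auto
  qed
  show "Nf n (cadd (iadd m (alpha n (n + 1 - Suc k) j)) b) (n + 1 - k) i = Nf n (cadd m b) (n + 1 - k) i - (if i \<le> j then 0 else 1)"
    if "1 \<le> k" "k < n" "i \<in> {1..n + 1 - k}" "j \<in> {1..n + 1 - Suc k}" "supp n m" for k i j m
  proof -
    have e: "n + 1 - k = Suc (n - k)" "n + 1 - Suc k = n - k" using that by auto
    show ?thesis unfolding e Nf_shift using that Nf_alpha_A[of "n - k" n j i] e by auto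
  qed
  show "Nf n (cadd (iadd m (alpha n (n + 1 - p) j)) b) (n + 1 - k) i = Nf n (cadd m b) (n + 1 - k) i"
    if "k \<in> {1..n}" "p \<in> {1..n}" "p + 2 \<le> k \<or> k + 2 \<le> p" "i \<in> {1..n + 1 - k}" "j \<in> {1..n + 1 - p}" "supp n m" for k p i j m
  proof -
    have "Nf n (\<lambda>p' q. of_int (alpha n (n + 1 - p) j p' q)) (n + 1 - k) i = 0"
      by (rule Nf_alpha_far) (use that in auto)
    then show ?thesis by (simp add: Nf_shift)
  qed
qed

end


context nestsys begin

lemma finite_PF: "(\<And>i. finite (J i)) \<Longrightarrow> finite (PF k)"
proof -
  assume f: "\<And>i. finite (J i)"
  let ?B = "\<Union>i\<in>{1..k}. J i"
  have "finite {f. \<forall>x. (x \<in> {1..k} \<longrightarrow> f x \<in> ?B) \<and> (x \<notin> {1..k} \<longrightarrow> f x = 0)}"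
    by (rule finite_set_of_finite_funs) (use f in auto)
  moreover have "PF k \<subseteq> {f. \<forall>x. (x \<in> {1..k} \<longrightarrow> f x \<in> ?B) \<and> (x \<notin> {1..k} \<longrightarrow> f x = 0)}"
    unfolding PF_def by blast
  ultimately show ?thesis by (rule finite_subset[rotated])
qed

lemma nest_sum_split:
  assumes "\<And>i. finite (J i)"
  shows "(\<Sum>r\<in>PF k. Ccl k m r * g r) = (\<Sum>s\<in>{1..k}. \<Sum>r\<in>{r\<in>PF k. shR k s r}. Wt k r * cterm L k (\<lambda>i. Z i m (r i)) s * g r)"
proof -
  have "(\<Sum>r\<in>PF k. Ccl k m r * g r) = (\<Sum>r\<in>PF k. \<Sum>s\<in>{1..k}. if shR k s r then Wt k r * cterm L k (\<lambda>i. Z i m (r i)) s * g r else 0)"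
    unfolding Ccl_def by (intro sum.cong refl) (simp add: sum_distrib_left sum_distrib_right if_distrib mult_ac cong: if_cong)
  also have "\<dots> = (\<Sum>s\<in>{1..k}. \<Sum>r\<in>PF k. if shR k s r then Wt k r * cterm L k (\<lambda>i. Z i m (r i)) s * g r else 0)"
    by (rule sum.swap)
  also have "\<dots> = (\<Sum>s\<in>{1..k}. \<Sum>r\<in>{r\<in>PF k. shR k s r}. Wt k r * cterm L k (\<lambda>i. Z i m (r i)) s * g r)"
    by (rule sum.cong[OF refl], rule sum.inter_filter[OF finite_PF[OF assms], symmetric])
  finally show ?thesis .
qed

end

lemma sum_reflect:
  fixes a b N :: nat
  assumes "b \<le> N" "a \<le> N"
  shows "(\<Sum>i\<in>{a..b}. f (N - i)) = (\<Sum>i\<in>{N - b..N - a}. f i)"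
  by (rule sum.reindex_bij_witness[where i="\<lambda>i. N - i" and j="\<lambda>i. N - i"]) (use assms in auto)

lemma Mf_S:
  fixes c :: cvec
  assumes hc: "\<forall>i j. \<not> valid n i j \<longrightarrow> c i j = 0" and ij: "1 \<le> i" "i \<le> j"
  shows "Mf c i j = (\<Sum>p\<in>{i..<j}. c i p) - (\<Sum>p\<in>{i-1..<j}. c (i-1) p)
     + (\<Sum>p\<in>{i..<Suc j}. c i p) - (\<Sum>p\<in>{Suc i..<Suc j}. c (Suc i) p)"
proof -
  have e1: "{i-1..j-1} = {i-1..<j}" "{i..j} = {i..<Suc j}" using ij by auto
  have "\<not> valid n i (i-1)" "\<not> valid n (Suc i) i" using ij by (auto simp: valid_def)
  then have z1: "c i (i-1) = 0" "c (Suc i) i = 0" using hc by auto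
  have a: "(\<Sum>p\<in>{i-1..<j}. c i p) = (\<Sum>p\<in>{i..<j}. c i p)"
  proof -
    have "(\<Sum>p\<in>{i-1..<j}. c i p) = c i (i-1) + (\<Sum>p\<in>{Suc (i-1)..<j}. c i p)"
      using ij by (intro sum.atLeast_Suc_lessThan) auto
    then show ?thesis using z1 ij by simp
  qed
  have b: "(\<Sum>p\<in>{i..<Suc j}. c (Suc i) p) = (\<Sum>p\<in>{Suc i..<Suc j}. c (Suc i) p)"
  proof -
    have "(\<Sum>p\<in>{i..<Suc j}. c (Suc i) p) = c (Suc i) i + (\<Sum>p\<in>{Suc i..<Suc j}. c (Suc i) p)"
      by (rule sum.atLeast_Suc_lessThan) (use ij in simp)
    then show ?thesis using z1 by simp
  qed
  have "Mf c i j = ((\<Sum>p\<in>{i-1..<j}. c i p) - (\<Sum>p\<in>{i-1..<j}. c (i-1) p))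
     + ((\<Sum>p\<in>{i..<Suc j}. c i p) - (\<Sum>p\<in>{i..<Suc j}. c (Suc i) p))"
    unfolding Mf_def e1 sum_subtractf by simp
  then show ?thesis unfolding a b add_diff_eq .
qed

lemma CE_ident:
  fixes c :: cvec and r :: "nat \<Rightarrow> nat"
  assumes hc: "\<forall>i j. \<not> valid n i j \<longrightarrow> c i j = 0"
    and s: "1 \<le> s" "s \<le> n" and rs: "r s = s"
    and rb: "\<forall>k\<in>{1..n}. k \<le> r k \<and> r k \<le> n"
    and rd: "\<forall>k. 1 \<le> k \<and> k < s \<longrightarrow> r (Suc k) \<le> r k"
  shows "c s s - (\<Sum>k\<in>{1..n}. c 1 k) + (\<Sum>i\<in>{1..s-1}. Mf c i (r i)) = CE n c r s"
proof -
  define S where "S k a b = (\<Sum>p\<in>{a..<b}. c k p)" for k a b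
  define R0 where "R0 k = (if k = 0 then n else r k)" for k
  have S0: "S 0 a b = 0" for a b unfolding S_def using hc by (simp add: valid_def)
  have split: "a \<le> x \<Longrightarrow> x \<le> b \<Longrightarrow> S k a b = S k a x + S k x b" for k a x b
    unfolding S_def by (simp add: sum.atLeastLessThan_concat)
  have head: "a < b \<Longrightarrow> S k a b = c k a + S k (Suc a) b" for k a b
    unfolding S_def by (rule sum.atLeast_Suc_lessThan)
  have Mf': "Mf c i (r i) = S i i (r i) - S (i-1) (i-1) (r i) + S i i (Suc (r i)) - S (Suc i) (Suc i) (Suc (r i))"
    if "1 \<le> i" "i \<le> n" for i
    unfolding S_def using Mf_S[OF hc, of i "r i"] that rb by auto
  have mono: "r (t + d) \<le> r t" if "1 \<le> t" "t + d \<le> s" for t d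
    using that
  proof (induction d)
    case 0 then show ?case by simp
  next
    case (Suc d)
    have "1 \<le> t + d \<and> t + d < s" using Suc.prems by simp
    then have "r (Suc (t + d)) \<le> r (t + d)" using rd by blast
    moreover have "r (t + d) \<le> r t" using Suc by simp
    ultimately show ?case by simp
  qed
  have R0ge: "Suc t \<le> R0 t" if "t < s" for t
  proof (cases t)
    case 0 then show ?thesis using s by (simp add: R0_def)
  next
    case (Suc t')
    define d where "d = s - t"
    have d: "s = t + d" using that unfolding d_def by simp
    have "r s \<le> r t" using mono[of t d] d Suc by simp
    then show ?thesis using rs Suc that by (simp add: R0_def)
  qed
  have Q: "(\<Sum>i\<in>{1..t}. Mf c i (r i)) - S 1 1 (Suc n)
     = (\<Sum>k<t. S k (r (Suc k)) (r k)) - (\<Sum>k\<in>{..t}. S k (Suc (r k)) (Suc (R0 (k-1))))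
       + S t t (R0 t) - S (Suc t) (Suc t) (Suc (R0 t))" if "t < s" for t
    using that
  proof (induction t)
    case 0 then show ?case by (simp add: S0 R0_def)
  next
    case (Suc t)
    let ?j = "r (Suc t)"
    have tj: "Suc t \<le> ?j" "?j \<le> R0 t" "?j \<le> n"
    proof -
      show "Suc t \<le> ?j" "?j \<le> n" using rb Suc.prems s by auto
      show "?j \<le> R0 t"
      proof (cases t)
        case 0 then show ?thesis using rb Suc.prems s by (auto simp: R0_def)
      next
        case (Suc t') then show ?thesis using rd \<open>Suc t < s\<close> by (auto simp: R0_def)
      qed
    qed
    have IH: "(\<Sum>i\<in>{1..t}. Mf c i (r i)) - S 1 1 (Suc n)
       = (\<Sum>k<t. S k (r (Suc k)) (r k)) - (\<Sum>k\<in>{..t}. S k (Suc (r k)) (Suc (R0 (k-1))))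
         + S t t (R0 t) - S (Suc t) (Suc t) (Suc (R0 t))" using Suc by simp
    have M: "Mf c (Suc t) ?j = S (Suc t) (Suc t) ?j - S t t ?j + S (Suc t) (Suc t) (Suc ?j) - S (Suc (Suc t)) (Suc (Suc t)) (Suc ?j)"
      using Mf'[of "Suc t"] Suc.prems s by simp
    have sp1: "S t t (R0 t) = S t t ?j + S t ?j (R0 t)" using tj by (intro split) auto
    have sp2: "S (Suc t) (Suc t) (Suc (R0 t)) = S (Suc t) (Suc t) (Suc ?j) + S (Suc t) (Suc ?j) (Suc (R0 t))"
      using tj by (intro split) auto
    have k0: "S t ?j (r t) = S t ?j (R0 t)"
      by (cases t) (simp_all add: R0_def S0)
    have R0S: "R0 (Suc t) = ?j" "R0 (Suc t - 1) = R0 t" by (simp_all add: R0_def)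
    have e1: "(\<Sum>i\<in>{1..Suc t}. Mf c i (r i)) = (\<Sum>i\<in>{1..t}. Mf c i (r i)) + Mf c (Suc t) ?j" by simp
    have e2: "(\<Sum>k<Suc t. S k (r (Suc k)) (r k)) = (\<Sum>k<t. S k (r (Suc k)) (r k)) + S t ?j (r t)" by simp
    have e3: "(\<Sum>k\<in>{..Suc t}. S k (Suc (r k)) (Suc (R0 (k-1)))) = (\<Sum>k\<in>{..t}. S k (Suc (r k)) (Suc (R0 (k-1)))) + S (Suc t) (Suc ?j) (Suc (R0 t))"
      by (simp add: R0S)
    have IH': "(\<Sum>i\<in>{1..t}. Mf c i (r i)) = (\<Sum>k<t. S k (r (Suc k)) (r k)) - (\<Sum>k\<in>{..t}. S k (Suc (r k)) (Suc (R0 (k-1))))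
         + S t t (R0 t) - S (Suc t) (Suc t) (Suc (R0 t)) + S 1 1 (Suc n)" using IH by (simp add: algebra_simps)
    show ?case unfolding e1 e2 e3 R0S(1) IH' M k0 sp1 sp2 by (simp add: algebra_simps)
  qed
  obtain t where t: "s = Suc t" using s by (cases s) auto
  have Qt: "(\<Sum>i\<in>{1..t}. Mf c i (r i)) - S 1 1 (Suc n)
     = (\<Sum>k<t. S k (r (Suc k)) (r k)) - (\<Sum>k\<in>{..t}. S k (Suc (r k)) (Suc (R0 (k-1))))
       + S t t (R0 t) - S (Suc t) (Suc t) (Suc (R0 t))" using Q[of t] t by simp
  have z: "(\<Sum>k\<in>{1..m}. f k) = (\<Sum>k\<in>{..m}. f k)" if "f 0 = 0" for f :: "nat \<Rightarrow> complex" and m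
  proof -
    have "(\<Sum>k\<in>{0..m}. f k) = f 0 + (\<Sum>k\<in>{Suc 0..m}. f k)" by (rule sum.atLeast_Suc_atMost) simp
    then show ?thesis using that by (simp add: atMost_atLeast0)
  qed
  have c1: "(\<Sum>k\<in>{1..n}. c 1 k) = S 1 1 (Suc n)" unfolding S_def by (simp add: atLeastLessThanSuc_atLeastAtMost)
  have A: "(\<Sum>k\<in>{1..s-1}. \<Sum>p\<in>{r (k+1)..r k - 1}. c k p) = (\<Sum>k<t. S k (r (Suc k)) (r k)) + S t s (R0 t)"
  proof -
    have "(\<Sum>k\<in>{1..t}. \<Sum>p\<in>{r (k+1)..r k - 1}. c k p) = (\<Sum>k\<in>{1..t}. S k (r (Suc k)) (r k))"
    proof (rule sum.cong[OF refl])
      fix k assume k: "k \<in> {1..t}"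
      then have "k \<in> {1..n}" using t s by auto
      then have "1 \<le> r k" using rb k by fastforce
      then have "{r (k+1)..r k - 1} = {r (Suc k)..<r k}" by auto
      then show "(\<Sum>p\<in>{r (k+1)..r k - 1}. c k p) = S k (r (Suc k)) (r k)" unfolding S_def by simp
    qed
    also have "\<dots> = (\<Sum>k\<in>{..t}. S k (r (Suc k)) (r k))" by (rule z) (simp add: S0)
    also have "\<dots> = (\<Sum>k<t. S k (r (Suc k)) (r k)) + S t (r (Suc t)) (r t)" by (simp add: lessThan_Suc_atMost[symmetric])
    also have "S t (r (Suc t)) (r t) = S t s (R0 t)" using rs t by (cases t) (simp_all add: R0_def S0)
    finally show ?thesis using t by simp
  qed
  have B: "(\<Sum>k\<in>{1..s}. \<Sum>p\<in>{r k + 1..(\<lambda>k. if k = 0 then n else r k) (k - 1)}. c k p)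
     = (\<Sum>k\<in>{..t}. S k (Suc (r k)) (Suc (R0 (k-1)))) + S s (Suc s) (Suc (R0 t))"
  proof -
    have "(\<Sum>k\<in>{1..s}. \<Sum>p\<in>{r k + 1..(\<lambda>k. if k = 0 then n else r k) (k - 1)}. c k p)
        = (\<Sum>k\<in>{1..s}. S k (Suc (r k)) (Suc (R0 (k-1))))"
      unfolding S_def R0_def by (intro sum.cong refl) (simp add: atLeastLessThanSuc_atLeastAtMost)
    also have "\<dots> = (\<Sum>k\<in>{..s}. S k (Suc (r k)) (Suc (R0 (k-1))))" by (rule z) (simp add: S0)
    also have "\<dots> = (\<Sum>k\<in>{..t}. S k (Suc (r k)) (Suc (R0 (k-1)))) + S s (Suc (r s)) (Suc (R0 t))"
      using t by simp
    finally show ?thesis using rs by simp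
  qed
  have CE': "CE n c r s = c t t + ((\<Sum>k<t. S k (r (Suc k)) (r k)) + S t s (R0 t))
      - ((\<Sum>k\<in>{..t}. S k (Suc (r k)) (Suc (R0 (k-1)))) + S s (Suc s) (Suc (R0 t)))"
    unfolding CE_def Let_def A[symmetric] B[symmetric] using t by simp
  have h1: "S t t (R0 t) = c t t + S t s (R0 t)" using head[of t "R0 t" t] R0ge[of t] t by simp
  have h2: "S s s (Suc (R0 t)) = c s s + S s (Suc s) (Suc (R0 t))" using head[of s "Suc (R0 t)" s] R0ge[of t] t by simp
  have L: "(\<Sum>i\<in>{1..s-1}. Mf c i (r i)) = (\<Sum>k<t. S k (r (Suc k)) (r k)) - (\<Sum>k\<in>{..t}. S k (Suc (r k)) (Suc (R0 (k-1))))
       + S t t (R0 t) - S (Suc t) (Suc t) (Suc (R0 t)) + S 1 1 (Suc n)" using Qt t by (simp add: algebra_simps)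
  show ?thesis unfolding CE' c1 L h1 using h2 t by (simp add: algebra_simps)
qed


definition RJ :: "(nat \<Rightarrow> nat set) \<Rightarrow> nat \<Rightarrow> nat \<Rightarrow> (nat \<Rightarrow> nat) set" where
  "RJ J n s = {r. (\<forall>k. k \<notin> {1..n} \<longrightarrow> r k = 0) \<and> (\<forall>k\<in>{1..n}. r k \<in> J k) \<and> Rshape n s r}"

definition rv :: "nat \<Rightarrow> (nat \<Rightarrow> nat) \<Rightarrow> nat \<Rightarrow> nat" where
  "rv n r = (\<lambda>i. if i \<in> {1..n} then r (n + 1 - i) else 0)"

lemma RFs_RJ: "RFs n s = RJ (\<lambda>k. {k..n}) n s"
  unfolding RFs_def RJ_def by auto

lemma REs_RJ: "REs n s = RJ (\<lambda>k. {1..k}) n s"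
  unfolding REs_def RJ_def by auto

lemma shR_less_Rshape: assumes ns: "nestsys n l L T J d w Z (<)" shows "nestsys.shR (<) n s r \<longleftrightarrow> Rshape n s r"
  unfolding nestsys.shR_def[OF ns] Rshape_def by (simp add: not_less)

lemma up_set: assumes ns: "nestsys n l L T J d w Z (<)" shows " {r \<in> nestsys.PF J n. nestsys.shR (<) n s r} = RJ J n s"
  unfolding nestsys.PF_def[OF ns] RJ_def by (auto simp: shR_less_Rshape[OF ns])

lemma rv_rv: "(\<forall>k. k \<notin> {1..n} \<longrightarrow> r k = 0) \<Longrightarrow> rv n (rv n r) = r"
  unfolding rv_def by (auto simp: fun_eq_iff)

lemma shR_le_rv:
  assumes ns: "nestsys n l L T J' d w Z (\<le>)" and "1 \<le> s" "s \<le> n"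
  shows "nestsys.shR (\<le>) n (n + 1 - s) (rv n r) \<longleftrightarrow> Rshape n s r"
proof
  assume h: "nestsys.shR (\<le>) n (n + 1 - s) (rv n r)"
  have h1: "\<And>i. 1 \<le> i \<Longrightarrow> i < n + 1 - s \<Longrightarrow> \<not> rv n r i \<le> rv n r (Suc i)"
    and h2: "\<And>i. n + 1 - s \<le> i \<Longrightarrow> i < n \<Longrightarrow> rv n r i \<le> rv n r (Suc i)"
    using h unfolding nestsys.shR_def[OF ns] by auto
  have "r (k + 1) \<le> r k" if "1 \<le> k" "k < s" for k
  proof -
    have "rv n r (n - k) \<le> rv n r (Suc (n - k))" using h2[of "n - k"] that assms by auto
    moreover have "rv n r (n - k) = r (k + 1)" "rv n r (Suc (n - k)) = r k"
      using that assms by (auto simp: rv_def Suc_diff_le)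
    ultimately show ?thesis by simp
  qed
  moreover have "r k < r (k + 1)" if "s \<le> k" "k < n" for k
  proof -
    have "\<not> rv n r (n - k) \<le> rv n r (Suc (n - k))" using h1[of "n - k"] that assms by auto
    moreover have "rv n r (n - k) = r (k + 1)" "rv n r (Suc (n - k)) = r k"
      using that assms by (auto simp: rv_def Suc_diff_le)
    ultimately show ?thesis by simp
  qed
  ultimately show "Rshape n s r" unfolding Rshape_def by auto
next
  assume h: "Rshape n s r"
  have h1: "\<And>k. 1 \<le> k \<Longrightarrow> k < s \<Longrightarrow> r (k + 1) \<le> r k"
    and h2: "\<And>k. s \<le> k \<Longrightarrow> k < n \<Longrightarrow> r k < r (k + 1)"
    using h unfolding Rshape_def by auto
  have "\<not> rv n r i \<le> rv n r (Suc i)" if "1 \<le> i" "i < n + 1 - s" for i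
  proof -
    have "r (n - i) < r (n - i + 1)" using h2[of "n - i"] that assms by auto
    moreover have "rv n r i = r (n - i + 1)" "rv n r (Suc i) = r (n - i)"
      using that assms by (auto simp: rv_def Suc_diff_le)
    ultimately show ?thesis by simp
  qed
  moreover have "rv n r i \<le> rv n r (Suc i)" if "n + 1 - s \<le> i" "i < n" for i
  proof -
    have "r (n - i + 1) \<le> r (n - i)" using h1[of "n - i"] that assms by auto
    moreover have "rv n r i = r (n - i + 1)" "rv n r (Suc i) = r (n - i)"
      using that assms by (auto simp: rv_def Suc_diff_le)
    ultimately show ?thesis by simp
  qed
  ultimately show "nestsys.shR (\<le>) n (n + 1 - s) (rv n r)" unfolding nestsys.shR_def[OF ns] by auto
qed

lemma down_set:
  assumes ns: "nestsys n l L T (\<lambda>k. J (n + 1 - k)) d w Z (\<le>)" and s: "1 \<le> s" "s \<le> n"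
  shows "{r' \<in> nestsys.PF (\<lambda>k. J (n + 1 - k)) n. nestsys.shR (\<le>) n (n + 1 - s) r'} = rv n ` RJ J n s"
proof (rule set_eqI, rule iffI)
  fix r' assume a: "r' \<in> {r' \<in> nestsys.PF (\<lambda>k. J (n + 1 - k)) n. nestsys.shR (\<le>) n (n + 1 - s) r'}"
  let ?r = "rv n r'"
  have z: "\<forall>k. k \<notin> {1..n} \<longrightarrow> r' k = 0" using a unfolding nestsys.PF_def[OF ns] by auto
  have "r' = rv n ?r" using rv_rv[OF z] by simp
  moreover have "?r \<in> RJ J n s"
  proof -
    have "\<forall>k\<in>{1..n}. ?r k \<in> J k"
    proof
      fix k assume k: "k \<in> {1..n}"
      have A: "\<forall>i\<in>{1..n}. r' i \<in> J (n + 1 - i)" using a unfolding nestsys.PF_def[OF ns] by auto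
      have "r' (n + 1 - k) \<in> J (n + 1 - (n + 1 - k))" by (rule bspec[OF A]) (use k in auto)
      moreover have "n + 1 - (n + 1 - k) = k" using k by auto
      ultimately show "?r k \<in> J k" using k by (simp add: rv_def)
    qed
    moreover have "Rshape n s ?r" using a shR_le_rv[OF ns s, of ?r] rv_rv[OF z] by simp
    ultimately show ?thesis unfolding RJ_def rv_def by auto
  qed
  ultimately show "r' \<in> rv n ` RJ J n s" by blast
next
  fix r' assume "r' \<in> rv n ` RJ J n s"
  then obtain r where r: "r \<in> RJ J n s" and r': "r' = rv n r" by blast
  have "r' \<in> nestsys.PF (\<lambda>k. J (n + 1 - k)) n"
  proof -
    have "r (n + 1 - i) \<in> J (n + 1 - i)" if "i \<in> {1..n}" for i
    proof -
      have "n + 1 - i \<in> {1..n}" using that by auto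
      then show ?thesis using r unfolding RJ_def by blast
    qed
    then show ?thesis unfolding r' nestsys.PF_def[OF ns] rv_def by auto
  qed
  moreover have "nestsys.shR (\<le>) n (n + 1 - s) r'" using r shR_le_rv[OF ns s] unfolding r' RJ_def by auto
  ultimately show "r' \<in> {r' \<in> nestsys.PF (\<lambda>k. J (n + 1 - k)) n. nestsys.shR (\<le>) n (n + 1 - s) r'}" by blast
qed

lemma inj_rv: "inj_on (rv n) (RJ J n s)"
proof (rule inj_onI)
  fix r1 r2 assume a: "r1 \<in> RJ J n s" "r2 \<in> RJ J n s" "rv n r1 = rv n r2"
  have "rv n (rv n r1) = rv n (rv n r2)" using a by simp
  then show "r1 = r2" using a(1,2) rv_rv unfolding RJ_def by (metis (mono_tags, lifting) mem_Collect_eq)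
qed

lemma sum_reflect1: "(\<Sum>s\<in>{1..n}. f s) = (\<Sum>s\<in>{1..n}. f (n + 1 - s))" for n :: nat
  by (rule sum.reindex_bij_witness[where i="\<lambda>s. n + 1 - s" and j="\<lambda>s. n + 1 - s"]) auto

lemma prod_reflect1: "(\<Prod>s\<in>{1..n}. f s) = (\<Prod>s\<in>{1..n}. f (n + 1 - s))" for n :: nat
  by (rule prod.reindex_bij_witness[where i="\<lambda>s. n + 1 - s" and j="\<lambda>s. n + 1 - s"]) auto

lemma cterm_rev:
  assumes "\<And>k. k \<in> {1..n} \<Longrightarrow> X' k = X (n + 1 - k)" and "1 \<le> s" "s \<le> n"
  shows "cterm L n X' (n + 1 - s) = (-1) ^ (s - 1) * qpow L ((\<Sum>i\<in>{s<..n}. X i - 1) - (\<Sum>i\<in>{1..<s}. X i)) * qint L (X s)"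
proof -
  have a: "(\<Sum>k\<in>{1..<n + 1 - s}. X' k - 1) = (\<Sum>i\<in>{s<..n}. X i - 1)"
  proof -
    have "(\<Sum>k\<in>{1..<n + 1 - s}. X' k - 1) = (\<Sum>k\<in>{1..n - s}. X (n + 1 - k) - 1)"
      using assms by (intro sum.cong) auto
    also have "\<dots> = (\<Sum>i\<in>{n + 1 - (n - s)..n + 1 - 1}. X i - 1)"
      by (rule sum_reflect[where f="\<lambda>i. X i - 1"]) (use assms in auto)
    also have "{n + 1 - (n - s)..n + 1 - 1} = {s<..n}" using assms by auto
    finally show ?thesis .
  qed
  have b: "(\<Sum>k\<in>{n + 1 - s<..n}. X' k) = (\<Sum>i\<in>{1..<s}. X i)"
  proof -
    have "(\<Sum>k\<in>{n + 1 - s<..n}. X' k) = (\<Sum>k\<in>{n + 2 - s..n}. X (n + 1 - k))"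
      using assms by (intro sum.cong) auto
    also have "\<dots> = (\<Sum>i\<in>{n + 1 - n..n + 1 - (n + 2 - s)}. X i)"
      by (rule sum_reflect) (use assms in auto)
    also have "{n + 1 - n..n + 1 - (n + 2 - s)} = {1..<s}" using assms by auto
    finally show ?thesis .
  qed
  have c0: "n + 1 - (n + 1 - s) = s" using assms by auto
  have c: "X' (n + 1 - s) = X s" "n - (n + 1 - s) = s - 1" proof -
    have "n + 1 - s \<in> {1..n}" using assms by auto
    then show "X' (n + 1 - s) = X s" using assms(1)[of "n + 1 - s"] c0 by simp
    show "n - (n + 1 - s) = s - 1" using assms by auto
  qed
  show ?thesis unfolding cterm_def a b c ..
qed


definition csupp :: "nat \<Rightarrow> cvec \<Rightarrow> bool" where
  "csupp n c \<longleftrightarrow> (\<forall>i j. \<not> valid n i j \<longrightarrow> c i j = 0)"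

lemma RFs_tail:
  assumes r: "r \<in> RFs n s" and s: "1 \<le> s" "s \<le> n" and i: "s \<le> i" "i \<le> n"
  shows "r i = i"
proof -
  have rb: "\<And>k. k \<in> {1..n} \<Longrightarrow> k \<le> r k \<and> r k \<le> n" using r unfolding RFs_def by auto
  have inc: "\<And>k. s \<le> k \<Longrightarrow> k < n \<Longrightarrow> r k < r (Suc k)" using r unfolding RFs_def Rshape_def by auto
  have "d \<le> n - s \<longrightarrow> r (n - d) \<le> n - d" for d
  proof (induction d)
    case 0 then show ?case using rb[of n] s by auto
  next
    case (Suc d)
    show ?case
    proof
      assume d: "Suc d \<le> n - s"
      have "r (n - Suc d) < r (Suc (n - Suc d))" using inc[of "n - Suc d"] d s by auto
      moreover have "Suc (n - Suc d) = n - d" using d s by auto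
      ultimately show "r (n - Suc d) \<le> n - Suc d" using Suc d by auto
    qed
  qed
  from this[of "n - i"] have "r i \<le> i" using i s by auto
  moreover have "i \<le> r i" using rb[of i] i s by auto
  ultimately show ?thesis by simp
qed

lemma Mf_diag:
  assumes hc: "csupp n c" and i: "1 \<le> i"
  shows "Mf c i i = c i i - c (i - 1) (i - 1)"
proof -
  have hc': "\<forall>i j. \<not> valid n i j \<longrightarrow> c i j = 0" using hc unfolding csupp_def by simp
  have "{i - 1..<i} = {i - 1}" "{i..<Suc i} = {i}" using i by auto
  then show ?thesis using Mf_S[OF hc' i order.refl] by simp
qed

lemma F_tail_sum:
  assumes hc: "csupp n c" and r: "r \<in> RFs n s" and s: "1 \<le> s" "s \<le> n"
  shows "(\<Sum>i\<in>{s<..n}. Mf c i (r i)) = c n n - c s s"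
proof -
  have "(\<Sum>i\<in>{s<..n}. Mf c i (r i)) = (\<Sum>i\<in>{s<..n}. c i i - c (i - 1) (i - 1))"
    using RFs_tail[OF r s] Mf_diag[OF hc] s by (intro sum.cong) auto
  also have "\<dots> = (\<Sum>j\<in>{s..<n}. c (Suc j) (Suc j) - c j j)"
    by (rule sum.reindex_bij_witness[where i="\<lambda>j. Suc j" and j="\<lambda>i. i - 1"]) auto
  also have "\<dots> = c n n - c s s" using sum_Suc_diff'[of s n "\<lambda>j. c j j"] s by simp
  finally show ?thesis .
qed

lemma epsr_val: "i \<in> {1..n} \<Longrightarrow> epsr n r i j = (if r i = j then 1 else 0)"
proof -
  assume i: "i \<in> {1..n}"
  have "epsr n r i j = (\<Sum>k\<in>{1..n}. if k = i then (if r i = j then 1 else 0) else 0)"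
    unfolding epsr_def uvec_def by (intro sum.cong) auto
  then show ?thesis using i by (simp add: sum.delta)
qed

lemma epsr_facts:
  assumes r: "r \<in> RFs n s" and s: "1 \<le> s" "s \<le> n"
  shows "(\<Sum>k\<in>{1..n}. epsr n r 1 k) = 1" "epsr n r n n = 1"
proof -
  have r1: "r 1 \<in> {1..n}" using r s unfolding RFs_def by auto
  show "(\<Sum>k\<in>{1..n}. epsr n r 1 k) = 1" using s r1 by (simp add: epsr_val sum.delta)
  show "epsr n r n n = 1" using s RFs_tail[OF r s, of n] by (simp add: epsr_val)
qed

lemma apow_epsr:
  assumes r: "\<forall>k\<in>{1..n}. k \<le> r k \<and> r k \<le> n"
  shows "apow n a (epsr n r) = (\<Prod>i\<in>{1..n}. a i (r i))"
  unfolding apow_def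
proof (rule prod.cong[OF refl])
  fix i assume i: "i \<in> {1..n}"
  have "(\<Prod>j\<in>{i..n}. a i j powi epsr n r i j) = (\<Prod>j\<in>{i..n}. if r i = j then a i j else 1)"
    using i by (intro prod.cong) (auto simp: epsr_val)
  also have "\<dots> = a i (r i)" using r i by (simp add: prod.delta)
  finally show "(\<Prod>j\<in>{i..n}. a i j powi epsr n r i j) = a i (r i)" .
qed

lemma REs_head:
  assumes r: "r \<in> REs n s" and s: "1 \<le> s" "s \<le> n" and i: "1 \<le> i" "i \<le> s"
  shows "r i = 1"
  using i
proof (induction i)
  case 0 then show ?case by simp
next
  case (Suc i)
  show ?case
  proof (cases i)
    case 0
    have "\<forall>k\<in>{1..n}. 1 \<le> r k \<and> r k \<le> k" using r unfolding REs_def by auto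
    then have "1 \<le> r 1 \<and> r 1 \<le> 1" using s by auto
    then show ?thesis using 0 by simp
  next
    case (Suc i')
    have "1 \<le> i \<and> i < s" using Suc.prems \<open>i = Suc i'\<close> by auto
    then have "r (Suc i) \<le> r i" using r unfolding REs_def Rshape_def by auto
    moreover have "r i = 1" using Suc.IH Suc.prems \<open>i = Suc i'\<close> by auto
    moreover have "1 \<le> r (Suc i)" using r Suc.prems s unfolding REs_def by auto
    ultimately show ?thesis by simp
  qed
qed

lemma Nf_col1:
  assumes hc: "csupp n c" and i: "i \<le> n"
  shows "Nf n c i 1 = - c 1 (n + 1 - i)"
proof -
  have "c 0 (n - i + 1) = 0" using hc unfolding csupp_def valid_def by auto
  moreover have "n - i + 1 = n + 1 - i" using i by simp
  ultimately show ?thesis unfolding Nf_def by simp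
qed

lemma alpha_row1:
  assumes i: "i \<in> {1..n}"
  shows "alpha n i j 1 k = (if k = n + 2 - i then (if j \<le> 1 \<and> 2 \<le> i then 1 else 0) else 0)
                    - (if k = n + 1 - i then (if j \<le> 1 then 1 else 0) else 0)"
proof -
  have e1: "(k + i = n + 1 + 1) = (k = n + 2 - i)" using i by auto
  have e2: "(k + i = n + 1) = (k = n + 1 - i)" using i by auto
  have ac: "alpha n i j 1 k = (if k + i = n + 1 + 1 \<and> j \<le> 1 \<and> 1 + 1 \<le> i then 1 else 0)
                          - (if k + i = n + 1 \<and> j \<le> 1 \<and> 1 \<le> i then 1 else 0)"
    by (rule alpha_closed) (use i in auto)
  show ?thesis using i unfolding ac e1 e2 by auto
qed

lemma alpha_row1_sum:
  assumes i: "i \<in> {1..n}" and j: "1 \<le> j"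
  shows "(\<Sum>k\<in>{1..n}. alpha n i j 1 k) = (if j = 1 then (if 2 \<le> i then 1 else 0) - 1 else 0)"
proof -
  have "(\<Sum>k\<in>{1..n}. alpha n i j 1 k)
     = (\<Sum>k\<in>{1..n}. (if k = n + 2 - i then (if j \<le> 1 \<and> 2 \<le> i then 1 else 0) else 0))
       - (\<Sum>k\<in>{1..n}. (if k = n + 1 - i then (if j \<le> 1 then 1 else 0) else 0))"
    unfolding alpha_row1[OF i] sum_subtractf ..
  also have "\<dots> = (if j \<le> 1 \<and> 2 \<le> i then 1 else 0) - (if j \<le> 1 then 1 else 0)"
  proof -
    have "2 \<le> i \<Longrightarrow> n + 2 - i \<in> {1..n}" "n + 1 - i \<in> {1..n}" using i by auto
    then show ?thesis by (auto simp: sum.delta)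
  qed
  finally show ?thesis using j by auto
qed

lemma alphar_facts:
  assumes r: "r \<in> REs n s" and s: "1 \<le> s" "s \<le> n"
  shows "(\<Sum>k\<in>{1..n}. alphar n r 1 k) = -1" "alphar n r n n = -1"
proof -
  have rb: "\<And>i. i \<in> {1..n} \<Longrightarrow> 1 \<le> r i \<and> r i \<le> i" using r unfolding REs_def by auto
  have r1: "r 1 = 1" using REs_head[OF r s, of 1] s by simp
  have "(\<Sum>k\<in>{1..n}. alphar n r 1 k) = (\<Sum>i\<in>{1..n}. \<Sum>k\<in>{1..n}. alpha n i (r i) 1 k)"
    unfolding alphar_def by (rule sum.swap)
  also have "\<dots> = (\<Sum>i\<in>{1..n}. if i = 1 then -1 else 0)"
  proof (rule sum.cong[OF refl])
    fix i assume i: "i \<in> {1..n}"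
    show "(\<Sum>k\<in>{1..n}. alpha n i (r i) 1 k) = (if i = 1 then -1 else 0)"
      using alpha_row1_sum[OF i, of "r i"] rb[OF i] r1 i by auto
  qed
  also have "\<dots> = -1" using s by (simp add: sum.delta)
  finally show "(\<Sum>k\<in>{1..n}. alphar n r 1 k) = -1" .
  have "alphar n r n n = (\<Sum>i\<in>{1..n}. if i = n then -1 else 0)"
    unfolding alphar_def using rb by (intro sum.cong refl) (auto simp: alpha_closed)
  also have "\<dots> = -1" using s by (simp add: sum.delta)
  finally show "alphar n r n n = -1" .
qed

lemma apow_add:
  assumes a: "\<forall>i j. valid n i j \<longrightarrow> a i j \<noteq> 0"
  shows "apow n a (\<lambda>p q. x p q + y p q) = apow n a x * apow n a y"
  unfolding apow_def prod.distrib[symmetric]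
proof (intro prod.cong refl)
  fix i j assume "i \<in> {1..n}" "j \<in> {i..n}"
  then have "a i j \<noteq> 0" using a by (auto simp: valid_def)
  then show "a i j powi (x i j + y i j) = a i j powi x i j * a i j powi y i j" by (simp add: power_int_add)
qed

lemma apow_sum:
  assumes a: "\<forall>i j. valid n i j \<longrightarrow> a i j \<noteq> 0" and S: "finite S"
  shows "apow n a (\<lambda>p q. \<Sum>k\<in>S. f k p q) = (\<Prod>k\<in>S. apow n a (f k))"
  using S
proof (induction S rule: finite_induct)
  case empty then show ?case unfolding apow_def by simp
next
  case (insert x F)
  have "apow n a (\<lambda>p q. \<Sum>k\<in>insert x F. f k p q) = apow n a (\<lambda>p q. f x p q + (\<Sum>k\<in>F. f k p q))"
    using insert by simp
  also have "\<dots> = apow n a (f x) * apow n a (\<lambda>p q. \<Sum>k\<in>F. f k p q)" by (rule apow_add[OF a])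
  finally show ?case using insert by simp
qed

lemma ID_E:
  assumes hc: "csupp n c" and r: "r \<in> REs n s" and s: "1 \<le> s" "s \<le> n"
  shows "(\<Sum>k\<in>{1..n}. c 1 k) + (\<Sum>i\<in>{1..<s}. Nf n c i (r i)) = (\<Sum>k\<in>{1..n - s + 1}. c 1 k)"
proof -
  have "(\<Sum>i\<in>{1..<s}. Nf n c i (r i)) = (\<Sum>i\<in>{1..s - 1}. - c 1 (n + 1 - i))"
    using REs_head[OF r s] Nf_col1[OF hc] s by (intro sum.cong) auto
  also have "\<dots> = - (\<Sum>i\<in>{1..s - 1}. c 1 (n + 1 - i))" by (simp add: sum_negf)
  also have "(\<Sum>i\<in>{1..s - 1}. c 1 (n + 1 - i)) = (\<Sum>k\<in>{n + 1 - (s - 1)..n + 1 - 1}. c 1 k)"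
    by (rule sum_reflect) (use s in auto)
  finally have A: "(\<Sum>i\<in>{1..<s}. Nf n c i (r i)) = - (\<Sum>k\<in>{n + 2 - s..n}. c 1 k)"
    using s by (simp add: Suc_diff_le)
  have B: "(\<Sum>k\<in>{1..n}. c 1 k) = (\<Sum>k\<in>{1..n - s + 1}. c 1 k) + (\<Sum>k\<in>{n + 2 - s..n}. c 1 k)"
  proof -
    have nn: "n = (n - s + 1) + (s - 1)" using s by simp
    have "(\<Sum>k\<in>{1..n}. c 1 k) = (\<Sum>k\<in>{1..(n - s + 1) + (s - 1)}. c 1 k)" using nn by metis
    also have "\<dots> = (\<Sum>k\<in>{1..n - s + 1}. c 1 k) + (\<Sum>k\<in>{n - s + 1 + 1..(n - s + 1) + (s - 1)}. c 1 k)"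
      by (rule sum.ub_add_nat) simp
    also have "{n - s + 1 + 1..(n - s + 1) + (s - 1)} = {n + 2 - s..n}" using s by auto
    finally show ?thesis .
  qed
  show ?thesis unfolding A B by simp
qed


lemma exp_mL: "exp (- L) = qpow L (- 1)"
  by (simp add: qpow_def)

lemma sign_eq: "s \<le> n \<Longrightarrow> ((-1::complex) ^ (n - s)) = (-1) ^ (s + n)"
proof -
  assume "s \<le> n"
  then have e: "s + n = (n - s) + 2 * s" by simp
  have "(-1::complex) ^ (s + n) = (-1) ^ (n - s) * (-1) ^ (2 * s)" unfolding e power_add ..
  moreover have "(-1::complex) ^ (2 * s) = 1" by (simp add: power_mult)
  ultimately show ?thesis by simp
qed

lemma RFs_props:
  assumes r: "r \<in> RFs n s" and s: "1 \<le> s" "s \<le> n"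
  shows "r s = s" "\<forall>k\<in>{1..n}. k \<le> r k \<and> r k \<le> n" "\<forall>k. 1 \<le> k \<and> k < s \<longrightarrow> r (Suc k) \<le> r k"
  using RFs_tail[OF r s, of s] s r unfolding RFs_def Rshape_def by auto

lemma FU_point:
  fixes c :: cvec
  assumes hc: "csupp n c" and r: "r \<in> RFs n s" and s: "1 \<le> s" "s \<le> n"
    and c': "\<And>i j. c' i j = c i j + of_int (epsr n r i j)"
  shows "(\<Prod>i\<in>{1..n}. a i (r i)) * cterm L n (\<lambda>i. Mf c i (r i) - lam i) s *
      (exp (- L) * (A * qpow L (- lamLam n lam 1 + lamLam n lam n + of_nat n))
       * qpow L (- (\<Sum>k'\<in>{1..n}. c' 1 k') + lamLam n lam 1)
       * qpow L ((\<Sum>k'\<in>{n..n}. c' n k') - lamLam n lam n))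
    = A * ((-1) ^ (s + n) * apow n a (epsr n r)
          * qpow L ((CE n c r s - lamS n lam s - of_nat s) + of_nat n)
          * qint L (Mf c s s - lam s))"
proof -
  note rp = RFs_props[OF r s]
  have hc': "\<forall>i j. \<not> valid n i j \<longrightarrow> c i j = 0" using hc unfolding csupp_def by simp
  have W: "(\<Prod>i\<in>{1..n}. a i (r i)) = apow n a (epsr n r)" using apow_epsr[OF rp(2)] by simp
  have s1: "(\<Sum>k'\<in>{1..n}. c' 1 k') = (\<Sum>k'\<in>{1..n}. c 1 k') + 1"
    unfolding c' sum.distrib using epsr_facts(1)[OF r s] by (simp add: of_int_sum[symmetric])
  have s2: "(\<Sum>k'\<in>{n..n}. c' n k') = c n n + 1" unfolding c' using epsr_facts(2)[OF r s] by simp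
  have lo: "{1..<s} = {1..s - 1}" using s by auto
  have hi: "{s<..n} = {s + 1..n}" by auto
  have E1: "(\<Sum>i\<in>{1..<s}. (Mf c i (r i) - lam i) - 1) = (\<Sum>i\<in>{1..s - 1}. Mf c i (r i)) - (\<Sum>i\<in>{1..s - 1}. lam i) - (of_nat s - 1)"
    unfolding lo sum_subtractf using s by (simp add: of_nat_diff)
  have E2: "(\<Sum>i\<in>{s<..n}. Mf c i (r i) - lam i) = (c n n - c s s) - (\<Sum>i\<in>{s + 1..n}. lam i)"
  proof -
    have t: "(\<Sum>i\<in>{s<..n}. Mf c i (r i)) = c n n - c s s" by (rule F_tail_sum[OF hc r s])
    have "(\<Sum>i\<in>{s<..n}. Mf c i (r i) - lam i) = (c n n - c s s) - (\<Sum>i\<in>{s<..n}. lam i)"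
      by (simp only: sum_subtractf t)
    then show ?thesis by (simp only: hi)
  qed
  have CE: "CE n c r s = c s s - (\<Sum>k\<in>{1..n}. c 1 k) + (\<Sum>i\<in>{1..s - 1}. Mf c i (r i))"
    using CE_ident[OF hc' s rp] by simp
  have lS: "lamS n lam s = (\<Sum>k\<in>{1..s - 1}. lam k) - (\<Sum>k\<in>{s + 1..n}. lam k)" unfolding lamS_def ..
  have rs: "r s = s" using rp(1) .
  have expo: "- 1 + (- lamLam n lam 1 + lamLam n lam n + of_nat n) + (- (\<Sum>k'\<in>{1..n}. c' 1 k') + lamLam n lam 1)
      + ((\<Sum>k'\<in>{n..n}. c' n k') - lamLam n lam n)
      + ((\<Sum>i\<in>{1..<s}. (Mf c i (r i) - lam i) - 1) - (\<Sum>i\<in>{s<..n}. Mf c i (r i) - lam i))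
      = (CE n c r s - lamS n lam s - of_nat s) + of_nat n"
    unfolding s1 s2 E1 E2 CE lS by (simp add: algebra_simps)
  have "(\<Prod>i\<in>{1..n}. a i (r i)) * cterm L n (\<lambda>i. Mf c i (r i) - lam i) s *
      (exp (- L) * (A * qpow L (- lamLam n lam 1 + lamLam n lam n + of_nat n))
       * qpow L (- (\<Sum>k'\<in>{1..n}. c' 1 k') + lamLam n lam 1)
       * qpow L ((\<Sum>k'\<in>{n..n}. c' n k') - lamLam n lam n))
    = A * ((-1) ^ (n - s) * apow n a (epsr n r)
       * qpow L (- 1 + (- lamLam n lam 1 + lamLam n lam n + of_nat n) + (- (\<Sum>k'\<in>{1..n}. c' 1 k') + lamLam n lam 1)
      + ((\<Sum>k'\<in>{n..n}. c' n k') - lamLam n lam n)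
      + ((\<Sum>i\<in>{1..<s}. (Mf c i (r i) - lam i) - 1) - (\<Sum>i\<in>{s<..n}. Mf c i (r i) - lam i)))
       * qint L (Mf c s s - lam s))"
    unfolding cterm_def W exp_mL qpow_add rs by (simp add: mult_ac)
  also have "\<dots> = A * ((-1) ^ (s + n) * apow n a (epsr n r)
          * qpow L ((CE n c r s - lamS n lam s - of_nat s) + of_nat n)
          * qint L (Mf c s s - lam s))"
    unfolding expo sign_eq[OF s(2)] ..
  finally show ?thesis .
qed

lemma csupp_cadd: "supp n m \<Longrightarrow> \<forall>i j. \<not> valid n i j \<longrightarrow> b i j = 0 \<Longrightarrow> csupp n (cadd m b)"
  by (simp add: csupp_def supp_def cadd_def)

lemma qint_arg_F: "csupp n (cadd m b) \<Longrightarrow> 1 \<le> s \<Longrightarrow>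
   Mf (cadd m b) s s - lam s = - of_int (m (s-1) (s-1)) + of_int (m s s) - b (s-1) (s-1) + b s s - lam s"
  using Mf_diag[of n "cadd m b" s] by (simp add: cadd_def algebra_simps)

lemma KK_sandwich:
  fixes P :: "(nat \<Rightarrow> nat) set"
  assumes l0: "l > 0" and eL: "exp L ^ l = 1"
    and N: "N (vbas n l m) = (\<lambda>x. \<Sum>r\<in>P. C r * vbas n l (iadd m (D r)) x)"
    and sD: "\<And>r. r \<in> P \<Longrightarrow> supp n (iadd m (D r))"
  shows "(rhoKL n l L a b lam i \<circ> rhoKLinv n l L a b lam i' \<circ> N) (vbas n l m)
    = (\<lambda>x. \<Sum>r\<in>P. C r * (qpow L ((\<Sum>k'\<in>{i'..n}. cadd (iadd m (D r)) b i' k') - lamLam n lam i')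
         * qpow L (- (\<Sum>k'\<in>{i..n}. cadd (iadd m (D r)) b i k') + lamLam n lam i)) * vbas n l (iadd m (D r)) x)"
    and "(rhoKLinv n l L a b lam i \<circ> rhoKL n l L a b lam i' \<circ> N) (vbas n l m)
    = (\<lambda>x. \<Sum>r\<in>P. C r * (qpow L (- (\<Sum>k'\<in>{i'..n}. cadd (iadd m (D r)) b i' k') + lamLam n lam i')
         * qpow L ((\<Sum>k'\<in>{i..n}. cadd (iadd m (D r)) b i k') - lamLam n lam i)) * vbas n l (iadd m (D r)) x)"
proof -
  have l1: "linop (rhoKL n l L a b lam i)" "linop (rhoKLinv n l L a b lam i')"
    "linop (rhoKLinv n l L a b lam i)" "linop (rhoKL n l L a b lam i')"
    unfolding rhoKL_def rhoKLinv_def by (rule linop_lin)+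
  have "rhoKLinv n l L a b lam i' (N (vbas n l m)) = (\<lambda>x. \<Sum>r\<in>P. C r * rhoKLinv n l L a b lam i' (vbas n l (iadd m (D r))) x)"
    unfolding N by (rule linop_sum(2)[OF l1(2)])
  also have "\<dots> = (\<lambda>x. \<Sum>r\<in>P. (C r * qpow L ((\<Sum>k'\<in>{i'..n}. cadd (iadd m (D r)) b i' k') - lamLam n lam i')) * vbas n l (iadd m (D r)) x)"
    using act_rhoKLinv[OF l0 eL sD] by (auto intro!: sum.cong simp: mult_ac)
  finally have A1: "rhoKLinv n l L a b lam i' (N (vbas n l m)) = \<dots>" .
  have "rhoKL n l L a b lam i (rhoKLinv n l L a b lam i' (N (vbas n l m)))
     = (\<lambda>x. \<Sum>r\<in>P. (C r * qpow L ((\<Sum>k'\<in>{i'..n}. cadd (iadd m (D r)) b i' k') - lamLam n lam i')) * rhoKL n l L a b lam i (vbas n l (iadd m (D r))) x)"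
    unfolding A1 by (rule linop_sum(2)[OF l1(1)])
  also have "\<dots> = (\<lambda>x. \<Sum>r\<in>P. C r * (qpow L ((\<Sum>k'\<in>{i'..n}. cadd (iadd m (D r)) b i' k') - lamLam n lam i')
         * qpow L (- (\<Sum>k'\<in>{i..n}. cadd (iadd m (D r)) b i k') + lamLam n lam i)) * vbas n l (iadd m (D r)) x)"
    using act_rhoKL[OF l0 eL sD] by (auto intro!: sum.cong simp: mult_ac)
  finally show "(rhoKL n l L a b lam i \<circ> rhoKLinv n l L a b lam i' \<circ> N) (vbas n l m) = \<dots>" by simp
  have "rhoKL n l L a b lam i' (N (vbas n l m)) = (\<lambda>x. \<Sum>r\<in>P. C r * rhoKL n l L a b lam i' (vbas n l (iadd m (D r))) x)"
    unfolding N by (rule linop_sum(2)[OF l1(4)])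
  also have "\<dots> = (\<lambda>x. \<Sum>r\<in>P. (C r * qpow L (- (\<Sum>k'\<in>{i'..n}. cadd (iadd m (D r)) b i' k') + lamLam n lam i')) * vbas n l (iadd m (D r)) x)"
    using act_rhoKL[OF l0 eL sD] by (auto intro!: sum.cong simp: mult_ac)
  finally have A2: "rhoKL n l L a b lam i' (N (vbas n l m)) = \<dots>" .
  have "rhoKLinv n l L a b lam i (rhoKL n l L a b lam i' (N (vbas n l m)))
     = (\<lambda>x. \<Sum>r\<in>P. (C r * qpow L (- (\<Sum>k'\<in>{i'..n}. cadd (iadd m (D r)) b i' k') + lamLam n lam i')) * rhoKLinv n l L a b lam i (vbas n l (iadd m (D r))) x)"
    unfolding A2 by (rule linop_sum(2)[OF l1(3)])
  also have "\<dots> = (\<lambda>x. \<Sum>r\<in>P. C r * (qpow L (- (\<Sum>k'\<in>{i'..n}. cadd (iadd m (D r)) b i' k') + lamLam n lam i')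
         * qpow L ((\<Sum>k'\<in>{i..n}. cadd (iadd m (D r)) b i k') - lamLam n lam i)) * vbas n l (iadd m (D r)) x)"
    using act_rhoKLinv[OF l0 eL sD] by (auto intro!: sum.cong simp: mult_ac)
  finally show "(rhoKLinv n l L a b lam i \<circ> rhoKL n l L a b lam i' \<circ> N) (vbas n l m) = \<dots>" by simp
qed

lemma E0_plus:
  assumes n1: "1 \<le> n" and l0: "l > 0" and eL: "exp L ^ l = 1" and e2: "exp L ^ 2 \<noteq> 1"
    and bz: "\<forall>i j. \<not> valid n i j \<longrightarrow> b i j = 0" and ms: "supp n m"
  shows "evE0 True n l L a b lam (apar True n L lam A) (vbas n l m) =
      (\<lambda>k. A * (\<Sum>s\<in>{1..n}. \<Sum>r\<in>RFs n s.
          (-1) ^ (s + n) * apow n a (epsr n r)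
          * qpow L ((CE n (cadd m b) r s - lamS n lam s - of_nat s) + of_nat n)
          * qint L (- of_int (m (s-1) (s-1)) + of_int (m s s) - b (s-1) (s-1) + b s s - lam s)
          * vbas n l (iadd m (epsr n r)) k))"
proof -
  interpret FU: nestsys n l L "rhoF n l L a b lam" "\<lambda>k. {k..n}" "\<lambda>k j. uvec k j" "\<lambda>k j. a k j"
    "\<lambda>k m j. Mf (cadd m b) k j - lam k" "(<)"
    by (rule nestsys_FU[OF l0 eL e2])
  have nsFU: "nestsys n l L (rhoF n l L a b lam) (\<lambda>k. {k..n}) (\<lambda>k j. uvec k j) (\<lambda>k j. a k j)
    (\<lambda>k m j. Mf (cadd m b) k j - lam k) (<)" by (rule nestsys_FU[OF l0 eL e2])
  define c where "c = cadd m b"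
  have hc: "csupp n c" unfolding c_def by (rule csupp_cadd[OF ms bz])
  define bb where "bb = apar True n L lam A"
  have bb: "bb = A * qpow L (- lamLam n lam 1 + lamLam n lam n + of_nat n)" unfolding bb_def apar_def by simp
  have D: "FU.Dsum n r = epsr n r" for r unfolding FU.Dsum_def epsr_def ..
  have N: "nest_up (exp (- L)) (rhoF n l L a b lam) n (vbas n l m) = (\<lambda>x. \<Sum>r\<in>FU.PF n. FU.Ccl n m r * vbas n l (iadd m (epsr n r)) x)"
    using FU.nest_formula[of n m] n1 ms unfolding D by simp
  have sD: "\<And>r. r \<in> FU.PF n \<Longrightarrow> supp n (iadd m (epsr n r))"
    using FU.Dsum_supp[of _ n n] ms unfolding D by (auto intro: supp_iadd)
  define G where "G r = exp (- L) * bb * (qpow L ((\<Sum>k'\<in>{n..n}. cadd (iadd m (epsr n r)) b n k') - lamLam n lam n)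
         * qpow L (- (\<Sum>k'\<in>{1..n}. cadd (iadd m (epsr n r)) b 1 k') + lamLam n lam 1))" for r
  have KK: "(rhoKL n l L a b lam 1 \<circ> rhoKLinv n l L a b lam n \<circ> nest_up (exp (- L)) (rhoF n l L a b lam) n) (vbas n l m)
    = (\<lambda>x. \<Sum>r\<in>FU.PF n. FU.Ccl n m r * (qpow L ((\<Sum>k'\<in>{n..n}. cadd (iadd m (epsr n r)) b n k') - lamLam n lam n)
         * qpow L (- (\<Sum>k'\<in>{1..n}. cadd (iadd m (epsr n r)) b 1 k') + lamLam n lam 1)) * vbas n l (iadd m (epsr n r)) x)"
    by (rule KK_sandwich(1)[OF l0 eL], rule N, erule sD)
  have "evE0 True n l L a b lam bb (vbas n l m)
      = (\<lambda>x. exp (- L) * bb * (rhoKL n l L a b lam 1 \<circ> rhoKLinv n l L a b lam n \<circ> nest_up (exp (- L)) (rhoF n l L a b lam) n) (vbas n l m) x)"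
    unfolding evE0_def smul_def by simp
  also have "\<dots> = (\<lambda>x. \<Sum>r\<in>FU.PF n. FU.Ccl n m r * (G r * vbas n l (iadd m (epsr n r)) x))"
    unfolding KK G_def by (simp add: sum_distrib_left mult_ac)
  also have "\<dots> = (\<lambda>x. \<Sum>s\<in>{1..n}. \<Sum>r\<in>RFs n s. FU.Wt n r * cterm L n (\<lambda>i. Mf c i (r i) - lam i) s * (G r * vbas n l (iadd m (epsr n r)) x))"
  proof -
    have "\<And>x. (\<Sum>r\<in>FU.PF n. FU.Ccl n m r * (G r * vbas n l (iadd m (epsr n r)) x))
      = (\<Sum>s\<in>{1..n}. \<Sum>r\<in>{r \<in> FU.PF n. FU.shR n s r}. FU.Wt n r * cterm L n (\<lambda>i. Mf c i (r i) - lam i) s * (G r * vbas n l (iadd m (epsr n r)) x))"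
      unfolding c_def by (rule FU.nest_sum_split) simp
    then show ?thesis unfolding up_set[OF nsFU] RFs_RJ[symmetric] by simp
  qed
  also have "\<dots> = (\<lambda>k. A * (\<Sum>s\<in>{1..n}. \<Sum>r\<in>RFs n s.
          (-1) ^ (s + n) * apow n a (epsr n r)
          * qpow L ((CE n (cadd m b) r s - lamS n lam s - of_nat s) + of_nat n)
          * qint L (- of_int (m (s-1) (s-1)) + of_int (m s s) - b (s-1) (s-1) + b s s - lam s)
          * vbas n l (iadd m (epsr n r)) k))"
  proof -
    have pt: "FU.Wt n r * cterm L n (\<lambda>i. Mf c i (r i) - lam i) s * (G r * vbas n l (iadd m (epsr n r)) x)
      = A * ((-1) ^ (s + n) * apow n a (epsr n r)
          * qpow L ((CE n (cadd m b) r s - lamS n lam s - of_nat s) + of_nat n)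
          * qint L (- of_int (m (s-1) (s-1)) + of_int (m s s) - b (s-1) (s-1) + b s s - lam s)
          * vbas n l (iadd m (epsr n r)) x)" if s: "s \<in> {1..n}" and r: "r \<in> RFs n s" for s r x
    proof -
      have W: "FU.Wt n r = (\<Prod>i\<in>{1..n}. a i (r i))" unfolding FU.Wt_def ..
      have P: "(\<Prod>i\<in>{1..n}. a i (r i)) * cterm L n (\<lambda>i. Mf c i (r i) - lam i) s *
          (exp (- L) * (A * qpow L (- lamLam n lam 1 + lamLam n lam n + of_nat n))
          * qpow L (- (\<Sum>k'\<in>{1..n}. cadd (iadd m (epsr n r)) b 1 k') + lamLam n lam 1)
          * qpow L ((\<Sum>k'\<in>{n..n}. cadd (iadd m (epsr n r)) b n k') - lamLam n lam n))
        = A * ((-1) ^ (s + n) * apow n a (epsr n r)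
          * qpow L ((CE n c r s - lamS n lam s - of_nat s) + of_nat n)
          * qint L (Mf c s s - lam s))"
        by (rule FU_point[OF hc r]) (use s in \<open>auto simp: c_def cadd_iadd\<close>)
      have Q: "Mf c s s - lam s = - of_int (m (s-1) (s-1)) + of_int (m s s) - b (s-1) (s-1) + b s s - lam s"
        unfolding c_def by (rule qint_arg_F) (use hc s in \<open>auto simp: c_def\<close>)
      note P' = P[unfolded Q]
      have "FU.Wt n r * cterm L n (\<lambda>i. Mf c i (r i) - lam i) s * (G r * vbas n l (iadd m (epsr n r)) x)
        = ((\<Prod>i\<in>{1..n}. a i (r i)) * cterm L n (\<lambda>i. Mf c i (r i) - lam i) s *
          (exp (- L) * (A * qpow L (- lamLam n lam 1 + lamLam n lam n + of_nat n))
          * qpow L (- (\<Sum>k'\<in>{1..n}. cadd (iadd m (epsr n r)) b 1 k') + lamLam n lam 1)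
          * qpow L ((\<Sum>k'\<in>{n..n}. cadd (iadd m (epsr n r)) b n k') - lamLam n lam n))) * vbas n l (iadd m (epsr n r)) x"
        unfolding W G_def bb by (simp only: mult_ac)
      also have "\<dots> = A * ((-1) ^ (s + n) * apow n a (epsr n r)
          * qpow L ((CE n c r s - lamS n lam s - of_nat s) + of_nat n)
          * qint L (- of_int (m (s-1) (s-1)) + of_int (m s s) - b (s-1) (s-1) + b s s - lam s)) * vbas n l (iadd m (epsr n r)) x"
        unfolding P' ..
      finally show ?thesis unfolding c_def by (simp only: mult_ac)
    qed
    show ?thesis by (auto simp: pt sum_distrib_left intro!: sum.cong)
  qed
  finally show ?thesis unfolding bb_def .
qed

lemma FD_point:
  fixes c :: cvec
  assumes hc: "csupp n c" and r: "r \<in> RFs n s" and s: "1 \<le> s" "s \<le> n"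
    and c': "\<And>i j. c' i j = c i j + of_int (epsr n r i j)"
  shows "(\<Prod>i\<in>{1..n}. a i (r i)) * ((-1) ^ (s - 1) * qpow L ((\<Sum>i\<in>{s<..n}. (Mf c i (r i) - lam i) - 1) - (\<Sum>i\<in>{1..<s}. Mf c i (r i) - lam i)) * qint L (Mf c s (r s) - lam s)) *
      (exp (- L) * (A * (-1) ^ (n + 1) * qpow L (lamLam n lam 1 - lamLam n lam n + 2 * of_nat n + 1))
       * qpow L (- (\<Sum>k'\<in>{n..n}. c' n k') + lamLam n lam n)
       * qpow L ((\<Sum>k'\<in>{1..n}. c' 1 k') - lamLam n lam 1))
    = A * ((-1) ^ (s + n) * apow n a (epsr n r)
          * qpow L (- (CE n c r s - lamS n lam s - of_nat s) + of_nat n)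
          * qint L (Mf c s s - lam s))"
proof -
  note rp = RFs_props[OF r s]
  have hc': "\<forall>i j. \<not> valid n i j \<longrightarrow> c i j = 0" using hc unfolding csupp_def by simp
  have W: "(\<Prod>i\<in>{1..n}. a i (r i)) = apow n a (epsr n r)" using apow_epsr[OF rp(2)] by simp
  have s1: "(\<Sum>k'\<in>{1..n}. c' 1 k') = (\<Sum>k'\<in>{1..n}. c 1 k') + 1"
    unfolding c' sum.distrib using epsr_facts(1)[OF r s] by (simp add: of_int_sum[symmetric])
  have s2: "(\<Sum>k'\<in>{n..n}. c' n k') = c n n + 1" unfolding c' using epsr_facts(2)[OF r s] by simp
  have lo: "{1..<s} = {1..s - 1}" using s by auto
  have hi: "{s<..n} = {s + 1..n}" by auto
  have E1: "(\<Sum>i\<in>{1..<s}. Mf c i (r i) - lam i) = (\<Sum>i\<in>{1..s - 1}. Mf c i (r i)) - (\<Sum>i\<in>{1..s - 1}. lam i)"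
    unfolding lo sum_subtractf ..
  have E2: "(\<Sum>i\<in>{s<..n}. (Mf c i (r i) - lam i) - 1) = (c n n - c s s) - (\<Sum>i\<in>{s + 1..n}. lam i) - (of_nat n - of_nat s)"
  proof -
    have t: "(\<Sum>i\<in>{s<..n}. Mf c i (r i)) = c n n - c s s" by (rule F_tail_sum[OF hc r s])
    have cd: "(\<Sum>i\<in>{s<..n}. (1::complex)) = of_nat n - of_nat s" using s by (simp add: of_nat_diff)
    have "(\<Sum>i\<in>{s<..n}. (Mf c i (r i) - lam i) - 1) = (c n n - c s s) - (\<Sum>i\<in>{s<..n}. lam i) - (of_nat n - of_nat s)"
      by (simp only: sum_subtractf t cd)
    then show ?thesis by (simp only: hi)
  qed
  have CE: "CE n c r s = c s s - (\<Sum>k\<in>{1..n}. c 1 k) + (\<Sum>i\<in>{1..s - 1}. Mf c i (r i))"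
    using CE_ident[OF hc' s rp] by simp
  have lS: "lamS n lam s = (\<Sum>k\<in>{1..s - 1}. lam k) - (\<Sum>k\<in>{s + 1..n}. lam k)" unfolding lamS_def ..
  have rs: "r s = s" using rp(1) .
  have expo: "- 1 + (lamLam n lam 1 - lamLam n lam n + 2 * of_nat n + 1) + (- (\<Sum>k'\<in>{n..n}. c' n k') + lamLam n lam n)
      + ((\<Sum>k'\<in>{1..n}. c' 1 k') - lamLam n lam 1)
      + ((\<Sum>i\<in>{s<..n}. (Mf c i (r i) - lam i) - 1) - (\<Sum>i\<in>{1..<s}. Mf c i (r i) - lam i))
      = - (CE n c r s - lamS n lam s - of_nat s) + of_nat n"
    unfolding s1 s2 E1 E2 CE lS by (simp add: algebra_simps)
  have sg: "(-1::complex) ^ (s - 1) * (-1) ^ (n + 1) = (-1) ^ (s + n)"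
  proof -
    have "s - 1 + (n + 1) = s + n" using s by simp
    then show ?thesis by (metis power_add)
  qed
  have "(\<Prod>i\<in>{1..n}. a i (r i)) * ((-1) ^ (s - 1) * qpow L ((\<Sum>i\<in>{s<..n}. (Mf c i (r i) - lam i) - 1) - (\<Sum>i\<in>{1..<s}. Mf c i (r i) - lam i)) * qint L (Mf c s (r s) - lam s)) *
      (exp (- L) * (A * (-1) ^ (n + 1) * qpow L (lamLam n lam 1 - lamLam n lam n + 2 * of_nat n + 1))
       * qpow L (- (\<Sum>k'\<in>{n..n}. c' n k') + lamLam n lam n)
       * qpow L ((\<Sum>k'\<in>{1..n}. c' 1 k') - lamLam n lam 1))
    = A * (((-1) ^ (s - 1) * (-1) ^ (n + 1)) * apow n a (epsr n r)
       * qpow L (- 1 + (lamLam n lam 1 - lamLam n lam n + 2 * of_nat n + 1) + (- (\<Sum>k'\<in>{n..n}. c' n k') + lamLam n lam n)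
      + ((\<Sum>k'\<in>{1..n}. c' 1 k') - lamLam n lam 1)
      + ((\<Sum>i\<in>{s<..n}. (Mf c i (r i) - lam i) - 1) - (\<Sum>i\<in>{1..<s}. Mf c i (r i) - lam i)))
       * qint L (Mf c s s - lam s))"
    unfolding W exp_mL qpow_add rs by (simp only: mult_ac)
  also have "\<dots> = A * ((-1) ^ (s + n) * apow n a (epsr n r)
          * qpow L (- (CE n c r s - lamS n lam s - of_nat s) + of_nat n)
          * qint L (Mf c s s - lam s))"
    unfolding expo sg ..
  finally show ?thesis .
qed

lemma E0_minus:
  assumes n1: "1 \<le> n" and l0: "l > 0" and eL: "exp L ^ l = 1" and e2: "exp L ^ 2 \<noteq> 1"
    and bz: "\<forall>i j. \<not> valid n i j \<longrightarrow> b i j = 0" and ms: "supp n m"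
  shows "evE0 False n l L a b lam (apar False n L lam A) (vbas n l m) =
      (\<lambda>k. A * (\<Sum>s\<in>{1..n}. \<Sum>r\<in>RFs n s.
          (-1) ^ (s + n) * apow n a (epsr n r)
          * qpow L (- (CE n (cadd m b) r s - lamS n lam s - of_nat s) + of_nat n)
          * qint L (- of_int (m (s-1) (s-1)) + of_int (m s s) - b (s-1) (s-1) + b s s - lam s)
          * vbas n l (iadd m (epsr n r)) k))"
proof -
  interpret FD: nestsys n l L "\<lambda>k. rhoF n l L a b lam (n + 1 - k)" "\<lambda>k. {n + 1 - k..n}" "\<lambda>k j. uvec (n + 1 - k) j" "\<lambda>k j. a (n + 1 - k) j"
    "\<lambda>k m j. Mf (cadd m b) (n + 1 - k) j - lam (n + 1 - k)" "(\<le>)"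
    by (rule nestsys_FD[OF l0 eL e2])
  have nsFD: "nestsys n l L (\<lambda>k. rhoF n l L a b lam (n + 1 - k)) (\<lambda>k. (\<lambda>k. {k..n}) (n + 1 - k)) (\<lambda>k j. uvec (n + 1 - k) j) (\<lambda>k j. a (n + 1 - k) j)
    (\<lambda>k m j. Mf (cadd m b) (n + 1 - k) j - lam (n + 1 - k)) (\<le>)" using nestsys_FD[OF l0 eL e2] by simp
  define c where "c = cadd m b"
  have hc: "csupp n c" unfolding c_def by (rule csupp_cadd[OF ms bz])
  define bb where "bb = apar False n L lam A"
  have bb: "bb = A * (-1) ^ (n + 1) * qpow L (lamLam n lam 1 - lamLam n lam n + 2 * of_nat n + 1)" unfolding bb_def apar_def by simp
  have N: "nest_down (exp (- L)) (rhoF n l L a b lam) n (vbas n l m) = (\<lambda>x. \<Sum>r\<in>FD.PF n. FD.Ccl n m r * vbas n l (iadd m (FD.Dsum n r)) x)"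
    using FD.nest_formula[of n m] n1 ms unfolding nest_down_def by simp
  have sD: "\<And>r. r \<in> FD.PF n \<Longrightarrow> supp n (iadd m (FD.Dsum n r))"
    using FD.Dsum_supp[of _ n n] ms by (auto intro: supp_iadd)
  have KK: "(rhoKLinv n l L a b lam 1 \<circ> rhoKL n l L a b lam n \<circ> nest_down (exp (- L)) (rhoF n l L a b lam) n) (vbas n l m)
    = (\<lambda>x. \<Sum>r\<in>FD.PF n. FD.Ccl n m r * (qpow L (- (\<Sum>k'\<in>{n..n}. cadd (iadd m (FD.Dsum n r)) b n k') + lamLam n lam n)
         * qpow L ((\<Sum>k'\<in>{1..n}. cadd (iadd m (FD.Dsum n r)) b 1 k') - lamLam n lam 1)) * vbas n l (iadd m (FD.Dsum n r)) x)"
    by (rule KK_sandwich(2)[OF l0 eL], rule N, erule sD)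
  define G where "G r = exp (- L) * bb * (qpow L (- (\<Sum>k'\<in>{n..n}. cadd (iadd m (FD.Dsum n r)) b n k') + lamLam n lam n)
         * qpow L ((\<Sum>k'\<in>{1..n}. cadd (iadd m (FD.Dsum n r)) b 1 k') - lamLam n lam 1))" for r
  have D: "FD.Dsum n (rv n r) = epsr n r" for r
  proof -
    have "FD.Dsum n (rv n r) p q = epsr n r p q" for p q
    proof -
      have "FD.Dsum n (rv n r) p q = (\<Sum>i\<in>{1..n}. uvec (n + 1 - i) (r (n + 1 - i)) p q)"
        unfolding FD.Dsum_def rv_def by (intro sum.cong) auto
      also have "\<dots> = (\<Sum>i\<in>{1..n}. uvec i (r i) p q)"
        by (rule sum_reflect1[symmetric, where f="\<lambda>i. uvec i (r i) p q"])
      finally show ?thesis unfolding epsr_def .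
    qed
    then show ?thesis by auto
  qed
  have "evE0 False n l L a b lam bb (vbas n l m)
      = (\<lambda>x. exp (- L) * bb * (rhoKLinv n l L a b lam 1 \<circ> rhoKL n l L a b lam n \<circ> nest_down (exp (- L)) (rhoF n l L a b lam) n) (vbas n l m) x)"
    unfolding evE0_def smul_def by simp
  also have "\<dots> = (\<lambda>x. \<Sum>r\<in>FD.PF n. FD.Ccl n m r * (G r * vbas n l (iadd m (FD.Dsum n r)) x))"
    unfolding KK G_def by (simp add: sum_distrib_left mult_ac)
  also have "\<dots> = (\<lambda>x. \<Sum>s\<in>{1..n}. \<Sum>r\<in>RFs n s. FD.Wt n (rv n r) * cterm L n (\<lambda>i. Mf c (n + 1 - i) (rv n r i) - lam (n + 1 - i)) (n + 1 - s) * (G (rv n r) * vbas n l (iadd m (epsr n r)) x))"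
  proof -
    have "\<And>x. (\<Sum>r\<in>FD.PF n. FD.Ccl n m r * (G r * vbas n l (iadd m (FD.Dsum n r)) x))
      = (\<Sum>s\<in>{1..n}. \<Sum>r\<in>{r \<in> FD.PF n. FD.shR n s r}. FD.Wt n r * cterm L n (\<lambda>i. Mf c (n + 1 - i) (r i) - lam (n + 1 - i)) s * (G r * vbas n l (iadd m (FD.Dsum n r)) x))"
      unfolding c_def by (rule FD.nest_sum_split) simp
    also have "\<And>x. \<dots>x = (\<Sum>s\<in>{1..n}. \<Sum>r\<in>{r \<in> FD.PF n. FD.shR n (n + 1 - s) r}. FD.Wt n r * cterm L n (\<lambda>i. Mf c (n + 1 - i) (r i) - lam (n + 1 - i)) (n + 1 - s) * (G r * vbas n l (iadd m (FD.Dsum n r)) x))"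
      by (rule sum_reflect1)
    also have "\<And>x. \<dots>x = (\<Sum>s\<in>{1..n}. \<Sum>r\<in>RFs n s. FD.Wt n (rv n r) * cterm L n (\<lambda>i. Mf c (n + 1 - i) (rv n r i) - lam (n + 1 - i)) (n + 1 - s) * (G (rv n r) * vbas n l (iadd m (epsr n r)) x))"
    proof (rule sum.cong[OF refl])
      fix x s assume s: "s \<in> {1..n}"
      have "{r \<in> FD.PF n. FD.shR n (n + 1 - s) r} = rv n ` RFs n s"
        using down_set[OF nsFD, of s] s unfolding RFs_RJ by simp
      show "(\<Sum>r\<in>{r \<in> FD.PF n. FD.shR n (n + 1 - s) r}. FD.Wt n r * cterm L n (\<lambda>i. Mf c (n + 1 - i) (r i) - lam (n + 1 - i)) (n + 1 - s) * (G r * vbas n l (iadd m (FD.Dsum n r)) x))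
         = (\<Sum>r\<in>RFs n s. FD.Wt n (rv n r) * cterm L n (\<lambda>i. Mf c (n + 1 - i) (rv n r i) - lam (n + 1 - i)) (n + 1 - s) * (G (rv n r) * vbas n l (iadd m (epsr n r)) x))"
      proof -
        note ri = sum.reindex[OF inj_rv[of n "\<lambda>k. {k..n}" s, folded RFs_RJ], unfolded comp_def]
        show ?thesis unfolding \<open>{r \<in> FD.PF n. FD.shR n (n + 1 - s) r} = rv n ` RFs n s\<close> ri D ..
      qed
    qed
    finally show ?thesis by (intro ext) simp
  qed
  also have "\<dots> = (\<lambda>k. A * (\<Sum>s\<in>{1..n}. \<Sum>r\<in>RFs n s.
          (-1) ^ (s + n) * apow n a (epsr n r)
          * qpow L (- (CE n (cadd m b) r s - lamS n lam s - of_nat s) + of_nat n)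
          * qint L (- of_int (m (s-1) (s-1)) + of_int (m s s) - b (s-1) (s-1) + b s s - lam s)
          * vbas n l (iadd m (epsr n r)) k))"
  proof -
    have pt: "FD.Wt n (rv n r) * cterm L n (\<lambda>i. Mf c (n + 1 - i) (rv n r i) - lam (n + 1 - i)) (n + 1 - s) * (G (rv n r) * vbas n l (iadd m (epsr n r)) x)
      = A * ((-1) ^ (s + n) * apow n a (epsr n r)
          * qpow L (- (CE n (cadd m b) r s - lamS n lam s - of_nat s) + of_nat n)
          * qint L (- of_int (m (s-1) (s-1)) + of_int (m s s) - b (s-1) (s-1) + b s s - lam s)
          * vbas n l (iadd m (epsr n r)) x)" if s: "s \<in> {1..n}" and r: "r \<in> RFs n s" for s r x
    proof -
      have W: "FD.Wt n (rv n r) = (\<Prod>i\<in>{1..n}. a i (r i))"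
      proof -
        have "FD.Wt n (rv n r) = (\<Prod>i\<in>{1..n}. a (n + 1 - i) (r (n + 1 - i)))"
          unfolding FD.Wt_def rv_def by (intro prod.cong) auto
        also have "\<dots> = (\<Prod>i\<in>{1..n}. a i (r i))" by (rule prod_reflect1[symmetric, where f="\<lambda>i. a i (r i)"])
        finally show ?thesis .
      qed
      have CT: "cterm L n (\<lambda>i. Mf c (n + 1 - i) (rv n r i) - lam (n + 1 - i)) (n + 1 - s)
        = (-1) ^ (s - 1) * qpow L ((\<Sum>i\<in>{s<..n}. (Mf c i (r i) - lam i) - 1) - (\<Sum>i\<in>{1..<s}. Mf c i (r i) - lam i)) * qint L (Mf c s (r s) - lam s)"
        by (rule cterm_rev) (use s in \<open>auto simp: rv_def\<close>)
      have P: "(\<Prod>i\<in>{1..n}. a i (r i)) * ((-1) ^ (s - 1) * qpow L ((\<Sum>i\<in>{s<..n}. (Mf c i (r i) - lam i) - 1) - (\<Sum>i\<in>{1..<s}. Mf c i (r i) - lam i)) * qint L (Mf c s (r s) - lam s)) *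
      (exp (- L) * (A * (-1) ^ (n + 1) * qpow L (lamLam n lam 1 - lamLam n lam n + 2 * of_nat n + 1))
       * qpow L (- (\<Sum>k'\<in>{n..n}. cadd (iadd m (epsr n r)) b n k') + lamLam n lam n)
       * qpow L ((\<Sum>k'\<in>{1..n}. cadd (iadd m (epsr n r)) b 1 k') - lamLam n lam 1))
    = A * ((-1) ^ (s + n) * apow n a (epsr n r)
          * qpow L (- (CE n c r s - lamS n lam s - of_nat s) + of_nat n)
          * qint L (Mf c s s - lam s))"
        by (rule FD_point[OF hc r]) (use s in \<open>auto simp: c_def cadd_iadd\<close>)
      have Q: "Mf c s s - lam s = - of_int (m (s-1) (s-1)) + of_int (m s s) - b (s-1) (s-1) + b s s - lam s"
        unfolding c_def by (rule qint_arg_F) (use hc s in \<open>auto simp: c_def\<close>)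
      note P' = P[unfolded Q]
      have "FD.Wt n (rv n r) * cterm L n (\<lambda>i. Mf c (n + 1 - i) (rv n r i) - lam (n + 1 - i)) (n + 1 - s) * (G (rv n r) * vbas n l (iadd m (epsr n r)) x)
        = ((\<Prod>i\<in>{1..n}. a i (r i)) * ((-1) ^ (s - 1) * qpow L ((\<Sum>i\<in>{s<..n}. (Mf c i (r i) - lam i) - 1) - (\<Sum>i\<in>{1..<s}. Mf c i (r i) - lam i)) * qint L (Mf c s (r s) - lam s)) *
      (exp (- L) * (A * (-1) ^ (n + 1) * qpow L (lamLam n lam 1 - lamLam n lam n + 2 * of_nat n + 1))
       * qpow L (- (\<Sum>k'\<in>{n..n}. cadd (iadd m (epsr n r)) b n k') + lamLam n lam n)
       * qpow L ((\<Sum>k'\<in>{1..n}. cadd (iadd m (epsr n r)) b 1 k') - lamLam n lam 1))) * vbas n l (iadd m (epsr n r)) x"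
        unfolding W CT G_def bb D by (simp only: mult_ac)
      also have "\<dots> = A * ((-1) ^ (s + n) * apow n a (epsr n r)
          * qpow L (- (CE n c r s - lamS n lam s - of_nat s) + of_nat n)
          * qint L (- of_int (m (s-1) (s-1)) + of_int (m s s) - b (s-1) (s-1) + b s s - lam s)) * vbas n l (iadd m (epsr n r)) x"
        unfolding P' ..
      finally show ?thesis unfolding c_def by (simp only: mult_ac)
    qed
    show ?thesis
    proof (intro ext)
      fix x
      have "(\<Sum>s\<in>{1..n}. \<Sum>r\<in>RFs n s. FD.Wt n (rv n r) * cterm L n (\<lambda>i. Mf c (n + 1 - i) (rv n r i) - lam (n + 1 - i)) (n + 1 - s) * (G (rv n r) * vbas n l (iadd m (epsr n r)) x))
        = (\<Sum>s\<in>{1..n}. \<Sum>r\<in>RFs n s. A * ((-1) ^ (s + n) * apow n a (epsr n r)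
          * qpow L (- (CE n (cadd m b) r s - lamS n lam s - of_nat s) + of_nat n)
          * qint L (- of_int (m (s-1) (s-1)) + of_int (m s s) - b (s-1) (s-1) + b s s - lam s)
          * vbas n l (iadd m (epsr n r)) x))"
        by (intro sum.cong refl) (rule pt)
      also have "\<dots> = A * (\<Sum>s\<in>{1..n}. \<Sum>r\<in>RFs n s. (-1) ^ (s + n) * apow n a (epsr n r)
          * qpow L (- (CE n (cadd m b) r s - lamS n lam s - of_nat s) + of_nat n)
          * qint L (- of_int (m (s-1) (s-1)) + of_int (m s s) - b (s-1) (s-1) + b s s - lam s)
          * vbas n l (iadd m (epsr n r)) x)"
        by (simp only: sum_distrib_left)
      finally show "(\<Sum>s\<in>{1..n}. \<Sum>r\<in>RFs n s. FD.Wt n (rv n r) * cterm L n (\<lambda>i. Mf c (n + 1 - i) (rv n r i) - lam (n + 1 - i)) (n + 1 - s) * (G (rv n r) * vbas n l (iadd m (epsr n r)) x)) = \<dots>" .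
    qed
  qed
  finally show ?thesis unfolding bb_def .
qed


lemma expn: "exp L ^ n = qpow L (of_nat n)"
  by (simp add: qpow_def exp_of_nat_mult[symmetric] mult.commute)

lemma inv_qpow: "inverse (qpow L x) = qpow L (- x)"
  by (simp add: qpow_def exp_minus)

lemma qpow5: "qpow L x1 * qpow L x2 * qpow L x3 * qpow L x4 * qpow L x5 = qpow L (x1 + x2 + x3 + x4 + x5)"
  by (simp only: qpow_add)

lemma inv_m1: "inverse ((-1::complex) ^ k) = (-1) ^ k"
  by (induct k) (simp_all add: inverse_minus_eq)

lemma REs_props:
  assumes r: "r \<in> REs n s" and s: "1 \<le> s" "s \<le> n"
  shows "r s = 1" "\<forall>k\<in>{1..n}. 1 \<le> r k \<and> r k \<le> k"
  using REs_head[OF r s, of s] s r unfolding REs_def by auto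

lemma apow_alphar:
  assumes a: "\<forall>i j. valid n i j \<longrightarrow> a i j \<noteq> 0"
  shows "(\<Prod>i\<in>{1..n}. apow n a (alpha n i (r i))) = apow n a (alphar n r)"
  unfolding alphar_def by (rule apow_sum[OF a, symmetric]) simp

lemma E_common:
  fixes c :: cvec
  assumes hc: "csupp n c" and r: "r \<in> REs n s" and s: "1 \<le> s" "s \<le> n"
    and c': "\<And>i j. c' i j = c i j + of_int (alphar n r i j)"
  shows "(\<Sum>k'\<in>{1..n}. c' 1 k') = (\<Sum>k'\<in>{1..n}. c 1 k') - 1" "(\<Sum>k'\<in>{n..n}. c' n k') = c n n - 1"
    "Nf n c s (r s) = - of_int 1 * c 1 (n - s + 1)"
    "(\<Sum>i\<in>{s<..n}. Nf n c i (r i)) = (\<Sum>k\<in>{s + 1..n}. c (r k - 1) (n - k + r k) - c (r k) (n - k + r k))"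
proof -
  show "(\<Sum>k'\<in>{1..n}. c' 1 k') = (\<Sum>k'\<in>{1..n}. c 1 k') - 1"
    unfolding c' sum.distrib using alphar_facts(1)[OF r s] by (simp add: of_int_sum[symmetric])
  show "(\<Sum>k'\<in>{n..n}. c' n k') = c n n - 1" unfolding c' using alphar_facts(2)[OF r s] by simp
  have "n + 1 - s = n - s + 1" using s by simp
  then show "Nf n c s (r s) = - of_int 1 * c 1 (n - s + 1)" using Nf_col1[OF hc s(2)] REs_props(1)[OF r s] by simp
  have hi: "{s<..n} = {s + 1..n}" by auto
  show "(\<Sum>i\<in>{s<..n}. Nf n c i (r i)) = (\<Sum>k\<in>{s + 1..n}. c (r k - 1) (n - k + r k) - c (r k) (n - k + r k))"
    unfolding hi Nf_def ..
qed

lemma EU_point: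
  fixes c :: cvec
  assumes hc: "csupp n c" and r: "r \<in> REs n s" and s: "1 \<le> s" "s \<le> n"
    and c': "\<And>i j. c' i j = c i j + of_int (alphar n r i j)"
    and a: "\<forall>i j. valid n i j \<longrightarrow> a i j \<noteq> 0"
  shows "(\<Prod>i\<in>{1..n}. apow n a (alpha n i (r i))) * cterm L n (\<lambda>i. Nf n c i (r i)) s *
      ((-1) ^ (n - 1) * exp L ^ n * inverse (A * qpow L (- lamLam n lam 1 + lamLam n lam n + of_nat n))
       * qpow L (- (\<Sum>k'\<in>{n..n}. c' n k') + lamLam n lam n)
       * qpow L ((\<Sum>k'\<in>{1..n}. c' 1 k') - lamLam n lam 1))
    = inverse A * ((-1) ^ (s - 1) * apow n a (alphar n r)
          * qpow L ((DF n c r s - of_nat s + of_nat n + 1) - of_nat n)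
          * qint L (- of_int 1 * c 1 (n - s + 1)))"
proof -
  note ec = E_common[OF hc r s c']
  have lo: "(\<Sum>i\<in>{1..<s}. Nf n c i (r i) - 1) = (\<Sum>i\<in>{1..<s}. Nf n c i (r i)) - (of_nat s - 1)"
    using s by (simp add: sum_subtractf of_nat_diff)
  have ID: "(\<Sum>i\<in>{1..<s}. Nf n c i (r i)) = (\<Sum>k\<in>{1..n - s + 1}. c 1 k) - (\<Sum>k\<in>{1..n}. c 1 k)"
    using ID_E[OF hc r s] by (simp add: algebra_simps)
  have expo: "of_nat n + - (- lamLam n lam 1 + lamLam n lam n + of_nat n) + (- (\<Sum>k'\<in>{n..n}. c' n k') + lamLam n lam n)
      + ((\<Sum>k'\<in>{1..n}. c' 1 k') - lamLam n lam 1)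
      + ((\<Sum>i\<in>{1..<s}. Nf n c i (r i) - 1) - (\<Sum>i\<in>{s<..n}. Nf n c i (r i)))
      = (DF n c r s - of_nat s + of_nat n + 1) - of_nat n"
    unfolding ec(1,2,4) lo ID DF_def by (simp add: algebra_simps)
  have sg: "(-1::complex) ^ (n - 1) * (-1) ^ (n - s) = (-1) ^ (s - 1)"
  proof -
    have e: "n - 1 + (n - s) = (s - 1) + 2 * (n - s)" using s by simp
    have "(-1::complex) ^ (n - 1) * (-1) ^ (n - s) = (-1) ^ (s - 1) * (-1) ^ (2 * (n - s))"
      by (metis e power_add)
    then show ?thesis by (simp add: power_mult)
  qed
  have "(\<Prod>i\<in>{1..n}. apow n a (alpha n i (r i))) * cterm L n (\<lambda>i. Nf n c i (r i)) s *
      ((-1) ^ (n - 1) * exp L ^ n * inverse (A * qpow L (- lamLam n lam 1 + lamLam n lam n + of_nat n))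
       * qpow L (- (\<Sum>k'\<in>{n..n}. c' n k') + lamLam n lam n)
       * qpow L ((\<Sum>k'\<in>{1..n}. c' 1 k') - lamLam n lam 1))
    = inverse A * (((-1) ^ (n - 1) * (-1) ^ (n - s)) * apow n a (alphar n r)
       * (qpow L (of_nat n) * qpow L (- (- lamLam n lam 1 + lamLam n lam n + of_nat n)) * qpow L (- (\<Sum>k'\<in>{n..n}. c' n k') + lamLam n lam n)
      * qpow L ((\<Sum>k'\<in>{1..n}. c' 1 k') - lamLam n lam 1)
      * qpow L ((\<Sum>i\<in>{1..<s}. Nf n c i (r i) - 1) - (\<Sum>i\<in>{s<..n}. Nf n c i (r i))))
       * qint L (Nf n c s (r s)))"
    unfolding cterm_def apow_alphar[OF a] expn inverse_mult_distrib inv_qpow by (simp only: mult_ac)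
  also have "\<dots> = inverse A * (((-1) ^ (n - 1) * (-1) ^ (n - s)) * apow n a (alphar n r)
       * qpow L (of_nat n + - (- lamLam n lam 1 + lamLam n lam n + of_nat n) + (- (\<Sum>k'\<in>{n..n}. c' n k') + lamLam n lam n)
      + ((\<Sum>k'\<in>{1..n}. c' 1 k') - lamLam n lam 1)
      + ((\<Sum>i\<in>{1..<s}. Nf n c i (r i) - 1) - (\<Sum>i\<in>{s<..n}. Nf n c i (r i))))
       * qint L (Nf n c s (r s)))"
    unfolding qpow5 ..
  also have "\<dots> = inverse A * ((-1) ^ (s - 1) * apow n a (alphar n r)
          * qpow L ((DF n c r s - of_nat s + of_nat n + 1) - of_nat n)
          * qint L (- of_int 1 * c 1 (n - s + 1)))"
    unfolding expo sg ec(3) ..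
  finally show ?thesis .
qed

lemma ED_point:
  fixes c :: cvec
  assumes hc: "csupp n c" and r: "r \<in> REs n s" and s: "1 \<le> s" "s \<le> n"
    and c': "\<And>i j. c' i j = c i j + of_int (alphar n r i j)"
    and a: "\<forall>i j. valid n i j \<longrightarrow> a i j \<noteq> 0"
  shows "(\<Prod>i\<in>{1..n}. apow n a (alpha n i (r i))) * ((-1) ^ (s - 1) * qpow L ((\<Sum>i\<in>{s<..n}. Nf n c i (r i) - 1) - (\<Sum>i\<in>{1..<s}. Nf n c i (r i))) * qint L (Nf n c s (r s))) *
      ((-1) ^ (n - 1) * exp L ^ n * inverse (A * (-1) ^ (n + 1) * qpow L (lamLam n lam 1 - lamLam n lam n + 2 * of_nat n + 1))
       * qpow L ((\<Sum>k'\<in>{n..n}. c' n k') - lamLam n lam n)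
       * qpow L (- (\<Sum>k'\<in>{1..n}. c' 1 k') + lamLam n lam 1))
    = inverse A * ((-1) ^ (s - 1) * apow n a (alphar n r)
          * qpow L (- (DF n c r s - of_nat s + of_nat n + 1) - of_nat n)
          * qint L (- of_int 1 * c 1 (n - s + 1)))"
proof -
  note ec = E_common[OF hc r s c']
  have hi: "(\<Sum>i\<in>{s<..n}. Nf n c i (r i) - 1) = (\<Sum>i\<in>{s<..n}. Nf n c i (r i)) - (of_nat n - of_nat s)"
    using s by (simp add: sum_subtractf of_nat_diff)
  have ID: "(\<Sum>i\<in>{1..<s}. Nf n c i (r i)) = (\<Sum>k\<in>{1..n - s + 1}. c 1 k) - (\<Sum>k\<in>{1..n}. c 1 k)"
    using ID_E[OF hc r s] by (simp add: algebra_simps)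
  have expo: "of_nat n + - (lamLam n lam 1 - lamLam n lam n + 2 * of_nat n + 1) + ((\<Sum>k'\<in>{n..n}. c' n k') - lamLam n lam n)
      + (- (\<Sum>k'\<in>{1..n}. c' 1 k') + lamLam n lam 1)
      + ((\<Sum>i\<in>{s<..n}. Nf n c i (r i) - 1) - (\<Sum>i\<in>{1..<s}. Nf n c i (r i)))
      = - (DF n c r s - of_nat s + of_nat n + 1) - of_nat n"
    unfolding ec(1,2) hi ec(4) ID DF_def by (simp add: algebra_simps)
  have sg: "(-1::complex) ^ (n - 1) * inverse ((-1) ^ (n + 1)) * (-1) ^ (s - 1) = (-1) ^ (s - 1)"
  proof -
    have e: "n - 1 + (n + 1) = 2 * n" using s by simp
    have "(-1::complex) ^ (n - 1) * inverse ((-1) ^ (n + 1)) = (-1) ^ (n - 1) * (-1) ^ (n + 1)"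
      by (simp only: inv_m1)
    also have "\<dots> = 1" by (metis e power_add power_mult neg_one_even_power even_mult_iff even_numeral)
    finally show ?thesis by simp
  qed
  have "(\<Prod>i\<in>{1..n}. apow n a (alpha n i (r i))) * ((-1) ^ (s - 1) * qpow L ((\<Sum>i\<in>{s<..n}. Nf n c i (r i) - 1) - (\<Sum>i\<in>{1..<s}. Nf n c i (r i))) * qint L (Nf n c s (r s))) *
      ((-1) ^ (n - 1) * exp L ^ n * inverse (A * (-1) ^ (n + 1) * qpow L (lamLam n lam 1 - lamLam n lam n + 2 * of_nat n + 1))
       * qpow L ((\<Sum>k'\<in>{n..n}. c' n k') - lamLam n lam n)
       * qpow L (- (\<Sum>k'\<in>{1..n}. c' 1 k') + lamLam n lam 1))
    = inverse A * (((-1) ^ (n - 1) * inverse ((-1) ^ (n + 1)) * (-1) ^ (s - 1)) * apow n a (alphar n r)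
       * (qpow L (of_nat n) * qpow L (- (lamLam n lam 1 - lamLam n lam n + 2 * of_nat n + 1)) * qpow L ((\<Sum>k'\<in>{n..n}. c' n k') - lamLam n lam n)
      * qpow L (- (\<Sum>k'\<in>{1..n}. c' 1 k') + lamLam n lam 1)
      * qpow L ((\<Sum>i\<in>{s<..n}. Nf n c i (r i) - 1) - (\<Sum>i\<in>{1..<s}. Nf n c i (r i))))
       * qint L (Nf n c s (r s)))"
    unfolding apow_alphar[OF a] expn inverse_mult_distrib inv_qpow by (simp only: mult_ac)
  also have "\<dots> = inverse A * (((-1) ^ (n - 1) * inverse ((-1) ^ (n + 1)) * (-1) ^ (s - 1)) * apow n a (alphar n r)
       * qpow L (of_nat n + - (lamLam n lam 1 - lamLam n lam n + 2 * of_nat n + 1) + ((\<Sum>k'\<in>{n..n}. c' n k') - lamLam n lam n)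
      + (- (\<Sum>k'\<in>{1..n}. c' 1 k') + lamLam n lam 1)
      + ((\<Sum>i\<in>{s<..n}. Nf n c i (r i) - 1) - (\<Sum>i\<in>{1..<s}. Nf n c i (r i))))
       * qint L (Nf n c s (r s)))"
    unfolding qpow5 ..
  also have "\<dots> = inverse A * ((-1) ^ (s - 1) * apow n a (alphar n r)
          * qpow L (- (DF n c r s - of_nat s + of_nat n + 1) - of_nat n)
          * qint L (- of_int 1 * c 1 (n - s + 1)))"
    unfolding expo sg ec(3) ..
  finally show ?thesis .
qed

lemma qint_arg_E: "- of_int 1 * cadd m b 1 (n - s + 1) = - of_int (m 1 (n - s + 1)) - b 1 (n - s + 1)"
  by (simp add: cadd_def)

lemma F0_plus:
  assumes n1: "1 \<le> n" and l0: "l > 0" and eL: "exp L ^ l = 1" and e2: "exp L ^ 2 \<noteq> 1"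
    and bz: "\<forall>i j. \<not> valid n i j \<longrightarrow> b i j = 0" and ms: "supp n m"
    and a: "\<forall>i j. valid n i j \<longrightarrow> a i j \<noteq> 0"
  shows "evF0 True n l L a b lam (apar True n L lam A) (vbas n l m) =
      (\<lambda>k. inverse A * (\<Sum>s\<in>{1..n}. \<Sum>r\<in>REs n s.
          (-1) ^ (s - 1) * apow n a (alphar n r)
          * qpow L ((DF n (cadd m b) r s - of_nat s + of_nat n + 1) - of_nat n)
          * qint L (- of_int (m 1 (n-s+1)) - b 1 (n-s+1))
          * vbas n l (iadd m (alphar n r)) k))"
proof -
  interpret EU: nestsys n l L "rhoE n l L a b lam" "\<lambda>k. {1..k}" "\<lambda>k j. alpha n k j" "\<lambda>k j. apow n a (alpha n k j)"
    "\<lambda>k m j. Nf n (cadd m b) k j" "(<)"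
    by (rule nestsys_EU[OF l0 eL e2])
  have nsEU: "nestsys n l L (rhoE n l L a b lam) (\<lambda>k. {1..k}) (\<lambda>k j. alpha n k j) (\<lambda>k j. apow n a (alpha n k j))
    (\<lambda>k m j. Nf n (cadd m b) k j) (<)" by (rule nestsys_EU[OF l0 eL e2])
  define c where "c = cadd m b"
  have hc: "csupp n c" unfolding c_def by (rule csupp_cadd[OF ms bz])
  define bb where "bb = apar True n L lam A"
  have bb: "bb = A * qpow L (- lamLam n lam 1 + lamLam n lam n + of_nat n)" unfolding bb_def apar_def by simp
  have D: "EU.Dsum n r = alphar n r" for r unfolding EU.Dsum_def alphar_def ..
  have N: "nest_up (exp (- L)) (rhoE n l L a b lam) n (vbas n l m) = (\<lambda>x. \<Sum>r\<in>EU.PF n. EU.Ccl n m r * vbas n l (iadd m (alphar n r)) x)"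
    using EU.nest_formula[of n m] n1 ms unfolding D by simp
  have sD: "\<And>r. r \<in> EU.PF n \<Longrightarrow> supp n (iadd m (alphar n r))"
    using EU.Dsum_supp[of _ n n] ms unfolding D by (auto intro: supp_iadd)
  have KK: "(rhoKLinv n l L a b lam 1 \<circ> rhoKL n l L a b lam n \<circ> nest_up (exp (- L)) (rhoE n l L a b lam) n) (vbas n l m)
    = (\<lambda>x. \<Sum>r\<in>EU.PF n. EU.Ccl n m r * (qpow L (- (\<Sum>k'\<in>{n..n}. cadd (iadd m (alphar n r)) b n k') + lamLam n lam n)
         * qpow L ((\<Sum>k'\<in>{1..n}. cadd (iadd m (alphar n r)) b 1 k') - lamLam n lam 1)) * vbas n l (iadd m (alphar n r)) x)"
    by (rule KK_sandwich(2)[OF l0 eL], rule N, erule sD)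
  define G where "G r = (-1) ^ (n - 1) * exp L ^ n * inverse bb * (qpow L (- (\<Sum>k'\<in>{n..n}. cadd (iadd m (alphar n r)) b n k') + lamLam n lam n)
         * qpow L ((\<Sum>k'\<in>{1..n}. cadd (iadd m (alphar n r)) b 1 k') - lamLam n lam 1))" for r
  have "evF0 True n l L a b lam bb (vbas n l m)
      = (\<lambda>x. (-1) ^ (n - 1) * exp L ^ n * inverse bb * (rhoKLinv n l L a b lam 1 \<circ> rhoKL n l L a b lam n \<circ> nest_up (exp (- L)) (rhoE n l L a b lam) n) (vbas n l m) x)"
    unfolding evF0_def smul_def by simp
  also have "\<dots> = (\<lambda>x. \<Sum>r\<in>EU.PF n. EU.Ccl n m r * (G r * vbas n l (iadd m (alphar n r)) x))"
    unfolding KK G_def by (simp add: sum_distrib_left mult_ac)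
  also have "\<dots> = (\<lambda>x. \<Sum>s\<in>{1..n}. \<Sum>r\<in>REs n s. EU.Wt n r * cterm L n (\<lambda>i. Nf n c i (r i)) s * (G r * vbas n l (iadd m (alphar n r)) x))"
  proof -
    have "\<And>x. (\<Sum>r\<in>EU.PF n. EU.Ccl n m r * (G r * vbas n l (iadd m (alphar n r)) x))
      = (\<Sum>s\<in>{1..n}. \<Sum>r\<in>{r \<in> EU.PF n. EU.shR n s r}. EU.Wt n r * cterm L n (\<lambda>i. Nf n c i (r i)) s * (G r * vbas n l (iadd m (alphar n r)) x))"
      unfolding c_def by (rule EU.nest_sum_split) simp
    then show ?thesis unfolding up_set[OF nsEU] REs_RJ[symmetric] by simp
  qed
  also have "\<dots> = (\<lambda>k. inverse A * (\<Sum>s\<in>{1..n}. \<Sum>r\<in>REs n s.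
          (-1) ^ (s - 1) * apow n a (alphar n r)
          * qpow L ((DF n (cadd m b) r s - of_nat s + of_nat n + 1) - of_nat n)
          * qint L (- of_int (m 1 (n-s+1)) - b 1 (n-s+1))
          * vbas n l (iadd m (alphar n r)) k))"
  proof -
    have pt: "EU.Wt n r * cterm L n (\<lambda>i. Nf n c i (r i)) s * (G r * vbas n l (iadd m (alphar n r)) x)
      = inverse A * ((-1) ^ (s - 1) * apow n a (alphar n r)
          * qpow L ((DF n (cadd m b) r s - of_nat s + of_nat n + 1) - of_nat n)
          * qint L (- of_int (m 1 (n-s+1)) - b 1 (n-s+1))
          * vbas n l (iadd m (alphar n r)) x)" if s: "s \<in> {1..n}" and r: "r \<in> REs n s" for s r x
    proof -
      have W: "EU.Wt n r = (\<Prod>i\<in>{1..n}. apow n a (alpha n i (r i)))" unfolding EU.Wt_def ..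
      have P: "(\<Prod>i\<in>{1..n}. apow n a (alpha n i (r i))) * cterm L n (\<lambda>i. Nf n c i (r i)) s *
      ((-1) ^ (n - 1) * exp L ^ n * inverse (A * qpow L (- lamLam n lam 1 + lamLam n lam n + of_nat n))
       * qpow L (- (\<Sum>k'\<in>{n..n}. cadd (iadd m (alphar n r)) b n k') + lamLam n lam n)
       * qpow L ((\<Sum>k'\<in>{1..n}. cadd (iadd m (alphar n r)) b 1 k') - lamLam n lam 1))
    = inverse A * ((-1) ^ (s - 1) * apow n a (alphar n r)
          * qpow L ((DF n c r s - of_nat s + of_nat n + 1) - of_nat n)
          * qint L (- of_int 1 * c 1 (n - s + 1)))"
        by (rule EU_point[OF hc r _ _ _ a]) (use s in \<open>auto simp: c_def cadd_iadd\<close>)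
      note P' = P[unfolded c_def qint_arg_E]
      have "EU.Wt n r * cterm L n (\<lambda>i. Nf n c i (r i)) s * (G r * vbas n l (iadd m (alphar n r)) x)
        = ((\<Prod>i\<in>{1..n}. apow n a (alpha n i (r i))) * cterm L n (\<lambda>i. Nf n c i (r i)) s *
      ((-1) ^ (n - 1) * exp L ^ n * inverse (A * qpow L (- lamLam n lam 1 + lamLam n lam n + of_nat n))
       * qpow L (- (\<Sum>k'\<in>{n..n}. cadd (iadd m (alphar n r)) b n k') + lamLam n lam n)
       * qpow L ((\<Sum>k'\<in>{1..n}. cadd (iadd m (alphar n r)) b 1 k') - lamLam n lam 1))) * vbas n l (iadd m (alphar n r)) x"
        unfolding W G_def bb by (simp only: mult_ac)
      also have "\<dots> = inverse A * ((-1) ^ (s - 1) * apow n a (alphar n r)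
          * qpow L ((DF n (cadd m b) r s - of_nat s + of_nat n + 1) - of_nat n)
          * qint L (- of_int (m 1 (n-s+1)) - b 1 (n-s+1))) * vbas n l (iadd m (alphar n r)) x"
        using P' unfolding c_def by simp
      finally show ?thesis by (simp only: mult_ac)
    qed
    show ?thesis
    proof (intro ext)
      fix x
      have "(\<Sum>s\<in>{1..n}. \<Sum>r\<in>REs n s. EU.Wt n r * cterm L n (\<lambda>i. Nf n c i (r i)) s * (G r * vbas n l (iadd m (alphar n r)) x))
        = (\<Sum>s\<in>{1..n}. \<Sum>r\<in>REs n s. inverse A * ((-1) ^ (s - 1) * apow n a (alphar n r)
          * qpow L ((DF n (cadd m b) r s - of_nat s + of_nat n + 1) - of_nat n)
          * qint L (- of_int (m 1 (n-s+1)) - b 1 (n-s+1))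
          * vbas n l (iadd m (alphar n r)) x))"
        by (intro sum.cong refl) (rule pt)
      also have "\<dots> = inverse A * (\<Sum>s\<in>{1..n}. \<Sum>r\<in>REs n s. (-1) ^ (s - 1) * apow n a (alphar n r)
          * qpow L ((DF n (cadd m b) r s - of_nat s + of_nat n + 1) - of_nat n)
          * qint L (- of_int (m 1 (n-s+1)) - b 1 (n-s+1))
          * vbas n l (iadd m (alphar n r)) x)"
        by (simp only: sum_distrib_left)
      finally show "(\<Sum>s\<in>{1..n}. \<Sum>r\<in>REs n s. EU.Wt n r * cterm L n (\<lambda>i. Nf n c i (r i)) s * (G r * vbas n l (iadd m (alphar n r)) x)) = \<dots>" .
    qed
  qed
  finally show ?thesis unfolding bb_def .
qed

lemma F0_minus:
  assumes n1: "1 \<le> n" and l0: "l > 0" and eL: "exp L ^ l = 1" and e2: "exp L ^ 2 \<noteq> 1"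
    and bz: "\<forall>i j. \<not> valid n i j \<longrightarrow> b i j = 0" and ms: "supp n m"
    and a: "\<forall>i j. valid n i j \<longrightarrow> a i j \<noteq> 0"
  shows "evF0 False n l L a b lam (apar False n L lam A) (vbas n l m) =
      (\<lambda>k. inverse A * (\<Sum>s\<in>{1..n}. \<Sum>r\<in>REs n s.
          (-1) ^ (s - 1) * apow n a (alphar n r)
          * qpow L (- (DF n (cadd m b) r s - of_nat s + of_nat n + 1) - of_nat n)
          * qint L (- of_int (m 1 (n-s+1)) - b 1 (n-s+1))
          * vbas n l (iadd m (alphar n r)) k))"
proof -
  interpret ED: nestsys n l L "\<lambda>k. rhoE n l L a b lam (n + 1 - k)" "\<lambda>k. {1..n + 1 - k}" "\<lambda>k j. alpha n (n + 1 - k) j" "\<lambda>k j. apow n a (alpha n (n + 1 - k) j)"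
    "\<lambda>k m j. Nf n (cadd m b) (n + 1 - k) j" "(\<le>)"
    by (rule nestsys_ED[OF l0 eL e2])
  have nsED: "nestsys n l L (\<lambda>k. rhoE n l L a b lam (n + 1 - k)) (\<lambda>k. (\<lambda>k. {1..k}) (n + 1 - k)) (\<lambda>k j. alpha n (n + 1 - k) j) (\<lambda>k j. apow n a (alpha n (n + 1 - k) j))
    (\<lambda>k m j. Nf n (cadd m b) (n + 1 - k) j) (\<le>)" using nestsys_ED[OF l0 eL e2] by simp
  define c where "c = cadd m b"
  have hc: "csupp n c" unfolding c_def by (rule csupp_cadd[OF ms bz])
  define bb where "bb = apar False n L lam A"
  have bb: "bb = A * (-1) ^ (n + 1) * qpow L (lamLam n lam 1 - lamLam n lam n + 2 * of_nat n + 1)" unfolding bb_def apar_def by simp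
  have N: "nest_down (exp (- L)) (rhoE n l L a b lam) n (vbas n l m) = (\<lambda>x. \<Sum>r\<in>ED.PF n. ED.Ccl n m r * vbas n l (iadd m (ED.Dsum n r)) x)"
    using ED.nest_formula[of n m] n1 ms unfolding nest_down_def by simp
  have sD: "\<And>r. r \<in> ED.PF n \<Longrightarrow> supp n (iadd m (ED.Dsum n r))"
    using ED.Dsum_supp[of _ n n] ms by (auto intro: supp_iadd)
  have KK: "(rhoKL n l L a b lam 1 \<circ> rhoKLinv n l L a b lam n \<circ> nest_down (exp (- L)) (rhoE n l L a b lam) n) (vbas n l m)
    = (\<lambda>x. \<Sum>r\<in>ED.PF n. ED.Ccl n m r * (qpow L ((\<Sum>k'\<in>{n..n}. cadd (iadd m (ED.Dsum n r)) b n k') - lamLam n lam n)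
         * qpow L (- (\<Sum>k'\<in>{1..n}. cadd (iadd m (ED.Dsum n r)) b 1 k') + lamLam n lam 1)) * vbas n l (iadd m (ED.Dsum n r)) x)"
    by (rule KK_sandwich(1)[OF l0 eL], rule N, erule sD)
  define G where "G r = (-1) ^ (n - 1) * exp L ^ n * inverse bb * (qpow L ((\<Sum>k'\<in>{n..n}. cadd (iadd m (ED.Dsum n r)) b n k') - lamLam n lam n)
         * qpow L (- (\<Sum>k'\<in>{1..n}. cadd (iadd m (ED.Dsum n r)) b 1 k') + lamLam n lam 1))" for r
  have D: "ED.Dsum n (rv n r) = alphar n r" for r
  proof -
    have "ED.Dsum n (rv n r) p q = alphar n r p q" for p q
    proof -
      have "ED.Dsum n (rv n r) p q = (\<Sum>i\<in>{1..n}. alpha n (n + 1 - i) (r (n + 1 - i)) p q)"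
        unfolding ED.Dsum_def rv_def by (intro sum.cong) auto
      also have "\<dots> = (\<Sum>i\<in>{1..n}. alpha n i (r i) p q)"
        by (rule sum_reflect1[symmetric, where f="\<lambda>i. alpha n i (r i) p q"])
      finally show ?thesis unfolding alphar_def .
    qed
    then show ?thesis by auto
  qed
  have "evF0 False n l L a b lam bb (vbas n l m)
      = (\<lambda>x. (-1) ^ (n - 1) * exp L ^ n * inverse bb * (rhoKL n l L a b lam 1 \<circ> rhoKLinv n l L a b lam n \<circ> nest_down (exp (- L)) (rhoE n l L a b lam) n) (vbas n l m) x)"
    unfolding evF0_def smul_def by simp
  also have "\<dots> = (\<lambda>x. \<Sum>r\<in>ED.PF n. ED.Ccl n m r * (G r * vbas n l (iadd m (ED.Dsum n r)) x))"
    unfolding KK G_def by (simp add: sum_distrib_left mult_ac)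
  also have "\<dots> = (\<lambda>x. \<Sum>s\<in>{1..n}. \<Sum>r\<in>REs n s. ED.Wt n (rv n r) * cterm L n (\<lambda>i. Nf n c (n + 1 - i) (rv n r i)) (n + 1 - s) * (G (rv n r) * vbas n l (iadd m (alphar n r)) x))"
  proof -
    have "\<And>x. (\<Sum>r\<in>ED.PF n. ED.Ccl n m r * (G r * vbas n l (iadd m (ED.Dsum n r)) x))
      = (\<Sum>s\<in>{1..n}. \<Sum>r\<in>{r \<in> ED.PF n. ED.shR n s r}. ED.Wt n r * cterm L n (\<lambda>i. Nf n c (n + 1 - i) (r i)) s * (G r * vbas n l (iadd m (ED.Dsum n r)) x))"
      unfolding c_def by (rule ED.nest_sum_split) simp
    also have "\<And>x. \<dots>x = (\<Sum>s\<in>{1..n}. \<Sum>r\<in>{r \<in> ED.PF n. ED.shR n (n + 1 - s) r}. ED.Wt n r * cterm L n (\<lambda>i. Nf n c (n + 1 - i) (r i)) (n + 1 - s) * (G r * vbas n l (iadd m (ED.Dsum n r)) x))"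
      by (rule sum_reflect1)
    also have "\<And>x. \<dots>x = (\<Sum>s\<in>{1..n}. \<Sum>r\<in>REs n s. ED.Wt n (rv n r) * cterm L n (\<lambda>i. Nf n c (n + 1 - i) (rv n r i)) (n + 1 - s) * (G (rv n r) * vbas n l (iadd m (alphar n r)) x))"
    proof (rule sum.cong[OF refl])
      fix x s assume s: "s \<in> {1..n}"
      have "{r \<in> ED.PF n. ED.shR n (n + 1 - s) r} = rv n ` REs n s"
        using down_set[OF nsED, of s] s unfolding REs_RJ by simp
      show "(\<Sum>r\<in>{r \<in> ED.PF n. ED.shR n (n + 1 - s) r}. ED.Wt n r * cterm L n (\<lambda>i. Nf n c (n + 1 - i) (r i)) (n + 1 - s) * (G r * vbas n l (iadd m (ED.Dsum n r)) x))
         = (\<Sum>r\<in>REs n s. ED.Wt n (rv n r) * cterm L n (\<lambda>i. Nf n c (n + 1 - i) (rv n r i)) (n + 1 - s) * (G (rv n r) * vbas n l (iadd m (alphar n r)) x))"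
      proof -
        note ri = sum.reindex[OF inj_rv[of n "\<lambda>k. {1..k}" s, folded REs_RJ], unfolded comp_def]
        show ?thesis unfolding \<open>{r \<in> ED.PF n. ED.shR n (n + 1 - s) r} = rv n ` REs n s\<close> ri D ..
      qed
    qed
    finally show ?thesis by (intro ext) simp
  qed
  also have "\<dots> = (\<lambda>k. inverse A * (\<Sum>s\<in>{1..n}. \<Sum>r\<in>REs n s.
          (-1) ^ (s - 1) * apow n a (alphar n r)
          * qpow L (- (DF n (cadd m b) r s - of_nat s + of_nat n + 1) - of_nat n)
          * qint L (- of_int (m 1 (n-s+1)) - b 1 (n-s+1))
          * vbas n l (iadd m (alphar n r)) k))"
  proof -
    have pt: "ED.Wt n (rv n r) * cterm L n (\<lambda>i. Nf n c (n + 1 - i) (rv n r i)) (n + 1 - s) * (G (rv n r) * vbas n l (iadd m (alphar n r)) x)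
      = inverse A * ((-1) ^ (s - 1) * apow n a (alphar n r)
          * qpow L (- (DF n (cadd m b) r s - of_nat s + of_nat n + 1) - of_nat n)
          * qint L (- of_int (m 1 (n-s+1)) - b 1 (n-s+1))
          * vbas n l (iadd m (alphar n r)) x)" if s: "s \<in> {1..n}" and r: "r \<in> REs n s" for s r x
    proof -
      have W: "ED.Wt n (rv n r) = (\<Prod>i\<in>{1..n}. apow n a (alpha n i (r i)))"
      proof -
        have "ED.Wt n (rv n r) = (\<Prod>i\<in>{1..n}. apow n a (alpha n (n + 1 - i) (r (n + 1 - i))))"
          unfolding ED.Wt_def rv_def by (intro prod.cong) auto
        also have "\<dots> = (\<Prod>i\<in>{1..n}. apow n a (alpha n i (r i)))" by (rule prod_reflect1[symmetric, where f="\<lambda>i. apow n a (alpha n i (r i))"])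
        finally show ?thesis .
      qed
      have CT: "cterm L n (\<lambda>i. Nf n c (n + 1 - i) (rv n r i)) (n + 1 - s)
        = (-1) ^ (s - 1) * qpow L ((\<Sum>i\<in>{s<..n}. Nf n c i (r i) - 1) - (\<Sum>i\<in>{1..<s}. Nf n c i (r i))) * qint L (Nf n c s (r s))"
        by (rule cterm_rev) (use s in \<open>auto simp: rv_def\<close>)
      have P: "(\<Prod>i\<in>{1..n}. apow n a (alpha n i (r i))) * ((-1) ^ (s - 1) * qpow L ((\<Sum>i\<in>{s<..n}. Nf n c i (r i) - 1) - (\<Sum>i\<in>{1..<s}. Nf n c i (r i))) * qint L (Nf n c s (r s))) *
      ((-1) ^ (n - 1) * exp L ^ n * inverse (A * (-1) ^ (n + 1) * qpow L (lamLam n lam 1 - lamLam n lam n + 2 * of_nat n + 1))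
       * qpow L ((\<Sum>k'\<in>{n..n}. cadd (iadd m (alphar n r)) b n k') - lamLam n lam n)
       * qpow L (- (\<Sum>k'\<in>{1..n}. cadd (iadd m (alphar n r)) b 1 k') + lamLam n lam 1))
    = inverse A * ((-1) ^ (s - 1) * apow n a (alphar n r)
          * qpow L (- (DF n c r s - of_nat s + of_nat n + 1) - of_nat n)
          * qint L (- of_int 1 * c 1 (n - s + 1)))"
        by (rule ED_point[OF hc r _ _ _ a]) (use s in \<open>auto simp: c_def cadd_iadd\<close>)
      note P' = P[unfolded c_def qint_arg_E]
      have "ED.Wt n (rv n r) * cterm L n (\<lambda>i. Nf n c (n + 1 - i) (rv n r i)) (n + 1 - s) * (G (rv n r) * vbas n l (iadd m (alphar n r)) x)
        = ((\<Prod>i\<in>{1..n}. apow n a (alpha n i (r i))) * ((-1) ^ (s - 1) * qpow L ((\<Sum>i\<in>{s<..n}. Nf n c i (r i) - 1) - (\<Sum>i\<in>{1..<s}. Nf n c i (r i))) * qint L (Nf n c s (r s))) *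
      ((-1) ^ (n - 1) * exp L ^ n * inverse (A * (-1) ^ (n + 1) * qpow L (lamLam n lam 1 - lamLam n lam n + 2 * of_nat n + 1))
       * qpow L ((\<Sum>k'\<in>{n..n}. cadd (iadd m (alphar n r)) b n k') - lamLam n lam n)
       * qpow L (- (\<Sum>k'\<in>{1..n}. cadd (iadd m (alphar n r)) b 1 k') + lamLam n lam 1))) * vbas n l (iadd m (alphar n r)) x"
        unfolding W CT G_def bb D by (simp only: mult_ac)
      also have "\<dots> = inverse A * ((-1) ^ (s - 1) * apow n a (alphar n r)
          * qpow L (- (DF n (cadd m b) r s - of_nat s + of_nat n + 1) - of_nat n)
          * qint L (- of_int (m 1 (n-s+1)) - b 1 (n-s+1))) * vbas n l (iadd m (alphar n r)) x"
        using P' unfolding c_def by simp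
      finally show ?thesis by (simp only: mult_ac)
    qed
    show ?thesis
    proof (intro ext)
      fix x
      have "(\<Sum>s\<in>{1..n}. \<Sum>r\<in>REs n s. ED.Wt n (rv n r) * cterm L n (\<lambda>i. Nf n c (n + 1 - i) (rv n r i)) (n + 1 - s) * (G (rv n r) * vbas n l (iadd m (alphar n r)) x))
        = (\<Sum>s\<in>{1..n}. \<Sum>r\<in>REs n s. inverse A * ((-1) ^ (s - 1) * apow n a (alphar n r)
          * qpow L (- (DF n (cadd m b) r s - of_nat s + of_nat n + 1) - of_nat n)
          * qint L (- of_int (m 1 (n-s+1)) - b 1 (n-s+1))
          * vbas n l (iadd m (alphar n r)) x))"
        by (intro sum.cong refl) (rule pt)
      also have "\<dots> = inverse A * (\<Sum>s\<in>{1..n}. \<Sum>r\<in>REs n s. (-1) ^ (s - 1) * apow n a (alphar n r)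
          * qpow L (- (DF n (cadd m b) r s - of_nat s + of_nat n + 1) - of_nat n)
          * qint L (- of_int (m 1 (n-s+1)) - b 1 (n-s+1))
          * vbas n l (iadd m (alphar n r)) x)"
        by (simp only: sum_distrib_left)
      finally show "(\<Sum>s\<in>{1..n}. \<Sum>r\<in>REs n s. ED.Wt n (rv n r) * cterm L n (\<lambda>i. Nf n c (n + 1 - i) (rv n r i)) (n + 1 - s) * (G (rv n r) * vbas n l (iadd m (alphar n r)) x)) = \<dots>" .
    qed
  qed
  finally show ?thesis unfolding bb_def .
qed

theorem theorem5p5:
  fixes n l :: nat and L A :: complex and a b :: cvec and lam :: "nat \<Rightarrow> complex"
    and pl :: bool and m :: idx
  assumes "n \<ge> 1" and "l > 2" and "odd l" and "coprime l (n + 1)"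
    and "exp L ^ l = 1" and "\<forall>k. 0 < k \<and> k < l \<longrightarrow> exp L ^ k \<noteq> 1"
    and "\<forall>i j. valid n i j \<longrightarrow> a i j \<noteq> 0"
    and "\<forall>i j. \<not> valid n i j \<longrightarrow> b i j = 0"
    and "A \<noteq> 0"
    and "m \<in> basis_idx n l"
  shows "(\<forall>i\<in>{1..n}.
            evt pl n l L a b lam A (Eg i) (vbas n l m) = rhoE n l L a b lam i (vbas n l m)
          \<and> evt pl n l L a b lam A (Fg i) (vbas n l m) = rhoF n l L a b lam i (vbas n l m)
          \<and> evt pl n l L a b lam A (Kg i) (vbas n l m) = rhoKa n l L a b lam i (vbas n l m))
   \<and> evt pl n l L a b lam A (Eg 0) (vbas n l m) =
      (\<lambda>k. A * (\<Sum>s\<in>{1..n}. \<Sum>r\<in>RFs n s.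
          (-1) ^ (s + n) * apow n a (epsr n r)
          * qpow L ((if pl then 1 else -1) * (CE n (cadd m b) r s - lamS n lam s - of_nat s) + of_nat n)
          * qint L (- of_int (m (s-1) (s-1)) + of_int (m s s) - b (s-1) (s-1) + b s s - lam s)
          * vbas n l (iadd m (epsr n r)) k))
   \<and> evt pl n l L a b lam A (Fg 0) (vbas n l m) =
      (\<lambda>k. inverse A * (\<Sum>s\<in>{1..n}. \<Sum>r\<in>REs n s.
          (-1) ^ (s - 1) * apow n a (alphar n r)
          * qpow L ((if pl then 1 else -1) * (DF n (cadd m b) r s - of_nat s + of_nat n + 1) - of_nat n)
          * qint L (- of_int (m 1 (n-s+1)) - b 1 (n-s+1))
          * vbas n l (iadd m (alphar n r)) k))"
proof -
  have l0: "l > 0" using assms(2) by simp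
  have e2: "exp L ^ 2 \<noteq> 1" using assms(6) assms(2) by auto
  have ms: "supp n m" using assms(10) by (auto simp: basis_idx_def supp_def)
  have n1: "1 \<le> n" using assms(1) .
  note eL = assms(5) and a = assms(7) and bz = assms(8)
  have P1: "\<forall>i\<in>{1..n}.
            evt pl n l L a b lam A (Eg i) (vbas n l m) = rhoE n l L a b lam i (vbas n l m)
          \<and> evt pl n l L a b lam A (Fg i) (vbas n l m) = rhoF n l L a b lam i (vbas n l m)
          \<and> evt pl n l L a b lam A (Kg i) (vbas n l m) = rhoKa n l L a b lam i (vbas n l m)"
    by simp
  have PE: "evt pl n l L a b lam A (Eg 0) (vbas n l m) =
      (\<lambda>k. A * (\<Sum>s\<in>{1..n}. \<Sum>r\<in>RFs n s.
          (-1) ^ (s + n) * apow n a (epsr n r)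
          * qpow L ((if pl then 1 else -1) * (CE n (cadd m b) r s - lamS n lam s - of_nat s) + of_nat n)
          * qint L (- of_int (m (s-1) (s-1)) + of_int (m s s) - b (s-1) (s-1) + b s s - lam s)
          * vbas n l (iadd m (epsr n r)) k))"
  proof (cases pl)
    case True
    then show ?thesis using E0_plus[where A=A and a=a and lam=lam, OF n1 l0 eL e2 bz ms] by simp
  next
    case False
    then show ?thesis using E0_minus[where A=A and a=a and lam=lam, OF n1 l0 eL e2 bz ms] by simp
  qed
  have PF: "evt pl n l L a b lam A (Fg 0) (vbas n l m) =
      (\<lambda>k. inverse A * (\<Sum>s\<in>{1..n}. \<Sum>r\<in>REs n s.
          (-1) ^ (s - 1) * apow n a (alphar n r)
          * qpow L ((if pl then 1 else -1) * (DF n (cadd m b) r s - of_nat s + of_nat n + 1) - of_nat n)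
          * qint L (- of_int (m 1 (n-s+1)) - b 1 (n-s+1))
          * vbas n l (iadd m (alphar n r)) k))"
  proof (cases pl)
    case True
    then show ?thesis using F0_plus[where A=A and lam=lam, OF n1 l0 eL e2 bz ms a] by simp
  next
    case False
    then show ?thesis using F0_minus[where A=A and lam=lam, OF n1 l0 eL e2 bz ms a] by simp
  qed
  show ?thesis using P1 PE PF by blast
qed


end
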